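(* Assume $s\le n+2$ and let ${\mathcal L}={\mathcal L}_{n,d}(m_1,\dots,m_s)$ be a non-empty linear system. Let $0\le r\le \min(n,s)-1$. Then for every $I\subseteq\{1,\dots,s\}$ with $|I|=r+1$, the linear system ${\mathcal L}$ contains the cycle $L_I$ in its base locus with multiplicity (exactly) $k_I$ (in particular, if $k_I=0$, $L_I$ is not contained in the base locus).
   Context: ${\mathcal L}_{n,d}(m_1,\dots,m_s)$ is the linear system of degree-$d$ hypersurfaces in complex ${\mathbb P}^n$ with multiplicity at least $m_i$ at general points $p_1,\dots,p_s$. For $I\subseteq\{1,\dots,s\}$ with $|I|=r+1$, $L_I\cong{\mathbb P}^r$ is the linear span of the points $p_i$, $i\in I$, and $k_I:=\max\left(\sum_{i\in I}m_i-rd,\,0\right)$. *)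

theory Defs
  imports Complex_Main
begin

definition pmonos :: "'v set \<Rightarrow> nat \<Rightarrow> ('v \<Rightarrow> nat) set" where
  "pmonos V D = {\<alpha>. (\<forall>v. v \<notin> V \<longrightarrow> \<alpha> v = 0) \<and> (\<Sum>v\<in>V. \<alpha> v) \<le> D}"

definition peval :: "'v set \<Rightarrow> nat \<Rightarrow> (('v \<Rightarrow> nat) \<Rightarrow> complex) \<Rightarrow> ('v \<Rightarrow> complex) \<Rightarrow> complex" where
  "peval V D g y = (\<Sum>\<alpha>\<in>pmonos V D. g \<alpha> * (\<Prod>v\<in>V. y v ^ \<alpha> v))"

definition hmonos :: "nat \<Rightarrow> nat \<Rightarrow> (nat \<Rightarrow> nat) set" where
  "hmonos n d = {\<alpha>. (\<forall>i>n. \<alpha> i = 0) \<and> (\<Sum>i\<le>n. \<alpha> i) = d}"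

(* A degree-d form F = sum c(alpha) x^alpha (coefficients taken on hmonos n d);
   value at x of the partial derivative d^beta F. *)
definition dpeval :: "nat \<Rightarrow> nat \<Rightarrow> ((nat \<Rightarrow> nat) \<Rightarrow> complex) \<Rightarrow> (nat \<Rightarrow> nat) \<Rightarrow> (nat \<Rightarrow> complex) \<Rightarrow> complex" where
  "dpeval n d c \<beta> x = (\<Sum>\<alpha>\<in>hmonos n d. c \<alpha> *
      (\<Prod>i\<le>n. of_nat ((\<alpha> i choose \<beta> i) * fact (\<beta> i)) * x i ^ (\<alpha> i - \<beta> i)))"

definition mult_ge :: "nat \<Rightarrow> nat \<Rightarrow> ((nat \<Rightarrow> nat) \<Rightarrow> complex) \<Rightarrow> (nat \<Rightarrow> complex) \<Rightarrow> nat \<Rightarrow> bool" where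
  "mult_ge n d c x k \<longleftrightarrow> (\<forall>\<beta>. (\<forall>i>n. \<beta> i = 0) \<longrightarrow> (\<Sum>i\<le>n. \<beta> i) < k \<longrightarrow> dpeval n d c \<beta> x = 0)"

definition hs_nonzero :: "nat \<Rightarrow> nat \<Rightarrow> ((nat \<Rightarrow> nat) \<Rightarrow> complex) \<Rightarrow> bool" where
  "hs_nonzero n d c \<longleftrightarrow> (\<exists>\<alpha>\<in>hmonos n d. c \<alpha> \<noteq> 0)"

(* The linear system L_{n,d}(m_1,...,m_s) with base points p_1,...,p_s (as vectors of C^{n+1}). *)
definition linsys :: "nat \<Rightarrow> nat \<Rightarrow> nat \<Rightarrow> (nat \<Rightarrow> nat) \<Rightarrow> (nat \<Rightarrow> nat \<Rightarrow> complex)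
    \<Rightarrow> ((nat \<Rightarrow> nat) \<Rightarrow> complex) set" where
  "linsys n d s m p = {c. \<forall>i\<in>{1..s}. mult_ge n d c (p i) (m i)}"

(* Nonzero vectors of the linear span of the p_i, i in I: the cone over L_I. *)
definition span_pts :: "nat \<Rightarrow> (nat \<Rightarrow> nat \<Rightarrow> complex) \<Rightarrow> nat set \<Rightarrow> (nat \<Rightarrow> complex) set" where
  "span_pts n p I = {x. (\<exists>a. \<forall>j\<le>n. x j = (\<Sum>i\<in>I. a i * p i j)) \<and> (\<exists>j\<le>n. x j \<noteq> 0)}"

definition mult_along :: "nat \<Rightarrow> nat \<Rightarrow> ((nat \<Rightarrow> nat) \<Rightarrow> complex) \<Rightarrow> (nat \<Rightarrow> complex) set \<Rightarrow> nat \<Rightarrow> bool" where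
  "mult_along n d c L k \<longleftrightarrow> (\<forall>q\<in>L. mult_ge n d c q k)"

definition base_mult_exact :: "nat \<Rightarrow> nat \<Rightarrow> nat \<Rightarrow> (nat \<Rightarrow> nat) \<Rightarrow> (nat \<Rightarrow> nat \<Rightarrow> complex)
    \<Rightarrow> nat set \<Rightarrow> nat \<Rightarrow> bool" where
  "base_mult_exact n d s m p I k \<longleftrightarrow>
     (\<forall>c\<in>linsys n d s m p. mult_along n d c (span_pts n p I) k) \<and>
     (\<exists>c\<in>linsys n d s m p. hs_nonzero n d c \<and> \<not> mult_along n d c (span_pts n p I) (Suc k))"

definition kI :: "nat \<Rightarrow> (nat \<Rightarrow> nat) \<Rightarrow> nat \<Rightarrow> nat set \<Rightarrow> nat" where
  "kI d m r I = nat (int (\<Sum>i\<in>I. m i) - int r * int d)"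

end

theory Submission
  imports Defs "HOL-Computational_Algebra.Polynomial" "HOL-Library.FuncSet" "Jordan_Normal_Form.Determinant"
begin

definition mon :: "nat \<Rightarrow> (nat\<Rightarrow>nat) \<Rightarrow> (nat \<Rightarrow> complex) \<Rightarrow> complex" where
  "mon n \<alpha> x = (\<Prod>i\<le>n. x i ^ \<alpha> i)"

definition ev :: "nat \<Rightarrow> nat \<Rightarrow> ((nat\<Rightarrow>nat)\<Rightarrow>complex) \<Rightarrow> (nat\<Rightarrow>complex) \<Rightarrow> complex" where
  "ev n d c x = (\<Sum>\<alpha>\<in>hmonos n d. c \<alpha> * mon n \<alpha> x)"

definition box :: "nat \<Rightarrow> nat \<Rightarrow> (nat \<Rightarrow> nat) set" where
  "box n d = {\<beta>. (\<forall>i>n. \<beta> i = 0) \<and> (\<forall>i\<le>n. \<beta> i \<le> d)}"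

lemma finite_box: "finite (box n d)"
proof -
  have "box n d \<subseteq> {f. \<forall>x. (x\<in>{..n} \<longrightarrow> f x \<in> {..d}) \<and> (x\<notin>{..n} \<longrightarrow> f x = 0)}"
    unfolding box_def by (simp add: subset_iff not_le)
  then show ?thesis using finite_set_of_finite_funs[of "{..n}" "{..d}" 0] finite_subset by blast
qed

lemma hmonos_box: "hmonos n d \<subseteq> box n d"
proof
  fix \<alpha> assume a: "\<alpha> \<in> hmonos n d"
  then have s: "(\<Sum>i\<le>n. \<alpha> i) = d" and z: "\<forall>i>n. \<alpha> i = 0" unfolding hmonos_def by auto
  have "\<forall>i\<le>n. \<alpha> i \<le> d"
  proof (intro allI impI)
    fix i assume "i \<le> n"
    then have "\<alpha> i \<le> (\<Sum>i\<le>n. \<alpha> i)" by (intro member_le_sum) auto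
    then show "\<alpha> i \<le> d" using s by simp
  qed
  then show "\<alpha> \<in> box n d" using z unfolding box_def by auto
qed

lemma finite_hmonos: "finite (hmonos n d)"
  using finite_subset[OF hmonos_box finite_box] .

lemma binom_ext:
  fixes x z :: complex assumes "a \<le> d"
  shows "(x + z) ^ a = (\<Sum>b\<le>d. of_nat (a choose b) * x ^ (a - b) * z ^ b)"
proof -
  have "(x + z) ^ a = (z + x) ^ a" by (simp add: add.commute)
  also have "\<dots> = (\<Sum>b\<le>a. of_nat (a choose b) * z ^ b * x ^ (a - b))"
    by (rule binomial_ring)
  also have "\<dots> = (\<Sum>b\<le>a. of_nat (a choose b) * x ^ (a - b) * z ^ b)"
    by (simp add: mult_ac)
  also have "\<dots> = (\<Sum>b\<le>d. of_nat (a choose b) * x ^ (a - b) * z ^ b)"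
    by (rule sum.mono_neutral_left) (use assms in auto)
  finally show ?thesis .
qed

definition ext0 :: "nat \<Rightarrow> (nat \<Rightarrow> nat) \<Rightarrow> (nat \<Rightarrow> nat)" where
  "ext0 n g = (\<lambda>i. if i \<le> n then g i else 0)"

lemma bij_ext0: "bij_betw (ext0 n) (PiE {..n} (\<lambda>_. {..d})) (box n d)"
proof (rule bij_betw_imageI)
  show "inj_on (ext0 n) (PiE {..n} (\<lambda>_. {..d}))"
  proof (rule inj_onI)
    fix g h assume g: "g \<in> PiE {..n} (\<lambda>_. {..d})" and h: "h \<in> PiE {..n} (\<lambda>_. {..d})"
      and e: "ext0 n g = ext0 n h"
    show "g = h"
    proof (rule PiE_ext[OF g h])
      fix i assume "i \<in> {..n}"
      then show "g i = h i" using fun_cong[OF e, of i] by (simp add: ext0_def)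
    qed
  qed
  show "ext0 n ` PiE {..n} (\<lambda>_. {..d}) = box n d"
  proof
    show "ext0 n ` PiE {..n} (\<lambda>_. {..d}) \<subseteq> box n d"
      by (auto simp: ext0_def box_def PiE_def Pi_def)
    show "box n d \<subseteq> ext0 n ` PiE {..n} (\<lambda>_. {..d})"
    proof
      fix \<beta> assume b: "\<beta> \<in> box n d"
      have "ext0 n (restrict \<beta> {..n}) = \<beta>"
        using b by (auto simp: ext0_def box_def)
      moreover have "restrict \<beta> {..n} \<in> PiE {..n} (\<lambda>_. {..d})"
        using b by (auto simp: box_def)
      ultimately show "\<beta> \<in> ext0 n ` PiE {..n} (\<lambda>_. {..d})" by (metis image_eqI)
    qed
  qed
qed

lemma mon_shift:
  assumes "\<alpha> \<in> box n d"
  shows "mon n \<alpha> (\<lambda>i. x i + z i) =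
    (\<Sum>\<beta>\<in>box n d. \<Prod>i\<le>n. of_nat (\<alpha> i choose \<beta> i) * x i ^ (\<alpha> i - \<beta> i) * z i ^ \<beta> i)"
proof -
  let ?f = "\<lambda>i b. of_nat (\<alpha> i choose b) * x i ^ (\<alpha> i - b) * z i ^ b"
  have "mon n \<alpha> (\<lambda>i. x i + z i) = (\<Prod>i\<le>n. \<Sum>b\<le>d. ?f i b)"
    unfolding mon_def
    by (rule prod.cong[OF refl], rule binom_ext) (use assms in \<open>auto simp: box_def\<close>)
  also have "\<dots> = (\<Sum>g\<in>PiE {..n} (\<lambda>_. {..d}). \<Prod>i\<le>n. ?f i (g i))"
    by (rule prod_sum_PiE) auto
  also have "\<dots> = (\<Sum>g\<in>PiE {..n} (\<lambda>_. {..d}). \<Prod>i\<le>n. ?f i (ext0 n g i))"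
    by (rule sum.cong[OF refl], rule prod.cong[OF refl]) (simp add: ext0_def)
  also have "\<dots> = (\<Sum>\<beta>\<in>box n d. \<Prod>i\<le>n. ?f i (\<beta> i))"
    using sum.reindex_bij_betw[OF bij_ext0, of "\<lambda>\<beta>. \<Prod>i\<le>n. ?f i (\<beta> i)" n d]
    by simp
  finally show ?thesis .
qed

definition fp :: "nat \<Rightarrow> (nat \<Rightarrow> nat) \<Rightarrow> complex" where
  "fp n \<beta> = of_nat (\<Prod>i\<le>n. fact (\<beta> i))"

lemma fp_nz: "fp n \<beta> \<noteq> 0"
  unfolding fp_def by (simp add: prod_zero_iff)

lemma term_split:
  "(\<Prod>i\<le>n. of_nat (\<alpha> i choose \<beta> i) * x i ^ (\<alpha> i - \<beta> i) * z i ^ \<beta> i) =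
   mon n \<beta> z / fp n \<beta> * (\<Prod>i\<le>n. of_nat ((\<alpha> i choose \<beta> i) * fact (\<beta> i)) * x i ^ (\<alpha> i - \<beta> i))"
proof -
  have "(\<Prod>i\<le>n. of_nat ((\<alpha> i choose \<beta> i) * fact (\<beta> i)) * x i ^ (\<alpha> i - \<beta> i)) =
     (\<Prod>i\<le>n. (of_nat (fact (\<beta> i))::complex)) * (\<Prod>i\<le>n. of_nat (\<alpha> i choose \<beta> i) * x i ^ (\<alpha> i - \<beta> i))"
    by (simp add: prod.distrib[symmetric] mult_ac)
  moreover have "(\<Prod>i\<le>n. (of_nat (fact (\<beta> i))::complex)) = fp n \<beta>"
    unfolding fp_def by simp
  ultimately have e: "(\<Prod>i\<le>n. of_nat ((\<alpha> i choose \<beta> i) * fact (\<beta> i)) * x i ^ (\<alpha> i - \<beta> i)) =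
     fp n \<beta> * (\<Prod>i\<le>n. of_nat (\<alpha> i choose \<beta> i) * x i ^ (\<alpha> i - \<beta> i))" by simp
  have "(\<Prod>i\<le>n. of_nat (\<alpha> i choose \<beta> i) * x i ^ (\<alpha> i - \<beta> i) * z i ^ \<beta> i) =
     (\<Prod>i\<le>n. of_nat (\<alpha> i choose \<beta> i) * x i ^ (\<alpha> i - \<beta> i)) * mon n \<beta> z"
    unfolding mon_def by (simp add: prod.distrib)
  then show ?thesis unfolding e using fp_nz[of n \<beta>] by (simp add: field_simps)
qed

theorem taylor:
  "ev n d c (\<lambda>i. x i + z i) = (\<Sum>\<beta>\<in>box n d. mon n \<beta> z / fp n \<beta> * dpeval n d c \<beta> x)"
proof -
  have "ev n d c (\<lambda>i. x i + z i) = (\<Sum>\<alpha>\<in>hmonos n d. \<Sum>\<beta>\<in>box n d.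
      c \<alpha> * (mon n \<beta> z / fp n \<beta> * (\<Prod>i\<le>n. of_nat ((\<alpha> i choose \<beta> i) * fact (\<beta> i)) * x i ^ (\<alpha> i - \<beta> i))))"
    unfolding ev_def
  proof (rule sum.cong[OF refl])
    fix \<alpha> assume "\<alpha> \<in> hmonos n d"
    then have "\<alpha> \<in> box n d" using hmonos_box by blast
    then show "c \<alpha> * mon n \<alpha> (\<lambda>i. x i + z i) = (\<Sum>\<beta>\<in>box n d.
      c \<alpha> * (mon n \<beta> z / fp n \<beta> * (\<Prod>i\<le>n. of_nat ((\<alpha> i choose \<beta> i) * fact (\<beta> i)) * x i ^ (\<alpha> i - \<beta> i))))"
      by (simp only: mon_shift term_split sum_distrib_left)
  qed
  also have "\<dots> = (\<Sum>\<beta>\<in>box n d. \<Sum>\<alpha>\<in>hmonos n d.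
      c \<alpha> * (mon n \<beta> z / fp n \<beta> * (\<Prod>i\<le>n. of_nat ((\<alpha> i choose \<beta> i) * fact (\<beta> i)) * x i ^ (\<alpha> i - \<beta> i))))"
    by (rule sum.swap)
  also have "\<dots> = (\<Sum>\<beta>\<in>box n d. mon n \<beta> z / fp n \<beta> * dpeval n d c \<beta> x)"
    unfolding dpeval_def by (simp add: sum_distrib_left mult_ac)
  finally show ?thesis .
qed

lemma univ_id:
  fixes b :: "nat \<Rightarrow> complex"
  assumes "finite E" "\<forall>t. (\<Sum>e\<in>E. b e * t ^ e) = 0"
  shows "\<forall>e\<in>E. b e = 0"
proof -
  define p where "p = (\<Sum>e\<in>E. monom (b e) e)"
  have "\<forall>t. poly p t = 0" using assms(2) unfolding p_def by (simp add: poly_sum poly_monom)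
  then have p0: "p = 0" using poly_all_0_iff_0 by blast
  show ?thesis
  proof
    fix e assume e: "e \<in> E"
    have "coeff p e = (\<Sum>e'\<in>E. if e' = e then b e' else 0)"
      unfolding p_def by (simp add: coeff_sum coeff_monom)
    also have "\<dots> = b e" using e assms(1) by (simp add: sum.delta)
    finally show "b e = 0" using p0 by simp
  qed
qed

lemma id_thm_aux:
  "\<forall>S a. finite S \<longrightarrow> (\<forall>\<beta>\<in>S. \<forall>i\<ge>k. \<beta> i = 0) \<longrightarrow>
     (\<forall>z::nat\<Rightarrow>complex. (\<Sum>\<beta>\<in>S. a \<beta> * (\<Prod>i<k. z i ^ \<beta> i)) = 0) \<longrightarrow> (\<forall>\<beta>\<in>S. a \<beta> = 0)"
proof (induction k)
  case 0
  show ?case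
  proof (intro allI impI ballI)
    fix S a \<beta> assume fS: "finite S" and z: "\<forall>\<beta>\<in>S. \<forall>i\<ge>0. \<beta> i = (0::nat)"
      and s: "\<forall>z::nat\<Rightarrow>complex. (\<Sum>\<beta>\<in>S. a \<beta> * (\<Prod>i<0. z i ^ \<beta> i)) = 0" and b: "\<beta> \<in> S"
    have all0: "\<forall>\<gamma>\<in>S. \<gamma> = \<beta>" using z b by (simp add: fun_eq_iff) metis
    then have "S = {\<beta>}" using b by blast
    then show "a \<beta> = 0" using s by simp
  qed
next
  case (Suc k)
  show ?case
  proof (intro allI impI ballI)
    fix S a \<beta>0 assume fS: "finite S" and zS: "\<forall>\<beta>\<in>S. \<forall>i\<ge>Suc k. \<beta> i = (0::nat)"
      and s: "\<forall>z::nat\<Rightarrow>complex. (\<Sum>\<beta>\<in>S. a \<beta> * (\<Prod>i<Suc k. z i ^ \<beta> i)) = 0" and b0: "\<beta>0 \<in> S"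
    define e0 where "e0 = \<beta>0 k"
    define S0 where "S0 = {\<beta>\<in>S. \<beta> k = e0}"
    define S' where "S' = (\<lambda>\<beta>. \<beta>(k:=0)) ` S0"
    define a' where "a' = (\<lambda>\<gamma>. a (\<gamma>(k:=e0)))"
    have inj: "inj_on (\<lambda>\<beta>. \<beta>(k:=0)) S0"
    proof (rule inj_onI)
      fix x y assume "x \<in> S0" "y \<in> S0" "x(k:=0) = y(k:=0)"
      then have xy: "x k = y k" "\<And>i. i \<noteq> k \<Longrightarrow> x i = y i"
        unfolding S0_def by (auto dest: fun_cong) (metis fun_upd_other)
      show "x = y"
      proof
        fix i show "x i = y i" using xy by (cases "i = k") auto
      qed
    qed
    have inner: "\<forall>z'::nat\<Rightarrow>complex. (\<Sum>\<beta>\<in>S0. a \<beta> * (\<Prod>i<k. z' i ^ \<beta> i)) = 0"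
    proof
      fix z' :: "nat \<Rightarrow> complex"
      let ?f = "\<lambda>\<beta>. a \<beta> * (\<Prod>i<k. z' i ^ \<beta> i)"
      have "\<forall>t. (\<Sum>e\<in>(\<lambda>\<beta>. \<beta> k) ` S. (\<Sum>\<beta>\<in>{\<beta>\<in>S. \<beta> k = e}. ?f \<beta>) * t ^ e) = 0"
      proof
        fix t
        have "(\<Sum>e\<in>(\<lambda>\<beta>. \<beta> k) ` S. (\<Sum>\<beta>\<in>{\<beta>\<in>S. \<beta> k = e}. ?f \<beta>) * t ^ e)
           = (\<Sum>e\<in>(\<lambda>\<beta>. \<beta> k) ` S. (\<Sum>\<beta>\<in>{\<beta>\<in>S. \<beta> k = e}. ?f \<beta> * t ^ \<beta> k))"
          by (simp add: sum_distrib_right)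
        also have "\<dots> = (\<Sum>\<beta>\<in>S. ?f \<beta> * t ^ \<beta> k)"
          by (rule sum.image_gen[symmetric]) (rule fS)
        also have "\<dots> = (\<Sum>\<beta>\<in>S. a \<beta> * (\<Prod>i<Suc k. (z'(k:=t)) i ^ \<beta> i))"
          by (rule sum.cong[OF refl]) (simp add: lessThan_Suc mult_ac)
        also have "\<dots> = 0" using s by blast
        finally show "(\<Sum>e\<in>(\<lambda>\<beta>. \<beta> k) ` S. (\<Sum>\<beta>\<in>{\<beta>\<in>S. \<beta> k = e}. ?f \<beta>) * t ^ e) = 0" .
      qed
      from univ_id[OF _ this] fS b0
      show "(\<Sum>\<beta>\<in>S0. ?f \<beta>) = 0" unfolding S0_def e0_def by auto
    qed
    have f1: "finite S'" unfolding S'_def S0_def using fS by simp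
    have f2: "\<forall>\<beta>\<in>S'. \<forall>i\<ge>k. \<beta> i = 0"
        unfolding S'_def S0_def using zS by auto
    have f3: "\<forall>z. (\<Sum>\<beta>\<in>S'. a' \<beta> * (\<Prod>i<k. z i ^ \<beta> i)) = 0"
      proof
        fix z :: "nat \<Rightarrow> complex"
        have "(\<Sum>\<beta>\<in>S'. a' \<beta> * (\<Prod>i<k. z i ^ \<beta> i)) =
            (\<Sum>\<beta>\<in>S0. a' (\<beta>(k:=0)) * (\<Prod>i<k. z i ^ (\<beta>(k:=0)) i))"
          unfolding S'_def by (rule sum.reindex[OF inj, unfolded comp_def])
        also have "\<dots> = (\<Sum>\<beta>\<in>S0. a \<beta> * (\<Prod>i<k. z i ^ \<beta> i))"
        proof (rule sum.cong[OF refl])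
          fix \<beta> assume "\<beta> \<in> S0"
          then have "(\<beta>(k:=0))(k:=e0) = \<beta>" unfolding S0_def by auto
          moreover have "(\<Prod>i<k. z i ^ (\<beta>(k:=0)) i) = (\<Prod>i<k. z i ^ \<beta> i)"
            by (rule prod.cong) auto
          ultimately show "a' (\<beta>(k:=0)) * (\<Prod>i<k. z i ^ (\<beta>(k:=0)) i) = a \<beta> * (\<Prod>i<k. z i ^ \<beta> i)"
            unfolding a'_def by simp
        qed
        also have "\<dots> = 0" using inner by blast
        finally show "(\<Sum>\<beta>\<in>S'. a' \<beta> * (\<Prod>i<k. z i ^ \<beta> i)) = 0" .
      qed
    have "\<forall>\<gamma>\<in>S'. a' \<gamma> = 0" using Suc.IH f1 f2 f3 by blast
    moreover have "\<beta>0(k:=0) \<in> S'" unfolding S'_def S0_def e0_def using b0 by auto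
    ultimately have "a' (\<beta>0(k:=0)) = 0" by blast
    then show "a \<beta>0 = 0" unfolding a'_def e0_def by simp
  qed
qed

theorem id_thm:
  assumes "finite S" "\<forall>\<beta>\<in>S. \<forall>i>n. \<beta> i = 0" "\<forall>z. (\<Sum>\<beta>\<in>S. a \<beta> * mon n \<beta> z) = 0"
  shows "\<forall>\<beta>\<in>S. a \<beta> = 0"
proof -
  have "\<forall>\<beta>\<in>S. \<forall>i\<ge>Suc n. \<beta> i = 0" using assms(2) by auto
  moreover have "\<forall>z::nat\<Rightarrow>complex. (\<Sum>\<beta>\<in>S. a \<beta> * (\<Prod>i<Suc n. z i ^ \<beta> i)) = 0"
    using assms(3) unfolding mon_def by (simp add: lessThan_Suc_atMost)
  ultimately show ?thesis using id_thm_aux[of "Suc n"] assms(1) by blast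
qed

definition dg :: "nat \<Rightarrow> (nat \<Rightarrow> nat) \<Rightarrow> nat" where
  "dg n \<beta> = (\<Sum>i\<le>n. \<beta> i)"

definition MG :: "((nat \<Rightarrow> complex) \<Rightarrow> complex) \<Rightarrow> (nat \<Rightarrow> complex) \<Rightarrow> nat \<Rightarrow> bool" where
  "MG f x k \<longleftrightarrow> (\<forall>y. \<exists>Q. \<forall>t. f (\<lambda>i. x i + t * y i) = t ^ k * poly Q t)"

lemma mon_scale: "mon n \<beta> (\<lambda>i. t * y i) = t ^ dg n \<beta> * mon n \<beta> y"
  unfolding mon_def dg_def by (simp add: power_mult_distrib prod.distrib power_sum)

definition lpoly :: "nat \<Rightarrow> nat \<Rightarrow> ((nat\<Rightarrow>nat)\<Rightarrow>complex) \<Rightarrow> (nat\<Rightarrow>complex) \<Rightarrow> (nat\<Rightarrow>complex) \<Rightarrow> complex poly" where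
  "lpoly n d c x y = (\<Sum>\<beta>\<in>box n d. monom (mon n \<beta> y / fp n \<beta> * dpeval n d c \<beta> x) (dg n \<beta>))"

lemma poly_lpoly: "poly (lpoly n d c x y) t = ev n d c (\<lambda>i. x i + t * y i)"
  unfolding lpoly_def taylor by (simp add: poly_sum poly_monom mon_scale mult_ac)

lemma coeff_lpoly: "coeff (lpoly n d c x y) j =
   (\<Sum>\<beta>\<in>{\<beta>\<in>box n d. dg n \<beta> = j}. (dpeval n d c \<beta> x / fp n \<beta>) * mon n \<beta> y)"
proof -
  have "coeff (lpoly n d c x y) j = (\<Sum>\<beta>\<in>box n d. if dg n \<beta> = j then mon n \<beta> y * dpeval n d c \<beta> x / fp n \<beta> else 0)"
    unfolding lpoly_def by (simp add: coeff_sum coeff_monom)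
  also have "\<dots> = (\<Sum>\<beta>\<in>{\<beta>\<in>box n d. dg n \<beta> = j}. mon n \<beta> y * dpeval n d c \<beta> x / fp n \<beta>)"
    by (rule sum.inter_filter[symmetric, OF finite_box])
  finally show ?thesis by (simp add: mult_ac)
qed

lemma dpeval_big:
  assumes "i \<le> n" "\<beta> i > d"
  shows "dpeval n d c \<beta> x = 0"
  unfolding dpeval_def
proof (rule sum.neutral, intro ballI)
  fix \<alpha> assume "\<alpha> \<in> hmonos n d"
  then have "\<alpha> \<in> box n d" using hmonos_box by blast
  then have "\<alpha> i < \<beta> i" using assms unfolding box_def by force
  then have "(\<Prod>i\<le>n. of_nat ((\<alpha> i choose \<beta> i) * fact (\<beta> i)) * x i ^ (\<alpha> i - \<beta> i)) = (0::complex)"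
    using assms(1) by (intro prod_zero bexI[of _ i]) auto
  then show "c \<alpha> * (\<Prod>i\<le>n. of_nat ((\<alpha> i choose \<beta> i) * fact (\<beta> i)) * x i ^ (\<alpha> i - \<beta> i)) = 0"
    by simp
qed

theorem mg_iff: "mult_ge n d c x k \<longleftrightarrow> MG (ev n d c) x k"
proof
  assume mg: "mult_ge n d c x k"
  show "MG (ev n d c) x k"
    unfolding MG_def
  proof
    fix y
    define Q where "Q = (\<Sum>\<beta>\<in>{\<beta>\<in>box n d. k \<le> dg n \<beta>}. monom (mon n \<beta> y / fp n \<beta> * dpeval n d c \<beta> x) (dg n \<beta> - k))"
    have "\<forall>t. ev n d c (\<lambda>i. x i + t * y i) = t ^ k * poly Q t"
    proof
      fix t
      have "ev n d c (\<lambda>i. x i + t * y i) = (\<Sum>\<beta>\<in>box n d. mon n \<beta> y / fp n \<beta> * dpeval n d c \<beta> x * t ^ dg n \<beta>)"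
        unfolding taylor by (simp add: mon_scale mult_ac)
      also have "\<dots> = (\<Sum>\<beta>\<in>{\<beta>\<in>box n d. k \<le> dg n \<beta>}. mon n \<beta> y / fp n \<beta> * dpeval n d c \<beta> x * t ^ dg n \<beta>)"
      proof (rule sum.mono_neutral_right)
        show "finite (box n d)" by (rule finite_box)
        show "{\<beta> \<in> box n d. k \<le> dg n \<beta>} \<subseteq> box n d" by auto
        show "\<forall>\<beta>\<in>box n d - {\<beta> \<in> box n d. k \<le> dg n \<beta>}. mon n \<beta> y / fp n \<beta> * dpeval n d c \<beta> x * t ^ dg n \<beta> = 0"
        proof
          fix \<beta> assume "\<beta> \<in> box n d - {\<beta> \<in> box n d. k \<le> dg n \<beta>}"
          then have "\<beta> \<in> box n d" "dg n \<beta> < k" by auto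
          then have "dpeval n d c \<beta> x = 0" using mg unfolding mult_ge_def box_def dg_def by auto
          then show "mon n \<beta> y / fp n \<beta> * dpeval n d c \<beta> x * t ^ dg n \<beta> = 0" by simp
        qed
      qed
      also have "\<dots> = t ^ k * poly Q t"
        unfolding Q_def poly_sum poly_monom sum_distrib_left
        by (rule sum.cong[OF refl]) (auto simp: power_add[symmetric])
      finally show "ev n d c (\<lambda>i. x i + t * y i) = t ^ k * poly Q t" .
    qed
    then show "\<exists>Q. \<forall>t. ev n d c (\<lambda>i. x i + t * y i) = t ^ k * poly Q t" by blast
  qed
next
  assume mg: "MG (ev n d c) x k"
  show "mult_ge n d c x k"
    unfolding mult_ge_def
  proof (intro allI impI)
    fix \<beta> assume b0: "\<forall>i>n. \<beta> i = 0" and bk: "(\<Sum>i\<le>n. \<beta> i) < k"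
    show "dpeval n d c \<beta> x = 0"
    proof (cases "\<beta> \<in> box n d")
      case False
      then obtain i where "i \<le> n" "\<beta> i > d" using b0 unfolding box_def by force
      then show ?thesis by (rule dpeval_big)
    next
      case True
      let ?j = "dg n \<beta>"
      let ?S = "{\<gamma>\<in>box n d. dg n \<gamma> = ?j}"
      have zero: "\<forall>y. (\<Sum>\<gamma>\<in>?S. (dpeval n d c \<gamma> x / fp n \<gamma>) * mon n \<gamma> y) = 0"
      proof
        fix y
        obtain Q where Q: "\<forall>t. ev n d c (\<lambda>i. x i + t * y i) = t ^ k * poly Q t"
          using mg unfolding MG_def by blast
        have "poly (lpoly n d c x y) = poly (monom 1 k * Q)"
          using Q by (simp add: fun_eq_iff poly_lpoly poly_monom)
        then have e: "lpoly n d c x y = monom 1 k * Q" by (simp add: poly_eq_poly_eq_iff)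
        have "coeff (lpoly n d c x y) ?j = 0"
          unfolding e coeff_monom_mult using bk unfolding dg_def by simp
        then show "(\<Sum>\<gamma>\<in>?S. (dpeval n d c \<gamma> x / fp n \<gamma>) * mon n \<gamma> y) = 0"
          by (simp add: coeff_lpoly)
      qed
      have fin: "finite ?S" using finite_box by simp
      have supp: "\<forall>\<gamma>\<in>?S. \<forall>i>n. \<gamma> i = 0" by (simp add: box_def)
      from id_thm[OF fin supp zero] have "\<forall>\<gamma>\<in>?S. dpeval n d c \<gamma> x / fp n \<gamma> = 0" .
      then have "dpeval n d c \<beta> x / fp n \<beta> = 0" using True by auto
      then show ?thesis using fp_nz[of n \<beta>] by simp
    qed
  qed
qed

definition lin :: "nat \<Rightarrow> (nat \<Rightarrow> complex) \<Rightarrow> (nat \<Rightarrow> complex) \<Rightarrow> complex" where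
  "lin n a x = (\<Sum>i\<le>n. a i * x i)"

definition rep :: "nat \<Rightarrow> nat \<Rightarrow> ((nat \<Rightarrow> complex) \<Rightarrow> complex) \<Rightarrow> bool" where
  "rep n d f \<longleftrightarrow> (\<exists>c. \<forall>x. f x = ev n d c x)"

lemma lin_add: "lin n a (\<lambda>i. x i + t * y i) = lin n a x + t * lin n a y"
  unfolding lin_def by (simp add: sum.distrib sum_distrib_left distrib_left mult_ac)

lemma hmonos_0: "hmonos n 0 = {\<lambda>_. 0}"
  unfolding hmonos_def by (auto simp: fun_eq_iff) (metis atMost_iff not_le)

lemma rep_const: "rep n 0 (\<lambda>x. k)"
  unfolding rep_def ev_def hmonos_0 by (rule exI[of _ "\<lambda>_. k"]) (simp add: mon_def)

lemma rep_add: "rep n d f \<Longrightarrow> rep n d g \<Longrightarrow> rep n d (\<lambda>x. f x + g x)"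
  unfolding rep_def ev_def
proof -
  assume "\<exists>c. \<forall>x. f x = (\<Sum>\<alpha>\<in>hmonos n d. c \<alpha> * mon n \<alpha> x)" "\<exists>c. \<forall>x. g x = (\<Sum>\<alpha>\<in>hmonos n d. c \<alpha> * mon n \<alpha> x)"
  then obtain c c' where "\<forall>x. f x = (\<Sum>\<alpha>\<in>hmonos n d. c \<alpha> * mon n \<alpha> x)" "\<forall>x. g x = (\<Sum>\<alpha>\<in>hmonos n d. c' \<alpha> * mon n \<alpha> x)"
    by blast
  then have "\<forall>x. f x + g x = (\<Sum>\<alpha>\<in>hmonos n d. (\<lambda>\<alpha>. c \<alpha> + c' \<alpha>) \<alpha> * mon n \<alpha> x)"
    by (simp add: sum.distrib distrib_right)
  then show "\<exists>c. \<forall>x. f x + g x = (\<Sum>\<alpha>\<in>hmonos n d. c \<alpha> * mon n \<alpha> x)"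
    by (intro exI[of _ "\<lambda>\<alpha>. c \<alpha> + c' \<alpha>"]) simp
qed

lemma rep_smult: "rep n d f \<Longrightarrow> rep n d (\<lambda>x. a * f x)"
  unfolding rep_def ev_def
proof -
  assume "\<exists>c. \<forall>x. f x = (\<Sum>\<alpha>\<in>hmonos n d. c \<alpha> * mon n \<alpha> x)"
  then obtain c where "\<forall>x. f x = (\<Sum>\<alpha>\<in>hmonos n d. c \<alpha> * mon n \<alpha> x)" by blast
  then have "\<forall>x. a * f x = (\<Sum>\<alpha>\<in>hmonos n d. (\<lambda>\<alpha>. a * c \<alpha>) \<alpha> * mon n \<alpha> x)"
    by (simp add: sum_distrib_left mult_ac)
  then show "\<exists>c. \<forall>x. a * f x = (\<Sum>\<alpha>\<in>hmonos n d. c \<alpha> * mon n \<alpha> x)"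
    by (intro exI[of _ "\<lambda>\<alpha>. a * c \<alpha>"]) (simp add: mult_ac)
qed

lemma rep_zero: "rep n d (\<lambda>x. 0)"
  unfolding rep_def ev_def by (rule exI[of _ "\<lambda>_. 0"]) simp

lemma rep_sum: "finite A \<Longrightarrow> (\<And>j. j \<in> A \<Longrightarrow> rep n d (F j)) \<Longrightarrow> rep n d (\<lambda>x. \<Sum>j\<in>A. F j x)"
proof (induction A rule: finite_induct)
  case empty then show ?case by (simp add: rep_zero)
next
  case (insert a A)
  then show ?case by (simp add: rep_add)
qed

lemma mon_upd: "i \<le> n \<Longrightarrow> mon n (\<beta>(i := Suc (\<beta> i))) x = x i * mon n \<beta> x"
proof -
  assume i: "i \<le> n"
  have "mon n (\<beta>(i := Suc (\<beta> i))) x = (\<Prod>j\<le>n. x j ^ \<beta> j * (if j = i then x i else 1))"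
    unfolding mon_def by (rule prod.cong) auto
  also have "\<dots> = mon n \<beta> x * (\<Prod>j\<le>n. if j = i then x i else 1)"
    unfolding mon_def by (simp add: prod.distrib)
  also have "\<dots> = mon n \<beta> x * x i" using i by (simp add: prod.delta)
  finally show ?thesis by simp
qed

lemma rep_var: assumes "rep n d f" "i \<le> n" shows "rep n (Suc d) (\<lambda>x. x i * f x)"
proof -
  obtain c where c: "\<forall>x. f x = ev n d c x" using assms(1) unfolding rep_def by blast
  define c' where "c' = (\<lambda>\<alpha>. if 1 \<le> \<alpha> i then c (\<alpha>(i := \<alpha> i - 1)) else 0)"
  let ?h = "\<lambda>\<beta>::nat\<Rightarrow>nat. \<beta>(i := Suc (\<beta> i))"
  let ?T = "{\<alpha>\<in>hmonos n (Suc d). 1 \<le> \<alpha> i}"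
  have bij: "bij_betw ?h (hmonos n d) ?T"
  proof (rule bij_betw_byWitness[where f' = "\<lambda>\<alpha>. \<alpha>(i := \<alpha> i - 1)"])
    show "\<forall>a\<in>hmonos n d. (?h a)(i := ?h a i - 1) = a" by (simp add: fun_eq_iff)
    show "\<forall>a'\<in>?T. ?h (a'(i := a' i - 1)) = a'" by (auto simp: fun_eq_iff)
    show "?h ` hmonos n d \<subseteq> ?T"
    proof
      fix \<alpha> assume "\<alpha> \<in> ?h ` hmonos n d"
      then obtain \<beta> where b: "\<beta> \<in> hmonos n d" and a: "\<alpha> = ?h \<beta>" by blast
      have "(\<Sum>j\<le>n. \<alpha> j) = (\<Sum>j\<le>n. \<beta> j + (if j = i then 1 else 0))"
        unfolding a by (rule sum.cong) auto
      also have "\<dots> = Suc d" using b assms(2) unfolding hmonos_def by (simp add: sum.distrib)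
      finally show "\<alpha> \<in> ?T" using b assms(2) unfolding a hmonos_def by auto
    qed
    show "(\<lambda>\<alpha>. \<alpha>(i := \<alpha> i - 1)) ` ?T \<subseteq> hmonos n d"
    proof
      fix \<beta> assume "\<beta> \<in> (\<lambda>\<alpha>. \<alpha>(i := \<alpha> i - 1)) ` ?T"
      then obtain \<alpha> where a: "\<alpha> \<in> ?T" and b: "\<beta> = \<alpha>(i := \<alpha> i - 1)" by blast
      have "(\<Sum>j\<le>n. \<alpha> j) = (\<Sum>j\<le>n. \<beta> j + (if j = i then 1 else 0))"
        unfolding b by (rule sum.cong) (use a in auto)
      then have "Suc d = (\<Sum>j\<le>n. \<beta> j) + 1" using a assms(2) unfolding hmonos_def by (simp add: sum.distrib)
      then show "\<beta> \<in> hmonos n d" using a assms(2) unfolding b hmonos_def by auto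
    qed
  qed
  have "\<forall>x. x i * f x = ev n (Suc d) c' x"
  proof
    fix x
    have "ev n (Suc d) c' x = (\<Sum>\<alpha>\<in>?T. c' \<alpha> * mon n \<alpha> x)"
      unfolding ev_def by (rule sum.mono_neutral_right) (auto simp: finite_hmonos c'_def)
    also have "\<dots> = (\<Sum>\<beta>\<in>hmonos n d. c' (?h \<beta>) * mon n (?h \<beta>) x)"
      using sum.reindex_bij_betw[OF bij, of "\<lambda>\<alpha>. c' \<alpha> * mon n \<alpha> x"] by simp
    also have "\<dots> = (\<Sum>\<beta>\<in>hmonos n d. x i * (c \<beta> * mon n \<beta> x))"
      by (rule sum.cong[OF refl]) (simp add: c'_def mon_upd[OF assms(2)] fun_upd_idem)
    also have "\<dots> = x i * f x" using c by (simp add: ev_def sum_distrib_left)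
    finally show "x i * f x = ev n (Suc d) c' x" by simp
  qed
  then show ?thesis unfolding rep_def by blast
qed

lemma rep_lin: assumes "rep n d f" shows "rep n (Suc d) (\<lambda>x. lin n a x * f x)"
proof -
  have "rep n (Suc d) (\<lambda>x. \<Sum>i\<le>n. a i * (x i * f x))"
    by (rule rep_sum) (auto intro!: rep_smult rep_var assms)
  moreover have "(\<lambda>x. \<Sum>i\<le>n. a i * (x i * f x)) = (\<lambda>x. lin n a x * f x)"
    unfolding lin_def by (simp add: fun_eq_iff sum_distrib_left sum_distrib_right mult_ac)
  ultimately show ?thesis by simp
qed

lemma rep_pow: "rep n d f \<Longrightarrow> rep n (k + d) (\<lambda>x. lin n a x ^ k * f x)"
proof (induction k)
  case 0 then show ?case by simp
next
  case (Suc k)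
  from rep_lin[OF Suc.IH[OF Suc.prems], of a] show ?case by (simp add: mult_ac)
qed

lemma rep_prodpow: fixes N :: nat shows "rep n (\<Sum>i<N. e i) (\<lambda>x. \<Prod>i<N. lin n (L i) x ^ e i)"
proof (induction N)
  case 0 then show ?case using rep_const[of n 1] by simp
next
  case (Suc N)
  from rep_pow[OF Suc.IH, of "e N" "L N"] show ?case by (simp add: add.commute mult.commute)
qed

definition am :: "nat \<Rightarrow> (nat \<Rightarrow> nat \<Rightarrow> complex) \<Rightarrow> (nat \<Rightarrow> complex) \<Rightarrow> (nat \<Rightarrow> complex)" where
  "am n A x = (\<lambda>i. lin n (A i) x)"

lemma rep_comp: "rep n d (\<lambda>x. ev n d c (am n A x))"
proof -
  have "rep n d (\<lambda>x. \<Sum>\<alpha>\<in>hmonos n d. c \<alpha> * (\<Prod>i<Suc n. lin n (A i) x ^ \<alpha> i))"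
  proof (rule rep_sum[OF finite_hmonos])
    fix \<alpha> assume a: "\<alpha> \<in> hmonos n d"
    have "(\<Sum>i<Suc n. \<alpha> i) = d" using a unfolding hmonos_def by (simp add: lessThan_Suc_atMost)
    then show "rep n d (\<lambda>x. c \<alpha> * (\<Prod>i<Suc n. lin n (A i) x ^ \<alpha> i))"
      using rep_smult[OF rep_prodpow[where n=n and N="Suc n" and e=\<alpha> and L=A]] by simp
  qed
  then show ?thesis unfolding ev_def am_def mon_def by (simp add: lessThan_Suc_atMost)
qed

definition plin :: "nat \<Rightarrow> (nat \<Rightarrow> complex) list \<Rightarrow> (nat \<Rightarrow> complex) \<Rightarrow> complex" where
  "plin n ls x = prod_list (map (\<lambda>a. lin n a x) ls)"

lemma rep_plin: "rep n (length ls) (plin n ls)"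
proof (induction ls)
  case Nil then show ?case using rep_const[of n 1] by (simp add: plin_def)
next
  case (Cons a ls)
  from rep_lin[OF Cons.IH, of a] show ?case by (simp add: plin_def)
qed

lemma ev_cong: "(\<And>i. i \<le> n \<Longrightarrow> x i = x' i) \<Longrightarrow> ev n d c x = ev n d c x'"
  unfolding ev_def mon_def by (intro sum.cong refl arg_cong2[where f = "(*)"] prod.cong) auto

lemma hs_nonzero_if: "ev n d c x \<noteq> 0 \<Longrightarrow> hs_nonzero n d c"
  unfolding hs_nonzero_def ev_def by (metis (no_types, lifting) mult_eq_0_iff sum.neutral)

lemma hs_nonzero_imp: "hs_nonzero n d c \<Longrightarrow> \<exists>x. ev n d c x \<noteq> 0"
proof (rule ccontr)
  assume h: "hs_nonzero n d c" and "\<not> (\<exists>x. ev n d c x \<noteq> 0)"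
  then have "\<forall>z. (\<Sum>\<beta>\<in>hmonos n d. c \<beta> * mon n \<beta> z) = 0" unfolding ev_def by simp
  from id_thm[OF finite_hmonos _ this] have "\<forall>\<beta>\<in>hmonos n d. c \<beta> = 0"
    unfolding hmonos_def by auto
  then show False using h unfolding hs_nonzero_def by blast
qed

lemma mg_plin: "MG (plin n ls) x (length (filter (\<lambda>a. lin n a x = 0) ls))"
  unfolding MG_def
proof
  fix y
  show "\<exists>Q. \<forall>t. plin n ls (\<lambda>i. x i + t * y i) = t ^ length (filter (\<lambda>a. lin n a x = 0) ls) * poly Q t"
  proof (induction ls)
    case Nil then show ?case by (rule exI[of _ 1]) (simp add: plin_def)
  next
    case (Cons a ls)
    then obtain Q where Q: "\<forall>t. plin n ls (\<lambda>i. x i + t * y i) = t ^ length (filter (\<lambda>a. lin n a x = 0) ls) * poly Q t"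
      by blast
    show ?case
    proof (cases "lin n a x = 0")
      case True
      show ?thesis
        by (rule exI[of _ "smult (lin n a y) Q"]) (use Q True in \<open>simp add: plin_def lin_add mult_ac\<close>)
    next
      case False
      show ?thesis
        by (rule exI[of _ "[:lin n a x, lin n a y:] * Q"]) (use Q False in \<open>simp add: plin_def lin_add algebra_simps\<close>)
    qed
  qed
qed

lemma exact_plin:
  assumes "\<forall>a\<in>set ls. lin n a q \<noteq> 0 \<or> lin n a y \<noteq> 0"
  shows "\<exists>R. poly R 0 \<noteq> 0 \<and> (\<forall>t. plin n ls (\<lambda>i. q i + t * y i) = t ^ length (filter (\<lambda>a. lin n a q = 0) ls) * poly R t)"
  using assms
proof (induction ls)
  case Nil then show ?case by (intro exI[of _ 1]) (simp add: plin_def)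
next
  case (Cons a ls)
  then obtain R where R: "poly R 0 \<noteq> 0" "\<forall>t. plin n ls (\<lambda>i. q i + t * y i) = t ^ length (filter (\<lambda>a. lin n a q = 0) ls) * poly R t"
    by auto
  show ?case
  proof (cases "lin n a q = 0")
    case True
    then have "lin n a y \<noteq> 0" using Cons.prems by auto
    then show ?thesis
      by (intro exI[of _ "smult (lin n a y) R"]) (use R True in \<open>simp add: plin_def lin_add mult_ac\<close>)
  next
    case False
    show ?thesis
      by (intro exI[of _ "[:lin n a q, lin n a y:] * R"]) (use R False in \<open>simp add: plin_def lin_add algebra_simps\<close>)
  qed
qed

lemma not_mg:
  fixes f :: "(nat \<Rightarrow> complex) \<Rightarrow> complex"
  assumes "poly R 0 \<noteq> 0" "\<forall>t. f (\<lambda>i. q i + t * y i) = t ^ k * poly R t"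
  shows "\<not> MG f q (Suc k)"
proof
  assume "MG f q (Suc k)"
  then obtain Q where Q: "\<forall>t. f (\<lambda>i. q i + t * y i) = t ^ Suc k * poly Q t" unfolding MG_def by blast
  let ?P = "R - [:0,1:] * Q"
  have roots: "UNIV - {0} \<subseteq> {t. poly ?P t = 0}"
  proof
    fix t :: complex assume "t \<in> UNIV - {0}"
    then have t: "t \<noteq> 0" by simp
    have "t ^ k * poly R t = t ^ k * (t * poly Q t)" using Q assms(2) by (metis mult.assoc power_Suc2)
    then have "poly R t = t * poly Q t" using t by simp
    then show "t \<in> {t. poly ?P t = 0}" by simp
  qed
  have "?P = 0"
  proof (rule ccontr)
    assume "?P \<noteq> 0"
    then have "finite {t. poly ?P t = 0}" by (rule poly_roots_finite)
    then have "finite (UNIV - {0::complex})" using roots finite_subset by blast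
    then show False using infinite_UNIV_char_0[where 'a=complex] by simp
  qed
  then have "R = [:0,1:] * Q" by simp
  then have "poly R 0 = 0" by simp
  then show False using assms(1) by simp
qed

lemma mg_le: "MG f x k \<Longrightarrow> j \<le> k \<Longrightarrow> MG f x j"
  unfolding MG_def
proof (intro allI)
  fix y assume h: "\<forall>y. \<exists>Q. \<forall>t. f (\<lambda>i. x i + t * y i) = t ^ k * poly Q t" and jk: "j \<le> k"
  then obtain Q where Q: "\<forall>t. f (\<lambda>i. x i + t * y i) = t ^ k * poly Q t" by blast
  show "\<exists>Q. \<forall>t. f (\<lambda>i. x i + t * y i) = t ^ j * poly Q t"
    by (rule exI[of _ "monom 1 (k - j) * Q"])
      (use Q jk in \<open>simp add: poly_monom mult.assoc[symmetric] power_add[symmetric]\<close>)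
qed

lemma am_add: "am n A (\<lambda>i. x i + t * y i) = (\<lambda>i. am n A x i + t * am n A y i)"
  unfolding am_def by (simp add: lin_add)

lemma mg_comp: "MG f (am n A x) k \<Longrightarrow> MG (\<lambda>x. f (am n A x)) x k"
  unfolding MG_def am_add by blast

lemma mg_comp_rev:
  assumes surj: "\<forall>y. \<exists>y'. \<forall>i\<le>n. am n A y' i = y i"
    and h: "MG (\<lambda>x. ev n d c (am n A x)) x k"
  shows "MG (ev n d c) (am n A x) k"
  unfolding MG_def
proof
  fix y
  obtain y' where y': "\<forall>i\<le>n. am n A y' i = y i" using surj by blast
  obtain Q where Q: "\<forall>t. ev n d c (am n A (\<lambda>i. x i + t * y' i)) = t ^ k * poly Q t"
    using h unfolding MG_def by blast
  have "\<forall>t. ev n d c (\<lambda>i. am n A x i + t * y i) = t ^ k * poly Q t"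
  proof
    fix t
    have "ev n d c (\<lambda>i. am n A x i + t * y i) = ev n d c (am n A (\<lambda>i. x i + t * y' i))"
      unfolding am_add by (rule ev_cong) (simp add: y')
    then show "ev n d c (\<lambda>i. am n A x i + t * y i) = t ^ k * poly Q t" using Q by simp
  qed
  then show "\<exists>Q. \<forall>t. ev n d c (\<lambda>i. am n A x i + t * y i) = t ^ k * poly Q t" by blast
qed

lemma dist_lemma:
  fixes cp :: "nat \<Rightarrow> nat"
  assumes "finite K" "T \<le> (\<Sum>j\<in>K. cp j)"
  shows "\<exists>w. (\<forall>j\<in>K. w j \<le> cp j) \<and> (\<Sum>j\<in>K. w j) = T"
  using assms
proof (induction K arbitrary: T rule: finite_induct)
  case empty then show ?case by simp
next
  case (insert a K)
  define t where "t = min T (cp a)"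
  have "T - t \<le> (\<Sum>j\<in>K. cp j)" using insert.prems insert.hyps unfolding t_def by auto
  then obtain w where w: "\<forall>j\<in>K. w j \<le> cp j" "(\<Sum>j\<in>K. w j) = T - t" using insert.IH by blast
  define w' where "w' = w(a := t)"
  have "(\<Sum>j\<in>K. w' j) = (\<Sum>j\<in>K. w j)" unfolding w'_def using insert.hyps by (intro sum.cong) auto
  then have "(\<Sum>j\<in>insert a K. w' j) = T" using insert.hyps w(2) unfolding w'_def t_def by auto
  moreover have "\<forall>j\<in>insert a K. w' j \<le> cp j" using w(1) unfolding w'_def t_def by auto
  ultimately show ?case by blast
qed

lemma count_concat:
  assumes "distinct js"
  shows "length (filter Q (concat (map (\<lambda>j. replicate (f j) j) js))) = (\<Sum>j\<in>{j\<in>set js. Q j}. f j)"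
  using assms
proof (induction js)
  case Nil then show ?case by simp
next
  case (Cons a js)
  have fin: "finite {j \<in> set js. Q j}" by simp
  have na: "a \<notin> {j \<in> set js. Q j}" using Cons.prems by auto
  show ?case
  proof (cases "Q a")
    case True
    have "{j \<in> set (a # js). Q j} = insert a {j \<in> set js. Q j}" using True by auto
    then show ?thesis using Cons True fin na by simp
  next
    case False
    have "{j \<in> set (a # js). Q j} = {j \<in> set js. Q j}" using False by auto
    then show ?thesis using Cons False by simp
  qed
qed

lemma block_lemma:
  assumes "distinct js" "\<forall>j\<in>set js. f j \<le> \<mu>"
  shows "\<forall>i. i + \<mu> < length (concat (map (\<lambda>j. replicate (f j) j) js)) \<longrightarrow>
     concat (map (\<lambda>j. replicate (f j) j) js) ! i \<noteq> concat (map (\<lambda>j. replicate (f j) j) js) ! (i + \<mu>)"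
  using assms
proof (induction js)
  case Nil then show ?case by simp
next
  case (Cons a js)
  let ?L = "concat (map (\<lambda>j. replicate (f j) j) js)"
  have L: "concat (map (\<lambda>j. replicate (f j) j) (a # js)) = replicate (f a) a @ ?L" by simp
  have anot: "a \<notin> set ?L" using Cons.prems by auto
  have fa: "f a \<le> \<mu>" using Cons.prems by auto
  show ?case
  proof (intro allI impI)
    fix i assume i: "i + \<mu> < length (concat (map (\<lambda>j. replicate (f j) j) (a # js)))"
    show "concat (map (\<lambda>j. replicate (f j) j) (a # js)) ! i \<noteq> concat (map (\<lambda>j. replicate (f j) j) (a # js)) ! (i + \<mu>)"
    proof (cases "i < f a")
      case True
      have "i + \<mu> - f a < length ?L" using i fa by simp
      then have "?L ! (i + \<mu> - f a) \<in> set ?L" by (rule nth_mem)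
      then have "?L ! (i + \<mu> - f a) \<noteq> a" using anot by auto
      then show ?thesis unfolding L using True fa by (simp add: nth_append)
    next
      case False
      have "i - f a + \<mu> < length ?L" using i False by simp
      then have "?L ! (i - f a) \<noteq> ?L ! (i - f a + \<mu>)" using Cons.IH Cons.prems by auto
      moreover have e0: "i + \<mu> - f a = i - f a + \<mu>" using False by simp
      moreover have "(replicate (f a) a @ ?L) ! i = ?L ! (i - f a)"
        using False by (simp only: nth_append length_replicate if_False)
      moreover have "(replicate (f a) a @ ?L) ! (i + \<mu>) = ?L ! (i + \<mu> - f a)"
        using False by (simp only: nth_append length_replicate) simp
      ultimately show ?thesis unfolding L by metis
    qed
  qed
qed

lemma zip_count:
  "length xs = length ys \<Longrightarrow> length (filter (\<lambda>(a,b). P a \<or> P b) (zip xs ys)) + length (filter (\<lambda>(a,b). P a \<and> P b) (zip xs ys))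
     = length (filter P xs) + length (filter P ys)"
  by (induction xs ys rule: list_induct2) auto

lemma zip_count2:
  "length xs = length ys \<Longrightarrow> \<forall>x\<in>set ys. P x \<Longrightarrow> length (filter (\<lambda>(a,b). Q a \<and> P b) (zip xs ys)) = length (filter Q xs)"
  by (induction xs ys rule: list_induct2) auto

lemma zip_count3:
  "\<forall>x\<in>set xs. \<not> Q x \<Longrightarrow> length (filter (\<lambda>(a,b). Q a \<and> R b) (zip xs ys)) = 0"
proof (induction xs arbitrary: ys)
  case Nil then show ?case by simp
next
  case (Cons a xs) then show ?case by (cases ys) auto
qed

lemma min_sum:
  fixes c :: "nat \<Rightarrow> nat"
  assumes "finite K" "\<forall>l\<in>K. c l \<le> d" "(\<Sum>l\<in>K. c l) \<ge> d + \<mu>" "\<mu> \<le> d"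
  shows "(\<Sum>l\<in>K. min (c l) \<mu>) \<ge> 2 * \<mu>"
proof (cases "\<exists>l\<in>K. c l \<ge> \<mu>")
  case False
  then have "(\<Sum>l\<in>K. min (c l) \<mu>) = (\<Sum>l\<in>K. c l)" by (intro sum.cong) auto
  then show ?thesis using assms by simp
next
  case True
  then obtain l0 where l0: "l0 \<in> K" "c l0 \<ge> \<mu>" by blast
  have s: "(\<Sum>l\<in>K. min (c l) \<mu>) = \<mu> + (\<Sum>l\<in>K - {l0}. min (c l) \<mu>)"
    using sum.remove[OF assms(1) l0(1), of "\<lambda>l. min (c l) \<mu>"] l0 by simp
  show ?thesis
  proof (cases "\<exists>l\<in>K - {l0}. c l \<ge> \<mu>")
    case True
    then obtain l1 where l1: "l1 \<in> K - {l0}" "c l1 \<ge> \<mu>" by blast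
    have "(\<Sum>l\<in>K - {l0}. min (c l) \<mu>) \<ge> min (c l1) \<mu>"
      using l1 assms(1) by (intro member_le_sum) auto
    then show ?thesis using s l1 by simp
  next
    case False
    then have "(\<Sum>l\<in>K - {l0}. min (c l) \<mu>) = (\<Sum>l\<in>K - {l0}. c l)" by (intro sum.cong) (auto simp: not_le)
    moreover have "(\<Sum>l\<in>K. c l) = c l0 + (\<Sum>l\<in>K - {l0}. c l)"
      using sum.remove[OF assms(1) l0(1)] by simp
    moreover have "c l0 \<le> d" using assms(2) l0 by auto
    ultimately show ?thesis using s assms(3) by simp
  qed
qed

definition vanish :: "nat \<Rightarrow> nat + nat \<times> nat \<Rightarrow> bool" where
  "vanish j t = (case t of Inl l \<Rightarrow> l \<noteq> j | Inr (a,b) \<Rightarrow> a \<noteq> j \<and> b \<noteq> j)"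
definition vanI :: "nat set \<Rightarrow> nat + nat \<times> nat \<Rightarrow> bool" where
  "vanI I t = (case t of Inl l \<Rightarrow> l \<notin> I | Inr (a,b) \<Rightarrow> a \<notin> I \<and> b \<notin> I)"
definition validt :: "nat \<Rightarrow> nat + nat \<times> nat \<Rightarrow> bool" where
  "validt n t = (case t of Inl l \<Rightarrow> l \<le> n | Inr (a,b) \<Rightarrow> a \<le> n \<and> b \<le> n \<and> a \<noteq> b)"

lemma min_sum2:
  fixes c :: "nat \<Rightarrow> nat"
  assumes "finite K"
  shows "(\<Sum>l\<in>K. min (c l) \<mu>) \<ge> min \<mu> (\<Sum>l\<in>K. c l)"
proof (cases "\<exists>l\<in>K. c l \<ge> \<mu>")
  case True
  then obtain l where "l \<in> K" "c l \<ge> \<mu>" by blast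
  then have "min (c l) \<mu> \<le> (\<Sum>l\<in>K. min (c l) \<mu>)" using assms by (intro member_le_sum) auto
  then show ?thesis using \<open>c l \<ge> \<mu>\<close> by simp
next
  case False
  then have "(\<Sum>l\<in>K. min (c l) \<mu>) = (\<Sum>l\<in>K. c l)" by (intro sum.cong) (auto simp: not_le)
  then show ?thesis by simp
qed

lemma min_sum_le: "(\<Sum>l\<in>K. min (c l) (\<mu>::nat)) \<le> (\<Sum>l\<in>K. c l)"
  by (intro sum_mono) simp

lemma arith_choice:
  fixes SI SJ MI MJ d \<mu> :: nat
  assumes "MI + MJ \<ge> 2 * \<mu>" "MI \<ge> min \<mu> SI" "MJ \<ge> min \<mu> SJ" "MI \<le> SI" "MJ \<le> SJ"
    "SI + SJ \<ge> d + \<mu>" "\<mu> \<le> d"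
  shows "\<exists>PI ZI ZJ. PI \<le> MI \<and> 2 * \<mu> - PI \<le> MJ \<and> PI \<le> 2 * \<mu> \<and> ZI + PI \<le> SI \<and> ZJ + (2 * \<mu> - PI) \<le> SJ
     \<and> ZI + ZJ + \<mu> = d \<and>
     (if d \<le> SI then \<mu> \<le> PI \<and> ZJ = 0 else PI \<le> \<mu> \<and> ZJ + (\<mu> - PI) = d - SI)"
proof (cases "d \<le> SI")
  case True
  define PI where "PI = max \<mu> (2 * \<mu> - MJ)"
  show ?thesis
    by (rule exI[of _ PI], rule exI[of _ "d - \<mu>"], rule exI[of _ 0])
       (use assms True in \<open>auto simp: PI_def max_def min_def split: if_splits\<close>)
next
  case False
  define PI where "PI = max (SI + \<mu> - d) (2 * \<mu> - MJ)"
  have "MJ \<ge> \<mu>" using assms False by (auto simp: min_def split: if_splits)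
  show ?thesis
    by (rule exI[of _ PI], rule exI[of _ "SI - PI"], rule exI[of _ "d - \<mu> - (SI - PI)"])
       (use assms False \<open>MJ \<ge> \<mu>\<close> in \<open>auto simp: PI_def max_def min_def split: if_splits\<close>)
qed

lemma comb:
  fixes n d \<mu> :: nat and mm :: "nat \<Rightarrow> nat" and I :: "nat set"
  assumes A1: "\<forall>l\<le>n. mm l \<le> d" and A2: "\<mu> \<le> d" and A3: "(\<Sum>l\<le>n. mm l) + \<mu> \<le> n * d"
    and A4: "I \<subseteq> {..n}"
  shows "\<exists>tags. length tags = d \<and> (\<forall>t\<in>set tags. validt n t) \<and> (\<forall>j\<le>n. mm j \<le> length (filter (vanish j) tags))
     \<and> \<mu> \<le> length (filter (\<lambda>t. \<not> isl t) tags)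
     \<and> int (length (filter (vanI I) tags)) = max 0 (int d - int (\<Sum>l\<in>I. d - mm l))"
proof -
  define J where "J = {..n} - I"
  define c where "c = (\<lambda>l. d - mm l)"
  have fI: "finite I" using A4 finite_subset by blast
  have fJ: "finite J" unfolding J_def by simp
  have IJ: "I \<union> J = {..n}" "I \<inter> J = {}" using A4 unfolding J_def by auto
  define SI where "SI = (\<Sum>l\<in>I. c l)"
  define SJ where "SJ = (\<Sum>l\<in>J. c l)"
  have tot0: "(\<Sum>l\<le>n. c l) + (\<Sum>l\<le>n. mm l) = (Suc n) * d"
  proof -
    have "(\<Sum>l\<le>n. c l) + (\<Sum>l\<le>n. mm l) = (\<Sum>l\<le>n. c l + mm l)" by (simp add: sum.distrib)
    also have "\<dots> = (\<Sum>l\<le>n. d)" unfolding c_def using A1 by (intro sum.cong) auto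
    finally show ?thesis by simp
  qed
  have split: "\<And>f::nat\<Rightarrow>nat. (\<Sum>l\<le>n. f l) = (\<Sum>l\<in>I. f l) + (\<Sum>l\<in>J. f l)"
    using sum.union_disjoint[OF fI fJ IJ(2)] IJ(1) by simp
  have tot: "SI + SJ \<ge> d + \<mu>" using tot0 A3 split[of c] unfolding SI_def SJ_def by simp
  define M where "M = (\<lambda>l. min (c l) \<mu>)"
  define MI where "MI = (\<Sum>l\<in>I. M l)"
  define MJ where "MJ = (\<Sum>l\<in>J. M l)"
  have cd: "\<forall>l\<in>{..n}. c l \<le> d" unfolding c_def by simp
  have "(\<Sum>l\<le>n. M l) \<ge> 2 * \<mu>" unfolding M_def
    using min_sum[of "{..n}" c d \<mu>] cd tot split[of c] A2 unfolding SI_def SJ_def by simp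
  then have m1: "MI + MJ \<ge> 2 * \<mu>" using split[of M] unfolding MI_def MJ_def by simp
  have m2: "MI \<ge> min \<mu> SI" unfolding MI_def SI_def M_def by (rule min_sum2[OF fI])
  have m3: "MJ \<ge> min \<mu> SJ" unfolding MJ_def SJ_def M_def by (rule min_sum2[OF fJ])
  have m4: "MI \<le> SI" unfolding MI_def SI_def M_def by (rule min_sum_le)
  have m5: "MJ \<le> SJ" unfolding MJ_def SJ_def M_def by (rule min_sum_le)
  obtain PI ZI ZJ where ch: "PI \<le> MI" "2 * \<mu> - PI \<le> MJ" "PI \<le> 2 * \<mu>" "ZI + PI \<le> SI" "ZJ + (2 * \<mu> - PI) \<le> SJ"
     "ZI + ZJ + \<mu> = d"
     and chc: "if d \<le> SI then \<mu> \<le> PI \<and> ZJ = 0 else PI \<le> \<mu> \<and> ZJ + (\<mu> - PI) = d - SI"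
    using arith_choice[OF m1 m2 m3 m4 m5 tot A2] by blast
  define PJ where "PJ = 2 * \<mu> - PI"
  obtain pI where pI: "\<forall>j\<in>I. pI j \<le> M j" "(\<Sum>j\<in>I. pI j) = PI"
    using dist_lemma[OF fI, of PI M] ch(1) unfolding MI_def by blast
  obtain pJ where pJ: "\<forall>j\<in>J. pJ j \<le> M j" "(\<Sum>j\<in>J. pJ j) = PJ"
    using dist_lemma[OF fJ, of PJ M] ch(2) unfolding MJ_def PJ_def by blast
  define p where "p = (\<lambda>j. if j \<in> I then pI j else pJ j)"
  have pM: "\<forall>j\<le>n. p j \<le> M j" using pI pJ IJ unfolding p_def by auto
  have sumpI: "(\<Sum>j\<in>I. p j) = PI" using pI unfolding p_def by simp
  have "(\<Sum>j\<in>J. p j) = (\<Sum>j\<in>J. pJ j)" unfolding p_def using IJ(2) by (intro sum.cong) auto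
  then have sumpJ: "(\<Sum>j\<in>J. p j) = PJ" using pJ by simp
  have pc: "\<forall>j\<le>n. p j \<le> c j" using pM unfolding M_def by auto
  have cpI: "(\<Sum>j\<in>I. c j - p j) = SI - PI"
    using pc A4 sum_subtractf_nat[of I p c] sumpI unfolding SI_def by (auto simp: subset_iff)
  have cpJ: "(\<Sum>j\<in>J. c j - p j) = SJ - PJ"
    using pc sum_subtractf_nat[of J p c] sumpJ unfolding SJ_def J_def by auto
  have zle: "ZI \<le> SI - PI" "ZJ \<le> SJ - PJ" using ch(4,5) unfolding PJ_def by auto
  obtain zI where zI: "\<forall>j\<in>I. zI j \<le> c j - p j" "(\<Sum>j\<in>I. zI j) = ZI"
    using dist_lemma[OF fI, of ZI "\<lambda>j. c j - p j"] zle cpI by auto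
  obtain zJ where zJ: "\<forall>j\<in>J. zJ j \<le> c j - p j" "(\<Sum>j\<in>J. zJ j) = ZJ"
    using dist_lemma[OF fJ, of ZJ "\<lambda>j. c j - p j"] zle cpJ by auto
  define z where "z = (\<lambda>j. if j \<in> I then zI j else zJ j)"
  have zc: "\<forall>j\<le>n. z j + p j \<le> c j"
  proof (intro allI impI)
    fix j assume j: "j \<le> n"
    show "z j + p j \<le> c j"
    proof (cases "j \<in> I")
      case True then show ?thesis using zI(1) pc j unfolding z_def by fastforce
    next
      case False then have "j \<in> J" using j unfolding J_def by auto
      then show ?thesis using zJ(1) pc j False unfolding z_def by fastforce
    qed
  qed
  have sumzI: "(\<Sum>j\<in>I. z j) = ZI" using zI unfolding z_def by simp
  have "(\<Sum>j\<in>J. z j) = (\<Sum>j\<in>J. zJ j)" unfolding z_def using IJ(2) by (intro sum.cong) auto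
  then have sumzJ: "(\<Sum>j\<in>J. z j) = ZJ" using zJ by simp
  define lI where "lI = sorted_list_of_set I"
  define lJ where "lJ = sorted_list_of_set J"
  define js where "js = lI @ lJ"
  have dlI: "distinct lI" "set lI = I" unfolding lI_def using fI by auto
  have dlJ: "distinct lJ" "set lJ = J" unfolding lJ_def using fJ by auto
  have djs: "distinct js" "set js = {..n}" unfolding js_def using dlI dlJ IJ by auto
  define LpI where "LpI = concat (map (\<lambda>j. replicate (p j) j) lI)"
  define LpJ where "LpJ = concat (map (\<lambda>j. replicate (p j) j) lJ)"
  define Lp where "Lp = concat (map (\<lambda>j. replicate (p j) j) js)"
  have Lp_app: "Lp = LpI @ LpJ" unfolding Lp_def LpI_def LpJ_def js_def by simp
  have lenLpI: "length LpI = PI"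
    using count_concat[OF dlI(1), of "\<lambda>_. True" p] dlI sumpI unfolding LpI_def by simp
  have lenLpJ: "length LpJ = PJ"
    using count_concat[OF dlJ(1), of "\<lambda>_. True" p] dlJ sumpJ unfolding LpJ_def by simp
  have lenLp: "length Lp = 2 * \<mu>" using lenLpI lenLpJ ch(3) unfolding Lp_app PJ_def by simp
  have setLpI: "set LpI \<subseteq> I" unfolding LpI_def using dlI by auto
  have setLpJ: "set LpJ \<subseteq> J" unfolding LpJ_def using dlJ by auto
  have setLp: "set Lp \<subseteq> {..n}" unfolding Lp_app using setLpI setLpJ IJ(1) by auto
  define L1 where "L1 = take \<mu> Lp"
  define L2 where "L2 = drop \<mu> Lp"
  have lenL: "length L1 = \<mu>" "length L2 = \<mu>" unfolding L1_def L2_def using lenLp by auto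
  have pmu: "\<forall>j\<in>set js. p j \<le> \<mu>" using pM djs unfolding M_def by auto
  have noloop: "\<forall>(a,b)\<in>set (zip L1 L2). a \<noteq> b"
  proof
    fix ab assume "ab \<in> set (zip L1 L2)"
    then obtain i where i: "i < \<mu>" "ab = (L1 ! i, L2 ! i)" using lenL by (auto simp: in_set_zip)
    have "i + \<mu> < length Lp" using i lenLp by simp
    then have "Lp ! i \<noteq> Lp ! (i + \<mu>)" using block_lemma[OF djs(1) pmu] unfolding Lp_def by blast
    moreover have "L1 ! i = Lp ! i" unfolding L1_def using i by simp
    moreover have "L2 ! i = Lp ! (i + \<mu>)" unfolding L2_def using i lenLp by (simp add: add.commute)
    ultimately show "case ab of (a, b) \<Rightarrow> a \<noteq> b" using i by simp
  qed
  define Zc where "Zc = concat (map (\<lambda>j. replicate (z j) j) js)"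
  have "set Zc \<subseteq> set js" unfolding Zc_def by auto
  then have setZc: "set Zc \<subseteq> {..n}" using djs(2) by simp
  have lenZc: "length Zc = ZI + ZJ"
  proof -
    have "length Zc = (\<Sum>j\<in>{..n}. z j)"
      using count_concat[OF djs(1), of "\<lambda>_. True" z] djs unfolding Zc_def by (simp add: atMost_def)
    then show ?thesis using split[of z] sumzI sumzJ by simp
  qed
  define tags where "tags = map Inl Zc @ map Inr (zip L1 L2)"
  have "length tags = d" unfolding tags_def using lenZc lenL ch(6) by simp
  moreover have "\<forall>t\<in>set tags. validt n t"
  proof
    fix t assume "t \<in> set tags"
    then consider (a) l where "l \<in> set Zc" "t = Inl l" | (b) a b where "(a,b) \<in> set (zip L1 L2)" "t = Inr (a,b)"
      unfolding tags_def by auto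
    then show "validt n t"
    proof cases
      case a then show ?thesis using setZc unfolding validt_def by auto
    next
      case b
      have "a \<in> set L1" "b \<in> set L2" using b(1) by (auto dest: set_zip_leftD set_zip_rightD)
      then have "a \<in> set Lp" "b \<in> set Lp" unfolding L1_def L2_def by (auto dest: in_set_takeD in_set_dropD)
      then show ?thesis using b noloop setLp unfolding validt_def by auto
    qed
  qed
  moreover have "\<forall>j\<le>n. mm j \<le> length (filter (vanish j) tags)"
  proof (intro allI impI)
    fix j assume j: "j \<le> n"
    have f1: "length (filter (vanish j) tags) = length (filter (\<lambda>l. l \<noteq> j) Zc) + length (filter (\<lambda>(a,b). a \<noteq> j \<and> b \<noteq> j) (zip L1 L2))"
      unfolding tags_def by (simp add: filter_map comp_def vanish_def split_def)
    have "length (filter (\<lambda>l. l \<noteq> j) Zc) + length (filter (\<lambda>l. \<not> l \<noteq> j) Zc) = length Zc"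
      by (rule sum_length_filter_compl)
    moreover have "length (filter (\<lambda>l. \<not> l \<noteq> j) Zc) = z j"
    proof -
      have "{x \<in> set js. \<not> x \<noteq> j} = {j}" using djs j by auto
      then show ?thesis using count_concat[OF djs(1), of "\<lambda>l. \<not> l \<noteq> j" z] unfolding Zc_def by simp
    qed
    ultimately have c1: "length (filter (\<lambda>l. l \<noteq> j) Zc) = ZI + ZJ - z j" and zj: "z j \<le> ZI + ZJ"
      using lenZc by linarith+
    let ?P = "\<lambda>(a,b). a \<noteq> j \<and> b \<noteq> j"
    have "length (filter ?P (zip L1 L2)) + length (filter (\<lambda>x. \<not> ?P x) (zip L1 L2)) = length (zip L1 L2)"
      by (rule sum_length_filter_compl)
    moreover have "filter (\<lambda>x. \<not> ?P x) (zip L1 L2) = filter (\<lambda>(a,b). a = j \<or> b = j) (zip L1 L2)"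
      by (intro filter_cong) auto
    moreover have "length (filter (\<lambda>(a,b). a = j \<or> b = j) (zip L1 L2)) = p j"
    proof -
      have z2: "length (filter (\<lambda>(a,b). a = j \<and> b = j) (zip L1 L2)) = 0"
        using noloop by (auto simp: filter_empty_conv)
      have "length (filter (\<lambda>x. x = j) L1) + length (filter (\<lambda>x. x = j) L2) = length (filter (\<lambda>x. x = j) Lp)"
        unfolding L1_def L2_def by (metis append_take_drop_id filter_append length_append)
      also have "\<dots> = p j"
      proof -
        have "{x \<in> set js. x = j} = {j}" using djs j by auto
        then show ?thesis using count_concat[OF djs(1), of "\<lambda>x. x = j" p] unfolding Lp_def by simp
      qed
      finally show ?thesis using zip_count[OF lenL(1)[folded lenL(2)], of "\<lambda>x. x = j"] z2 by simp
    qed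
    ultimately have c2: "length (filter ?P (zip L1 L2)) = \<mu> - p j" using lenL by simp
    have "mm j = d - c j" unfolding c_def using A1 j by simp
    moreover have "p j \<le> \<mu>" using pM j unfolding M_def by auto
    ultimately show "mm j \<le> length (filter (vanish j) tags)" using f1 c1 c2 zc[rule_format, OF j] j ch(6) zj by (simp add: diff_le_mono2)
  qed
  moreover have "\<mu> \<le> length (filter (\<lambda>t. \<not> isl t) tags)"
    unfolding tags_def using lenL by (simp add: filter_map comp_def)
  moreover have "int (length (filter (vanI I) tags)) = max 0 (int d - int (\<Sum>l\<in>I. d - mm l))"
  proof -
    have f1: "length (filter (vanI I) tags) = length (filter (\<lambda>l. l \<notin> I) Zc) + length (filter (\<lambda>(a,b). a \<notin> I \<and> b \<notin> I) (zip L1 L2))"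
      unfolding tags_def by (simp add: filter_map comp_def vanI_def split_def)
    have c1: "length (filter (\<lambda>l. l \<notin> I) Zc) = ZJ"
    proof -
      have "{x \<in> set js. x \<notin> I} = J" using djs unfolding J_def by auto
      then show ?thesis using count_concat[OF djs(1), of "\<lambda>l. l \<notin> I" z] sumzJ unfolding Zc_def by simp
    qed
    have SIdef: "SI = (\<Sum>l\<in>I. d - mm l)" unfolding SI_def c_def ..
    show ?thesis
    proof (cases "d \<le> SI")
      case True
      then have h: "\<mu> \<le> PI" "ZJ = 0" using chc by auto
      have "L1 = take \<mu> LpI" unfolding L1_def Lp_app using h lenLpI by simp
      then have "\<forall>x\<in>set L1. \<not> x \<notin> I" using setLpI by (auto dest: in_set_takeD)
      then have "length (filter (\<lambda>(a,b). a \<notin> I \<and> b \<notin> I) (zip L1 L2)) = 0"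
        by (rule zip_count3)
      then show ?thesis unfolding SIdef[symmetric] using f1 c1 h True by simp
    next
      case False
      then have h: "PI \<le> \<mu>" "ZJ + (\<mu> - PI) = d - SI" using chc by auto
      have L2e: "L2 = drop (\<mu> - PI) LpJ" unfolding L2_def Lp_app using h lenLpI by simp
      then have L2I: "\<forall>x\<in>set L2. x \<notin> I" using setLpJ unfolding J_def by (auto dest: in_set_dropD)
      have e: "length (filter (\<lambda>(a,b). a \<notin> I \<and> b \<notin> I) (zip L1 L2)) = length (filter (\<lambda>x. x \<notin> I) L1)"
        by (rule zip_count2[where P="\<lambda>x. x \<notin> I" and Q="\<lambda>x. x \<notin> I", OF lenL(1)[folded lenL(2)] L2I])
      have L1e: "L1 = LpI @ take (\<mu> - PI) LpJ" unfolding L1_def Lp_app using h lenLpI by simp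
      have "filter (\<lambda>x. x \<notin> I) LpI = []" using setLpI by (auto simp: filter_empty_conv)
      moreover have "filter (\<lambda>x. x \<notin> I) (take (\<mu> - PI) LpJ) = take (\<mu> - PI) LpJ"
        by (rule filter_True) (use setLpJ in \<open>auto dest: in_set_takeD simp: J_def\<close>)
      moreover have "length (take (\<mu> - PI) LpJ) = \<mu> - PI" using lenLpJ ch(3) unfolding PJ_def by simp
      ultimately have "length (filter (\<lambda>x. x \<notin> I) L1) = \<mu> - PI" unfolding L1e by simp
      then show ?thesis unfolding SIdef[symmetric] using f1 c1 e h False by simp
    qed
  qed
  ultimately show ?thesis by blast
qed

definition uvec :: "nat \<Rightarrow> nat \<Rightarrow> complex" where
  "uvec l = (\<lambda>i. if i = l then 1 else 0)"

lemma hmonos_eq: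
  assumes "\<alpha> \<in> hmonos n d" "\<alpha>' \<in> hmonos n d" "l \<le> n" "\<forall>i\<le>n. i \<noteq> l \<longrightarrow> \<alpha>' i = \<alpha> i"
  shows "\<alpha>' = \<alpha>"
proof -
  have s: "(\<Sum>i\<le>n. \<alpha> i) = d" "(\<Sum>i\<le>n. \<alpha>' i) = d" using assms unfolding hmonos_def by auto
  have "(\<Sum>i\<le>n. \<alpha> i) = \<alpha> l + (\<Sum>i\<in>{..n}-{l}. \<alpha> i)" using sum.remove[of "{..n}" l] assms(3) by simp
  moreover have "(\<Sum>i\<le>n. \<alpha>' i) = \<alpha>' l + (\<Sum>i\<in>{..n}-{l}. \<alpha>' i)" using sum.remove[of "{..n}" l] assms(3) by simp
  moreover have "(\<Sum>i\<in>{..n}-{l}. \<alpha>' i) = (\<Sum>i\<in>{..n}-{l}. \<alpha> i)" using assms(4) by (intro sum.cong) auto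
  ultimately have "\<alpha>' l = \<alpha> l" using s by simp
  then show ?thesis using assms unfolding hmonos_def by (auto simp: fun_eq_iff) (metis not_le)
qed

lemma nat_aux: "\<not> (a::nat) + m \<le> d \<Longrightarrow> a \<le> d \<Longrightarrow> d - a < m" by linarith

lemma caps_unit:
  assumes mg: "mult_ge n d c (uvec l) m" and l: "l \<le> n" and a: "\<alpha> \<in> hmonos n d" and c: "c \<alpha> \<noteq> 0"
  shows "\<alpha> l + m \<le> d"
proof (rule ccontr)
  assume h: "\<not> \<alpha> l + m \<le> d"
  have "\<alpha> l \<le> d" using a l hmonos_box unfolding box_def by blast
  then have lt: "d - \<alpha> l < m" using nat_aux[OF h] by simp
  define \<beta> where "\<beta> = \<alpha>(l := 0)"
  have b0: "\<forall>i>n. \<beta> i = 0" using a unfolding \<beta>_def hmonos_def by auto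
  have "(\<Sum>i\<le>n. \<alpha> i) = \<alpha> l + (\<Sum>i\<in>{..n}-{l}. \<alpha> i)" using sum.remove[of "{..n}" l] l by simp
  moreover have "(\<Sum>i\<le>n. \<beta> i) = \<beta> l + (\<Sum>i\<in>{..n}-{l}. \<beta> i)" using sum.remove[of "{..n}" l] l by simp
  moreover have "(\<Sum>i\<in>{..n}-{l}. \<beta> i) = (\<Sum>i\<in>{..n}-{l}. \<alpha> i)" unfolding \<beta>_def by (intro sum.cong) auto
  ultimately have "(\<Sum>i\<le>n. \<beta> i) = d - \<alpha> l" using a unfolding hmonos_def \<beta>_def by auto
  then have "dpeval n d c \<beta> (uvec l) = 0" using mg b0 lt unfolding mult_ge_def by auto
  moreover have "dpeval n d c \<beta> (uvec l) = c \<alpha> * (\<Prod>i\<le>n. of_nat ((\<alpha> i choose \<beta> i) * fact (\<beta> i)) * uvec l i ^ (\<alpha> i - \<beta> i))"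
  proof -
    let ?T = "\<lambda>\<alpha>'. c \<alpha>' * (\<Prod>i\<le>n. of_nat ((\<alpha>' i choose \<beta> i) * fact (\<beta> i)) * uvec l i ^ (\<alpha>' i - \<beta> i))"
    have e1: "dpeval n d c \<beta> (uvec l) = ?T \<alpha> + (\<Sum>\<alpha>'\<in>hmonos n d - {\<alpha>}. ?T \<alpha>')"
      unfolding dpeval_def using sum.remove[OF finite_hmonos a, of ?T] by simp
    have "(\<Sum>\<alpha>'\<in>hmonos n d - {\<alpha>}. ?T \<alpha>') = 0"
    proof (rule sum.neutral, intro ballI)
      fix \<alpha>' assume a': "\<alpha>' \<in> hmonos n d - {\<alpha>}"
      then have "\<exists>i\<le>n. i \<noteq> l \<and> \<alpha>' i \<noteq> \<alpha> i" using hmonos_eq[OF a _ l] by blast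
      then obtain i where i: "i \<le> n" "i \<noteq> l" "\<alpha>' i \<noteq> \<alpha> i" by blast
      have "of_nat ((\<alpha>' i choose \<beta> i) * fact (\<beta> i)) * uvec l i ^ (\<alpha>' i - \<beta> i) = (0::complex)"
      proof (cases "\<alpha>' i < \<beta> i")
        case True then show ?thesis by simp
      next
        case False
        then have "\<alpha>' i - \<beta> i > 0" using i unfolding \<beta>_def by auto
        then show ?thesis using i unfolding uvec_def by simp
      qed
      then show "?T \<alpha>' = 0"
        using i by (metis (no_types, lifting) atMost_iff finite_atMost mult_zero_right prod_zero)
    qed
    then show ?thesis using e1 by simp
  qed
  moreover have "(\<Prod>i\<le>n. of_nat ((\<alpha> i choose \<beta> i) * fact (\<beta> i)) * uvec l i ^ (\<alpha> i - \<beta> i)) \<noteq> (0::complex)"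
  proof -
    have "\<forall>i\<le>n. of_nat ((\<alpha> i choose \<beta> i) * fact (\<beta> i)) * uvec l i ^ (\<alpha> i - \<beta> i) \<noteq> (0::complex)"
    proof (intro allI impI)
      fix i assume "i \<le> n"
      show "of_nat ((\<alpha> i choose \<beta> i) * fact (\<beta> i)) * uvec l i ^ (\<alpha> i - \<beta> i) \<noteq> (0::complex)"
        by (cases "i = l") (auto simp: \<beta>_def uvec_def)
    qed
    then show ?thesis by (simp add: prod_zero_iff)
  qed
  ultimately show False using c by simp
qed

lemma lower_bound:
  assumes caps: "\<forall>l\<in>I. \<forall>\<alpha>\<in>hmonos n d. c \<alpha> \<noteq> 0 \<longrightarrow> \<alpha> l + mm l \<le> d"
    and I: "I \<subseteq> {..n}" and q: "\<forall>i\<le>n. i \<notin> I \<longrightarrow> q i = 0"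
    and k: "k \<le> d - (\<Sum>l\<in>I. d - mm l)"
  shows "mult_ge n d c q k"
  unfolding mult_ge_def
proof (intro allI impI)
  fix \<beta> assume b0: "\<forall>i>n. \<beta> i = 0" and bk: "(\<Sum>i\<le>n. \<beta> i) < k"
  have fI: "finite I" using I finite_subset by blast
  show "dpeval n d c \<beta> q = 0"
    unfolding dpeval_def
  proof (rule sum.neutral, intro ballI)
    fix \<alpha> assume a: "\<alpha> \<in> hmonos n d"
    show "c \<alpha> * (\<Prod>i\<le>n. of_nat ((\<alpha> i choose \<beta> i) * fact (\<beta> i)) * q i ^ (\<alpha> i - \<beta> i)) = 0"
    proof (rule ccontr)
      assume nz: "c \<alpha> * (\<Prod>i\<le>n. of_nat ((\<alpha> i choose \<beta> i) * fact (\<beta> i)) * q i ^ (\<alpha> i - \<beta> i)) \<noteq> 0"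
      then have ca: "c \<alpha> \<noteq> 0" by auto
      have fac: "\<forall>i\<le>n. of_nat ((\<alpha> i choose \<beta> i) * fact (\<beta> i)) * q i ^ (\<alpha> i - \<beta> i) \<noteq> (0::complex)"
        using nz by (auto simp: prod_zero_iff)
      have eqJ: "\<forall>i\<le>n. i \<notin> I \<longrightarrow> \<alpha> i = \<beta> i"
      proof (intro allI impI)
        fix i assume i: "i \<le> n" "i \<notin> I"
        have f: "of_nat ((\<alpha> i choose \<beta> i) * fact (\<beta> i)) * q i ^ (\<alpha> i - \<beta> i) \<noteq> (0::complex)"
          using fac i by auto
        then have "\<beta> i \<le> \<alpha> i" by (auto simp: binomial_eq_0_iff)
        moreover have "\<alpha> i - \<beta> i = 0" using f q i by (cases "\<alpha> i - \<beta> i") auto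
        ultimately show "\<alpha> i = \<beta> i" by simp
      qed
      have s1: "(\<Sum>i\<in>{..n}-I. \<alpha> i) \<le> (\<Sum>i\<le>n. \<beta> i)"
      proof -
        have "(\<Sum>i\<in>{..n}-I. \<alpha> i) = (\<Sum>i\<in>{..n}-I. \<beta> i)" using eqJ by (intro sum.cong) auto
        also have "\<dots> \<le> (\<Sum>i\<le>n. \<beta> i)" by (intro sum_mono2) auto
        finally show ?thesis .
      qed
      have s2: "(\<Sum>i\<in>I. \<alpha> i) \<le> (\<Sum>l\<in>I. d - mm l)"
        using caps a ca by (intro sum_mono) force
      have "d = (\<Sum>i\<in>I. \<alpha> i) + (\<Sum>i\<in>{..n}-I. \<alpha> i)"
        using a sum.subset_diff[OF I, of \<alpha>] unfolding hmonos_def by (simp add: add.commute)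
      then show False using s1 s2 bk k by linarith
    qed
  qed
qed

lemma dpeval_deg:
  assumes "(\<Sum>i\<le>n. \<beta> i) > d"
  shows "dpeval n d c \<beta> x = 0"
  unfolding dpeval_def
proof (rule sum.neutral, intro ballI)
  fix \<alpha> assume a: "\<alpha> \<in> hmonos n d"
  have "\<exists>i\<le>n. \<alpha> i < \<beta> i"
  proof (rule ccontr)
    assume "\<not> (\<exists>i\<le>n. \<alpha> i < \<beta> i)"
    then have "(\<Sum>i\<le>n. \<beta> i) \<le> (\<Sum>i\<le>n. \<alpha> i)" by (intro sum_mono) (auto simp: not_less)
    then show False using a assms unfolding hmonos_def by simp
  qed
  then obtain i where "i \<le> n" "\<alpha> i < \<beta> i" by blast
  then have "(\<Prod>i\<le>n. of_nat ((\<alpha> i choose \<beta> i) * fact (\<beta> i)) * x i ^ (\<alpha> i - \<beta> i)) = (0::complex)"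
    by (intro prod_zero bexI[of _ i]) auto
  then show "c \<alpha> * (\<Prod>i\<le>n. of_nat ((\<alpha> i choose \<beta> i) * fact (\<beta> i)) * x i ^ (\<alpha> i - \<beta> i)) = 0" by simp
qed

lemma mult_big:
  assumes "mult_ge n d c x k" "k > d"
  shows "ev n d c z = 0"
proof -
  have "\<forall>\<beta>\<in>box n d. dpeval n d c \<beta> x = 0"
  proof
    fix \<beta> assume b: "\<beta> \<in> box n d"
    show "dpeval n d c \<beta> x = 0"
    proof (cases "(\<Sum>i\<le>n. \<beta> i) < k")
      case True then show ?thesis using assms(1) b unfolding mult_ge_def box_def by auto
    next
      case False then show ?thesis using assms(2) by (intro dpeval_deg) simp
    qed
  qed
  then have "ev n d c (\<lambda>i. x i + (z i - x i)) = 0" unfolding taylor by simp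
  then show ?thesis by simp
qed

lemma ev_hom: "ev n d c (\<lambda>i. K * x i) = K ^ d * ev n d c x"
proof -
  have "\<And>\<alpha>. \<alpha> \<in> hmonos n d \<Longrightarrow> dg n \<alpha> = d" unfolding hmonos_def dg_def by auto
  then show ?thesis unfolding ev_def mon_scale by (simp add: sum_distrib_left mult_ac)
qed

lemma poly_eq_nz:
  fixes p q :: "complex poly"
  assumes "\<forall>t. t \<noteq> 0 \<longrightarrow> poly p t = poly q t"
  shows "p = q"
proof (rule ccontr)
  assume "p \<noteq> q"
  then have "p - q \<noteq> 0" by simp
  then have "finite {t. poly (p - q) t = 0}" by (rule poly_roots_finite)
  moreover have "UNIV - {0} \<subseteq> {t. poly (p - q) t = 0}" using assms by auto
  ultimately have "finite (UNIV - {0::complex})" using finite_subset by blast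
  then show False using infinite_UNIV_char_0[where 'a=complex] by simp
qed

definition epoly :: "nat \<Rightarrow> nat \<Rightarrow> ((nat\<Rightarrow>nat)\<Rightarrow>complex) \<Rightarrow> (nat \<Rightarrow> complex poly) \<Rightarrow> complex poly" where
  "epoly n d c \<phi> = (\<Sum>\<alpha>\<in>hmonos n d. smult (c \<alpha>) (\<Prod>l\<le>n. \<phi> l ^ \<alpha> l))"

lemma poly_epoly: "poly (epoly n d c \<phi>) t = ev n d c (\<lambda>l. poly (\<phi> l) t)"
  unfolding epoly_def ev_def mon_def by (simp add: poly_sum poly_prod)

lemma degree_epoly:
  assumes "\<forall>l\<le>n. degree (\<phi> l) \<le> e"
  shows "degree (epoly n d c \<phi>) \<le> e * d"
  unfolding epoly_def
proof (rule degree_sum_le[OF finite_hmonos])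
  fix \<alpha> assume a: "\<alpha> \<in> hmonos n d"
  have "degree (\<Prod>l\<le>n. \<phi> l ^ \<alpha> l) \<le> (\<Sum>l\<le>n. degree (\<phi> l ^ \<alpha> l))"
    using degree_prod_sum_le[of "{..n}" "\<lambda>l. \<phi> l ^ \<alpha> l"] by (simp add: comp_def)
  also have "\<dots> \<le> (\<Sum>l\<le>n. \<alpha> l * e)"
  proof (rule sum_mono)
    fix l assume "l \<in> {..n}"
    then have "degree (\<phi> l ^ \<alpha> l) \<le> \<alpha> l * degree (\<phi> l)" by (metis degree_power_le mult.commute)
    also have "\<dots> \<le> \<alpha> l * e" using assms \<open>l \<in> {..n}\<close> by simp
    finally show "degree (\<phi> l ^ \<alpha> l) \<le> \<alpha> l * e" .
  qed
  also have "\<dots> = e * (\<Sum>l\<le>n. \<alpha> l)" by (simp add: sum_distrib_left mult.commute)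
  also have "\<dots> = e * d" using a unfolding hmonos_def by simp
  finally show "degree (smult (c \<alpha>) (\<Prod>l\<le>n. \<phi> l ^ \<alpha> l)) \<le> e * d"
    using degree_smult_le order_trans by blast
qed

lemma dvd_epoly:
  assumes "\<forall>\<alpha>\<in>hmonos n d. c \<alpha> \<noteq> 0 \<longrightarrow> D dvd (\<Prod>l\<le>n. \<phi> l ^ \<alpha> l)"
  shows "D dvd epoly n d c \<phi>"
  unfolding epoly_def
proof (rule dvd_sum)
  fix \<alpha> assume a: "\<alpha> \<in> hmonos n d"
  show "D dvd smult (c \<alpha>) (\<Prod>l\<le>n. \<phi> l ^ \<alpha> l)"
  proof (cases "c \<alpha> = 0")
    case True then show ?thesis by simp
  next
    case False then show ?thesis using assms a by (simp add: dvd_smult)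
  qed
qed

lemma prod_lin_dvd:
  fixes hp :: "complex poly"
  assumes "finite S" "hp \<noteq> 0" "inj_on a S" "\<forall>i\<in>S. [:-a i, 1:] ^ e i dvd hp"
  shows "(\<Prod>i\<in>S. [:-a i, 1:] ^ e i) dvd hp"
  using assms
proof (induction S rule: finite_induct)
  case empty then show ?case by simp
next
  case (insert k S)
  then obtain q where q: "hp = (\<Prod>i\<in>S. [:-a i, 1:] ^ e i) * q" by (auto elim!: dvdE)
  let ?P = "\<Prod>i\<in>S. [:-a i, 1:] ^ e i"
  have nz: "?P * q \<noteq> 0" using q insert.prems by simp
  have "poly ?P (a k) \<noteq> 0"
  proof -
    have "\<forall>i\<in>S. a k - a i \<noteq> 0" using insert.prems insert.hyps by (auto simp: inj_on_def)
    then show ?thesis by (simp add: poly_prod prod_zero_iff insert.hyps)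
  qed
  then have o0: "order (a k) ?P = 0" by (simp add: order_root)
  have "e k \<le> order (a k) hp" using insert.prems order_divides by auto
  then have "e k \<le> order (a k) q" using order_mult[OF nz, of "a k"] o0 q by simp
  then have "[:-a k, 1:] ^ e k dvd q" using order_divides by blast
  then have "[:-a k, 1:] ^ e k * ?P dvd ?P * q" by (simp add: mult.commute mult_dvd_mono)
  then show ?case using q insert.hyps by simp
qed

lemma suc_nz: "(1::complex) + of_nat a \<noteq> 0" by (metis of_nat_Suc of_nat_neq_0)

lemma choose_z:
  assumes nz: "ev n d c z0 \<noteq> 0" and lam: "\<forall>l\<le>n. w l \<noteq> 0"
  shows "\<exists>z. ev n d c z \<noteq> 0 \<and> (\<forall>l\<le>n. z l \<noteq> 0) \<and> (\<forall>l\<le>n. \<forall>j\<le>n. l \<noteq> j \<longrightarrow> w l * z j \<noteq> w j * z l)"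
proof -
  define v where "v = (\<lambda>l. of_nat (Suc l) * w l)"
  define E where "E = lpoly n d c z0 v"
  have E0: "poly E 0 \<noteq> 0" unfolding E_def poly_lpoly using nz by simp
  then have Enz: "E \<noteq> 0" by auto
  define CP where "CP = (\<Prod>l\<le>n. [:z0 l, v l:])"
  have CPnz: "CP \<noteq> 0" unfolding CP_def using lam by (auto simp: v_def suc_nz)
  define PS where "PS = {(l,j). l \<le> n \<and> j \<le> n \<and> l \<noteq> j}"
  have fPS: "finite PS" unfolding PS_def by (rule finite_subset[of _ "{..n} \<times> {..n}"]) auto
  define pf where "pf = (\<lambda>(l,j). [:w l * z0 j - w j * z0 l, w l * v j - w j * v l:])"
  define PP where "PP = (\<Prod>x\<in>PS. pf x)"
  have PPnz: "PP \<noteq> 0" unfolding PP_def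
  proof (rule ccontr)
    assume "\<not> (\<Prod>x\<in>PS. pf x) \<noteq> 0"
    then obtain x where x: "x \<in> PS" "pf x = 0" using fPS by (auto simp: prod_zero_iff)
    obtain l j where lj: "x = (l,j)" by (cases x)
    have "w l * v j - w j * v l = w l * w j * (of_nat (Suc j) - of_nat (Suc l))"
      unfolding v_def by (simp add: algebra_simps)
    moreover have "(of_nat (Suc j) - of_nat (Suc l) :: complex) \<noteq> 0" using x lj unfolding PS_def by auto
    ultimately have "w l * v j - w j * v l \<noteq> 0" using x lj lam unfolding PS_def by auto
    then show False using x lj unfolding pf_def by auto
  qed
  define P where "P = E * CP * PP"
  have "P \<noteq> 0" unfolding P_def using Enz CPnz PPnz by simp
  then have "finite {s. poly P s = 0}" by (rule poly_roots_finite)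
  then obtain s0 where s0: "s0 \<notin> {s. poly P s = 0}" using ex_new_if_finite[OF infinite_UNIV_char_0[where 'a=complex]] by blast
  define z where "z = (\<lambda>i. z0 i + s0 * v i)"
  have p: "poly E s0 \<noteq> 0" "poly CP s0 \<noteq> 0" "poly PP s0 \<noteq> 0" using s0 unfolding P_def by auto
  have "ev n d c z \<noteq> 0" using p(1) unfolding E_def poly_lpoly z_def .
  moreover have "\<forall>l\<le>n. z l \<noteq> 0"
  proof (intro allI impI)
    fix l assume "l \<le> n"
    then show "z l \<noteq> 0" using p(2) unfolding CP_def z_def by (auto simp: poly_prod prod_zero_iff)
  qed
  moreover have "\<forall>l\<le>n. \<forall>j\<le>n. l \<noteq> j \<longrightarrow> w l * z j \<noteq> w j * z l"
  proof (intro allI impI)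
    fix l j assume lj: "l \<le> n" "j \<le> n" "l \<noteq> j"
    then have "(l,j) \<in> PS" unfolding PS_def by auto
    then have "poly (pf (l,j)) s0 \<noteq> 0" using p(3) fPS unfolding PP_def by (auto simp: poly_prod prod_zero_iff)
    then show "w l * z j \<noteq> w j * z l" unfolding pf_def z_def by (auto simp: algebra_simps)
  qed
  ultimately show ?thesis by blast
qed

lemma poly_altdef_N:
  fixes p :: "complex poly"
  assumes "degree p \<le> N"
  shows "poly p x = (\<Sum>i\<le>N. coeff p i * x ^ i)"
  by (subst poly_altdef, rule sum.mono_neutral_left) (use assms in \<open>auto simp: coeff_eq_0\<close>)

lemma coeff_xpow_mult: "i < k \<Longrightarrow> coeff ([:0, 1::complex:] ^ k * q) i = 0"
proof (induction k arbitrary: i)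
  case 0 then show ?case by simp
next
  case (Suc k)
  have e: "[:0, 1::complex:] ^ Suc k * q = pCons 0 ([:0, 1:] ^ k * q)"
    by (simp add: mult.assoc)
  show ?case
  proof (cases i)
    case 0 then show ?thesis unfolding e by simp
  next
    case (Suc j) then show ?thesis unfolding e using Suc.IH Suc.prems by simp
  qed
qed

lemma card_minus: "l \<le> n \<Longrightarrow> card ({..n} - {l}) = n"
  by simp

lemma rnc:
  assumes caps: "\<forall>l\<le>n. \<forall>\<alpha>\<in>hmonos n d. c \<alpha> \<noteq> 0 \<longrightarrow> \<alpha> l + mm l \<le> d"
    and lam: "\<forall>l\<le>n. w l \<noteq> 0" and mg: "mult_ge n d c w \<mu>" and nz0: "ev n d c z0 \<noteq> 0"
  shows "(\<Sum>l\<le>n. mm l) + \<mu> \<le> n * d"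
proof -
  obtain z where z: "ev n d c z \<noteq> 0" "\<forall>l\<le>n. z l \<noteq> 0" "\<forall>l\<le>n. \<forall>j\<le>n. l \<noteq> j \<longrightarrow> w l * z j \<noteq> w j * z l"
    using choose_z[OF nz0 lam] by blast
  define a where "a = (\<lambda>l. - w l / z l)"
  have inj: "inj_on a {..n}"
  proof (rule inj_onI)
    fix l j assume lj: "l \<in> {..n}" "j \<in> {..n}" "a l = a j"
    show "l = j"
    proof (rule ccontr)
      assume "l \<noteq> j"
      then have "w l * z j \<noteq> w j * z l" using z(3) lj by auto
      moreover have "w l / z l = w j / z j" using lj(3) unfolding a_def by simp
      then have "w l * z j = w j * z l" using z(2) lj by (simp add: field_simps)
      ultimately show False by simp
    qed
  qed
  define \<phi> where "\<phi> = (\<lambda>l. smult (w l) (\<Prod>j\<in>{..n}-{l}. [:-a j, 1:]))"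
  define \<psi> where "\<psi> = (\<lambda>l. smult (w l) (\<Prod>j\<in>{..n}-{l}. [:1, -a j:]))"
  define hp where "hp = epoly n d c \<phi>"
  define Rp where "Rp = epoly n d c \<psi>"
  define N where "N = n * d"
  define K where "K = (\<Prod>j\<le>n. w j / z j)"
  have Knz: "K \<noteq> 0" unfolding K_def using lam z(2) by (simp add: prod_zero_iff)
  have phi0: "\<forall>l\<le>n. poly (\<phi> l) 0 = K * z l"
  proof (intro allI impI)
    fix l assume l: "l \<le> n"
    have "K = (w l / z l) * (\<Prod>j\<in>{..n}-{l}. w j / z j)"
      unfolding K_def using prod.remove[of "{..n}" l "\<lambda>j. w j / z j"] l by auto
    moreover have "poly (\<phi> l) 0 = w l * (\<Prod>j\<in>{..n}-{l}. w j / z j)"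
      unfolding \<phi>_def a_def by (simp add: poly_prod)
    ultimately show "poly (\<phi> l) 0 = K * z l" using z(2) l by (simp add: field_simps)
  qed
  have "poly hp 0 = ev n d c (\<lambda>l. K * z l)"
    unfolding hp_def poly_epoly by (rule ev_cong) (simp add: phi0)
  also have "\<dots> = K ^ d * ev n d c z" by (rule ev_hom)
  finally have hp0: "poly hp 0 \<noteq> 0" using Knz z(1) by simp
  then have hpnz: "hp \<noteq> 0" by auto
  have divB: "\<forall>i\<le>n. [:-a i, 1:] ^ mm i dvd hp"
  proof (intro allI impI)
    fix i assume i: "i \<le> n"
    show "[:-a i, 1:] ^ mm i dvd hp"
      unfolding hp_def
    proof (rule dvd_epoly, intro ballI impI)
      fix \<alpha> assume a\<alpha>: "\<alpha> \<in> hmonos n d" and c\<alpha>: "c \<alpha> \<noteq> 0"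
      have cap: "\<alpha> i + mm i \<le> d" using caps i a\<alpha> c\<alpha> by blast
      have sd: "(\<Sum>l\<in>{..n}-{i}. \<alpha> l) = d - \<alpha> i"
        using a\<alpha> sum.remove[of "{..n}" i \<alpha>] i unfolding hmonos_def by auto
      have "\<forall>l\<in>{..n}-{i}. [:-a i, 1:] dvd \<phi> l"
      proof
        fix l assume l: "l \<in> {..n}-{i}"
        have "[:-a i, 1:] dvd (\<Prod>j\<in>{..n}-{l}. [:-a j, 1:])"
          by (rule dvd_prodI) (use l i in auto)
        then show "[:-a i, 1:] dvd \<phi> l" unfolding \<phi>_def by (simp add: dvd_smult)
      qed
      then have f1: "(\<Prod>l\<in>{..n}-{i}. [:-a i, 1:] ^ \<alpha> l) dvd (\<Prod>l\<in>{..n}-{i}. \<phi> l ^ \<alpha> l)"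
        by (intro prod_dvd_prod dvd_power_same) auto
      have f2: "(\<Prod>l\<in>{..n}-{i}. [:-a i, 1:] ^ \<alpha> l) = [:-a i, 1:] ^ (d - \<alpha> i)"
        using sd power_sum[of "[:-a i, 1:]" \<alpha> "{..n}-{i}"] by simp
      have f3: "[:-a i, 1:] ^ mm i dvd [:-a i, 1:] ^ (d - \<alpha> i)"
        using cap by (intro le_imp_power_dvd) simp
      have f4: "(\<Prod>l\<le>n. \<phi> l ^ \<alpha> l) = \<phi> i ^ \<alpha> i * (\<Prod>l\<in>{..n}-{i}. \<phi> l ^ \<alpha> l)"
        using prod.remove[of "{..n}" i] i by simp
      have "[:-a i, 1:] ^ mm i dvd (\<Prod>l\<in>{..n}-{i}. \<phi> l ^ \<alpha> l)"
        using dvd_trans[OF f3[folded f2] f1] .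
      then show "[:-a i, 1:] ^ mm i dvd (\<Prod>l\<le>n. \<phi> l ^ \<alpha> l)"
        unfolding f4 by (rule dvd_mult)
    qed
  qed
  have "(\<Prod>i\<in>{..n}. [:-a i, 1:] ^ mm i) dvd hp"
    by (rule prod_lin_dvd[OF _ hpnz inj]) (use divB in auto)
  then have "degree (\<Prod>i\<in>{..n}. [:-a i, 1:] ^ mm i) \<le> degree hp" using hpnz by (rule dvd_imp_degree_le)
  moreover have "degree (\<Prod>i\<in>{..n}. [:-a i, 1:] ^ mm i) = (\<Sum>i\<le>n. mm i)"
    by (subst degree_prod_sum_eq) (auto simp: degree_linear_power)
  ultimately have degC: "(\<Sum>i\<le>n. mm i) \<le> degree hp" by simp
  define Tp where "Tp = (\<Sum>\<beta>\<in>box n d. smult (dpeval n d c \<beta> w / fp n \<beta>) (\<Prod>l\<le>n. (\<psi> l - [:w l:]) ^ \<beta> l))"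
  have psi0: "\<forall>l. poly (\<psi> l) 0 = w l" unfolding \<psi>_def by (simp add: poly_prod)
  have "poly Tp = poly Rp"
  proof
    fix s
    have "poly Tp s = (\<Sum>\<beta>\<in>box n d. mon n \<beta> (\<lambda>l. poly (\<psi> l) s - w l) / fp n \<beta> * dpeval n d c \<beta> w)"
      unfolding Tp_def mon_def by (simp add: poly_sum poly_prod mult.commute)
    also have "\<dots> = ev n d c (\<lambda>l. w l + (poly (\<psi> l) s - w l))" by (rule taylor[symmetric])
    also have "\<dots> = poly Rp s" unfolding Rp_def poly_epoly by simp
    finally show "poly Tp s = poly Rp s" .
  qed
  then have RT: "Rp = Tp" by (simp add: poly_eq_poly_eq_iff)
  have dvdR: "[:0, 1:] ^ \<mu> dvd Rp"
    unfolding RT Tp_def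
  proof (rule dvd_sum)
    fix \<beta> assume b: "\<beta> \<in> box n d"
    show "[:0, 1:] ^ \<mu> dvd smult (dpeval n d c \<beta> w / fp n \<beta>) (\<Prod>l\<le>n. (\<psi> l - [:w l:]) ^ \<beta> l)"
    proof (cases "(\<Sum>i\<le>n. \<beta> i) < \<mu>")
      case True
      then have "dpeval n d c \<beta> w = 0" using mg b unfolding mult_ge_def box_def by auto
      then show ?thesis by simp
    next
      case False
      have "\<forall>l. [:0, 1:] dvd (\<psi> l - [:w l:])"
      proof
        fix l
        have "poly (\<psi> l - [:w l:]) 0 = 0" using psi0 by simp
        then show "[:0, 1:] dvd (\<psi> l - [:w l:])" using poly_eq_0_iff_dvd[of "\<psi> l - [:w l:]" 0] by simp
      qed
      then have g1: "(\<Prod>l\<le>n. [:0, 1:] ^ \<beta> l) dvd (\<Prod>l\<le>n. (\<psi> l - [:w l:]) ^ \<beta> l)"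
        by (intro prod_dvd_prod dvd_power_same) auto
      have g2: "(\<Prod>l\<le>n. [:0, 1:] ^ \<beta> l) = [:0, 1::complex:] ^ (\<Sum>i\<le>n. \<beta> i)"
        using power_sum[of "[:0, 1::complex:]" \<beta> "{..n}"] by simp
      have g3: "[:0, 1::complex:] ^ \<mu> dvd [:0, 1:] ^ (\<Sum>i\<le>n. \<beta> i)"
        using False by (intro le_imp_power_dvd) simp
      have "[:0, 1::complex:] ^ \<mu> dvd (\<Prod>l\<le>n. (\<psi> l - [:w l:]) ^ \<beta> l)"
        using dvd_trans[OF g3[folded g2] g1] .
      then show ?thesis by (rule dvd_smult)
    qed
  qed
  have coeffR: "\<forall>i<\<mu>. coeff Rp i = 0"
  proof (intro allI impI)
    fix i assume i: "i < \<mu>"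
    obtain q where "Rp = [:0, 1:] ^ \<mu> * q" using dvdR by (auto elim!: dvdE)
    then show "coeff Rp i = 0" using i by (simp add: coeff_xpow_mult)
  qed
  have degpsi: "\<forall>l\<le>n. degree (\<psi> l) \<le> n"
  proof (intro allI impI)
    fix l assume l: "l \<le> n"
    have "degree (\<Prod>j\<in>{..n}-{l}. [:1, -a j:]) \<le> (\<Sum>j\<in>{..n}-{l}. degree [:1, -a j:])"
      using degree_prod_sum_le[of "{..n}-{l}" "\<lambda>j. [:1, -a j:]"] by (simp add: comp_def)
    also have "\<dots> \<le> (\<Sum>j\<in>{..n}-{l}. 1)" by (intro sum_mono) simp
    also have "\<dots> = n" using l by simp
    finally show "degree (\<psi> l) \<le> n" unfolding \<psi>_def using degree_smult_le order_trans by blast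
  qed
  have degR: "degree Rp \<le> N" unfolding Rp_def N_def using degree_epoly[OF degpsi] by simp
  have reflx: "\<forall>t. t \<noteq> 0 \<longrightarrow> poly hp t = t ^ N * poly Rp (1 / t)"
  proof (intro allI impI)
    fix t :: complex assume t: "t \<noteq> 0"
    have pl: "\<forall>l\<le>n. poly (\<phi> l) t = t ^ n * poly (\<psi> l) (1 / t)"
    proof (intro allI impI)
      fix l assume l: "l \<le> n"
      have "t ^ n * poly (\<psi> l) (1 / t) = w l * (t ^ card ({..n}-{l}) * (\<Prod>j\<in>{..n}-{l}. 1 - a j / t))"
        unfolding \<psi>_def using l by (simp add: poly_prod mult_ac)
      also have "\<dots> = w l * (\<Prod>j\<in>{..n}-{l}. t * (1 - a j / t))"
        by (simp add: prod.distrib)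
      also have "\<dots> = w l * (\<Prod>j\<in>{..n}-{l}. t - a j)"
      proof -
        have "(\<Prod>j\<in>{..n}-{l}. t * (1 - a j / t)) = (\<Prod>j\<in>{..n}-{l}. t - a j)"
          by (rule prod.cong[OF refl]) (use t in \<open>simp add: field_simps\<close>)
        then show ?thesis by simp
      qed
      also have "\<dots> = poly (\<phi> l) t" unfolding \<phi>_def by (simp add: poly_prod)
      finally show "poly (\<phi> l) t = t ^ n * poly (\<psi> l) (1 / t)" by simp
    qed
    have "poly hp t = ev n d c (\<lambda>l. t ^ n * poly (\<psi> l) (1 / t))"
      unfolding hp_def poly_epoly by (rule ev_cong) (simp add: pl)
    also have "\<dots> = (t ^ n) ^ d * ev n d c (\<lambda>l. poly (\<psi> l) (1 / t))" by (rule ev_hom)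
    also have "\<dots> = t ^ N * poly Rp (1 / t)" unfolding Rp_def poly_epoly N_def by (simp add: power_mult)
    finally show "poly hp t = t ^ N * poly Rp (1 / t)" .
  qed
  define hp' where "hp' = (\<Sum>i\<le>N. monom (coeff Rp i) (N - i))"
  have "hp = hp'"
  proof (rule poly_eq_nz, intro allI impI)
    fix t :: complex assume t: "t \<noteq> 0"
    have "t ^ N * poly Rp (1 / t) = t ^ N * (\<Sum>i\<le>N. coeff Rp i * (1 / t) ^ i)"
      using poly_altdef_N[OF degR] by simp
    also have "\<dots> = (\<Sum>i\<le>N. coeff Rp i * t ^ (N - i))"
      unfolding sum_distrib_left
    proof (rule sum.cong[OF refl])
      fix i assume "i \<in> {..N}"
      then have "t ^ N = t ^ (N - i) * t ^ i" by (simp add: power_add[symmetric])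
      then show "t ^ N * (coeff Rp i * (1 / t) ^ i) = coeff Rp i * t ^ (N - i)"
        using t by (simp add: field_simps)
    qed
    also have "\<dots> = poly hp' t" unfolding hp'_def by (simp add: poly_sum poly_monom)
    finally show "poly hp t = poly hp' t" using reflx t by simp
  qed
  have coeffH: "\<forall>j. N < j + \<mu> \<longrightarrow> coeff hp j = 0"
  proof (intro allI impI)
    fix j assume j: "N < j + \<mu>"
    have "coeff hp j = (\<Sum>i\<le>N. if N - i = j then coeff Rp i else 0)"
      unfolding \<open>hp = hp'\<close> hp'_def by (simp add: coeff_sum coeff_monom)
    also have "\<dots> = 0"
    proof (rule sum.neutral, intro ballI)
      fix i assume i: "i \<in> {..N}"
      show "(if N - i = j then coeff Rp i else 0) = 0"
      proof (cases "N - i = j")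
        case True
        then have "i < \<mu>" using i j by auto
        then show ?thesis using coeffR by simp
      qed simp
    qed
    finally show "coeff hp j = 0" .
  qed
  show ?thesis
  proof (rule ccontr)
    assume "\<not> (\<Sum>l\<le>n. mm l) + \<mu> \<le> n * d"
    then have "N < degree hp + \<mu>" using degC unfolding N_def by linarith
    then have "coeff hp (degree hp) = 0" using coeffH by blast
    then show False using hpnz by simp
  qed
qed

lemma lin_cong: "(\<And>i. i \<le> n \<Longrightarrow> x i = x' i) \<Longrightarrow> lin n a x = lin n a x'"
  unfolding lin_def by auto

lemma plin_cong: "(\<And>i. i \<le> n \<Longrightarrow> x i = x' i) \<Longrightarrow> plin n ls x = plin n ls x'"
  unfolding plin_def using lin_cong by (metis (no_types, lifting) map_eq_conv)

lemma am_inv: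
  assumes AB: "\<forall>i\<le>n. \<forall>j\<le>n. (\<Sum>l\<le>n. A i l * B l j) = (if i = j then 1 else 0)"
  shows "\<forall>i\<le>n. am n A (am n B y) i = y i"
proof (intro allI impI)
  fix i assume i: "i \<le> n"
  have "am n A (am n B y) i = (\<Sum>l\<le>n. A i l * (\<Sum>j\<le>n. B l j * y j))"
    unfolding am_def lin_def by simp
  also have "\<dots> = (\<Sum>l\<le>n. \<Sum>j\<le>n. A i l * B l j * y j)"
    by (simp add: sum_distrib_left mult.assoc)
  also have "\<dots> = (\<Sum>j\<le>n. \<Sum>l\<le>n. A i l * B l j * y j)"
    by (rule sum.swap)
  also have "\<dots> = (\<Sum>j\<le>n. (\<Sum>l\<le>n. A i l * B l j) * y j)"
    by (simp add: sum_distrib_right)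
  also have "\<dots> = (\<Sum>j\<le>n. (if i = j then y j else 0))"
    using AB i by (intro sum.cong) auto
  also have "\<dots> = y i" using i by simp
  finally show "am n A (am n B y) i = y i" .
qed

lemma mg_transfer:
  assumes c': "\<forall>x. ev n d c' x = ev n d c (am n A x)"
  shows "mult_ge n d c (am n A x) k \<Longrightarrow> mult_ge n d c' x k"
proof -
  assume "mult_ge n d c (am n A x) k"
  then have "MG (\<lambda>x. ev n d c (am n A x)) x k" using mg_iff mg_comp by blast
  moreover have "(\<lambda>x. ev n d c (am n A x)) = ev n d c'" using c' by auto
  ultimately show ?thesis using mg_iff by simp
qed

lemma mg_transfer_rev:
  assumes c': "\<forall>x. ev n d c' x = ev n d c (am n A x)"
    and surj: "\<forall>y. \<exists>y'. \<forall>i\<le>n. am n A y' i = y i"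
  shows "mult_ge n d c' x k \<Longrightarrow> mult_ge n d c (am n A x) k"
proof -
  assume "mult_ge n d c' x k"
  then have "MG (ev n d c') x k" using mg_iff by blast
  moreover have "(\<lambda>x. ev n d c (am n A x)) = ev n d c'" using c' by auto
  ultimately have "MG (\<lambda>x. ev n d c (am n A x)) x k" by simp
  then show ?thesis using mg_comp_rev[OF surj] mg_iff by blast
qed

lemma lin_uvec: "l \<le> n \<Longrightarrow> lin n (uvec l) x = x l"
proof -
  assume l: "l \<le> n"
  have "lin n (uvec l) x = (\<Sum>i\<le>n. if i = l then x l else 0)"
    unfolding lin_def uvec_def by (intro sum.cong) auto
  then show ?thesis using l by simp
qed

definition pv :: "(nat \<Rightarrow> complex) \<Rightarrow> nat \<Rightarrow> nat \<Rightarrow> nat \<Rightarrow> complex" where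
  "pv w a b = (\<lambda>i. if i = a then w b else if i = b then - w a else 0)"

lemma lin_pv:
  assumes "a \<le> n" "b \<le> n" "a \<noteq> b"
  shows "lin n (pv w a b) x = w b * x a - w a * x b"
proof -
  have "lin n (pv w a b) x = (\<Sum>i\<le>n. (if i = a then w b * x a else 0) + (if i = b then - w a * x b else 0))"
    unfolding lin_def pv_def by (intro sum.cong) (use assms in auto)
  also have "\<dots> = w b * x a - w a * x b" using assms by (simp add: sum.distrib)
  finally show ?thesis .
qed

definition tv :: "(nat \<Rightarrow> complex) \<Rightarrow> nat + nat \<times> nat \<Rightarrow> nat \<Rightarrow> complex" where
  "tv w t = (case t of Inl l \<Rightarrow> uvec l | Inr (a,b) \<Rightarrow> pv w a b)"

lemma lin_tv_uvec:
  assumes "validt n t" "j \<le> n" "\<forall>l\<le>n. w l \<noteq> 0"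
  shows "lin n (tv w t) (uvec j) = 0 \<longleftrightarrow> vanish j t"
proof (cases t)
  case (Inl l)
  then have l: "l \<le> n" using assms unfolding validt_def by simp
  have "lin n (tv w t) (uvec j) = uvec j l" using Inl l unfolding tv_def by (simp add: lin_uvec)
  then show ?thesis using Inl unfolding vanish_def uvec_def by auto
next
  case (Inr ab)
  obtain a b where ab: "ab = (a,b)" by (cases ab)
  have v: "a \<le> n" "b \<le> n" "a \<noteq> b" using assms Inr ab unfolding validt_def by auto
  show ?thesis using assms Inr ab v unfolding tv_def vanish_def by (auto simp: lin_pv uvec_def)
qed

lemma lin_tv_w:
  assumes "validt n t"
  shows "lin n (tv w t) w = 0 \<longleftrightarrow> (\<not> isl t \<or> w (projl t) = 0)"
proof (cases t)
  case (Inl l)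
  then show ?thesis using assms unfolding tv_def validt_def by (auto simp: lin_uvec)
next
  case (Inr ab)
  obtain a b where ab: "ab = (a,b)" by (cases ab)
  have v: "a \<le> n" "b \<le> n" "a \<noteq> b" using assms Inr ab unfolding validt_def by auto
  show ?thesis using Inr ab v unfolding tv_def by (simp add: lin_pv mult.commute)
qed

lemma suc_nz2: "(of_nat (Suc a) :: complex) \<noteq> 0" by (rule of_nat_neq_0)

lemma lin_tv_q:
  assumes "validt n t" "\<forall>l\<le>n. w l \<noteq> 0"
    and q: "q = (\<lambda>i. if i \<in> I then of_nat (Suc i) * w i else 0)"
    and y: "y = (\<lambda>i. if i \<notin> I then of_nat (Suc i) * w i else 0)"
  shows "(lin n (tv w t) q = 0 \<longleftrightarrow> vanI I t) \<and> (lin n (tv w t) q \<noteq> 0 \<or> lin n (tv w t) y \<noteq> 0)"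
proof (cases t)
  case (Inl l)
  then have l: "l \<le> n" using assms unfolding validt_def by auto
  show ?thesis using Inl l assms suc_nz2[of l] unfolding tv_def vanI_def by (auto simp: lin_uvec)
next
  case (Inr ab)
  obtain a b where ab: "ab = (a,b)" by (cases ab)
  have v: "a \<le> n" "b \<le> n" "a \<noteq> b" using assms Inr ab unfolding validt_def by auto
  have wa: "w a \<noteq> 0" "w b \<noteq> 0" using v assms by auto
  have df: "(of_nat (Suc a) :: complex) - of_nat (Suc b) \<noteq> 0" using v by simp
  have e1: "w b * (of_nat (Suc a) * w a) - w a * (of_nat (Suc b) * w b) = w a * w b * (of_nat (Suc a) - of_nat (Suc b))"
    by (simp add: algebra_simps)
  have nz1: "w b * (of_nat (Suc a) * w a) - w a * (of_nat (Suc b) * w b) \<noteq> 0"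
    unfolding e1 using wa df by simp
  show ?thesis
    using Inr ab v wa nz1 suc_nz2[of a] suc_nz2[of b] unfolding tv_def vanI_def q y
    by (auto simp: lin_pv)
qed

lemma lin_tv_wf:
  assumes "validt n t" "\<forall>l\<le>n. w l \<noteq> 0"
  shows "lin n (tv w t) (\<lambda>i. of_nat (Suc i) * w i) \<noteq> 0"
proof (cases t)
  case (Inl l)
  then have l: "l \<le> n" using assms unfolding validt_def by auto
  show ?thesis using Inl l assms suc_nz2[of l] unfolding tv_def by (auto simp: lin_uvec)
next
  case (Inr ab)
  obtain a b where ab: "ab = (a,b)" by (cases ab)
  have v: "a \<le> n" "b \<le> n" "a \<noteq> b" using assms Inr ab unfolding validt_def by auto
  have wa: "w a \<noteq> 0" "w b \<noteq> 0" using v assms by auto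
  have df: "(of_nat (Suc a) :: complex) - of_nat (Suc b) \<noteq> 0" using v by simp
  have e1: "w b * (of_nat (Suc a) * w a) - w a * (of_nat (Suc b) * w b) = w a * w b * (of_nat (Suc a) - of_nat (Suc b))"
    by (simp add: algebra_simps)
  have nz1: "w b * (of_nat (Suc a) * w a) - w a * (of_nat (Suc b) * w b) \<noteq> 0"
    unfolding e1 using wa df by simp
  show ?thesis using Inr ab v nz1 unfolding tv_def by (simp add: lin_pv)
qed

lemma len_filter_mono: "(\<And>x. P x \<Longrightarrow> Q x) \<Longrightarrow> length (filter P xs) \<le> length (filter Q xs)"
  by (induction xs) auto

theorem core:
  fixes A B :: "nat \<Rightarrow> nat \<Rightarrow> complex" and w :: "nat \<Rightarrow> complex" and mm :: "nat \<Rightarrow> nat"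
  assumes AB: "\<forall>i\<le>n. \<forall>j\<le>n. (\<Sum>l\<le>n. A i l * B l j) = (if i = j then 1 else 0)"
    and BA: "\<forall>i\<le>n. \<forall>j\<le>n. (\<Sum>l\<le>n. B i l * A l j) = (if i = j then 1 else 0)"
    and lam: "\<forall>l\<le>n. w l \<noteq> 0"
    and I: "I \<subseteq> {..n}" "I \<noteq> {}"
    and ne: "\<exists>c. (\<forall>l\<le>n. mult_ge n d c (am n A (uvec l)) (mm l)) \<and> mult_ge n d c (am n A w) \<mu> \<and> hs_nonzero n d c"
  shows "\<forall>c. (\<forall>l\<le>n. mult_ge n d c (am n A (uvec l)) (mm l)) \<longrightarrow>
            (\<forall>x'. (\<forall>i\<le>n. i \<notin> I \<longrightarrow> x' i = 0) \<longrightarrow> mult_ge n d c (am n A x') (d - (\<Sum>l\<in>I. d - mm l)))"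
    and "\<exists>c. (\<forall>l\<le>n. mult_ge n d c (am n A (uvec l)) (mm l)) \<and> mult_ge n d c (am n A w) \<mu> \<and> hs_nonzero n d c \<and>
            (\<exists>x'. (\<forall>i\<le>n. i \<notin> I \<longrightarrow> x' i = 0) \<and> (\<exists>i\<in>I. x' i \<noteq> 0) \<and>
               \<not> mult_ge n d c (am n A x') (Suc (d - (\<Sum>l\<in>I. d - mm l))))"
proof -
  define k where "k = d - (\<Sum>l\<in>I. d - mm l)"
  have surj: "\<forall>y. \<exists>y'. \<forall>i\<le>n. am n A y' i = y i" using am_inv[OF AB] by blast
  have BAx: "\<forall>x. \<forall>i\<le>n. am n B (am n A x) i = x i" using am_inv[OF BA] by blast
  have caps_of: "\<And>c c'. \<forall>l\<le>n. mult_ge n d c (am n A (uvec l)) (mm l) \<Longrightarrow> \<forall>x. ev n d c' x = ev n d c (am n A x) \<Longrightarrow>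
      \<forall>l\<le>n. \<forall>\<alpha>\<in>hmonos n d. c' \<alpha> \<noteq> 0 \<longrightarrow> \<alpha> l + mm l \<le> d"
  proof (intro allI impI ballI)
    fix c c' l \<alpha> assume h: "\<forall>l\<le>n. mult_ge n d c (am n A (uvec l)) (mm l)" and c': "\<forall>x. ev n d c' x = ev n d c (am n A x)"
      and l: "l \<le> n" and a: "\<alpha> \<in> hmonos n d" and ca: "c' \<alpha> \<noteq> 0"
    have "mult_ge n d c' (uvec l) (mm l)" using mg_transfer[OF c'] h l by blast
    then show "\<alpha> l + mm l \<le> d" using caps_unit l a ca by blast
  qed
  show "\<forall>c. (\<forall>l\<le>n. mult_ge n d c (am n A (uvec l)) (mm l)) \<longrightarrow>
            (\<forall>x'. (\<forall>i\<le>n. i \<notin> I \<longrightarrow> x' i = 0) \<longrightarrow> mult_ge n d c (am n A x') (d - (\<Sum>l\<in>I. d - mm l)))"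
  proof (intro allI impI)
    fix c and x' :: "nat \<Rightarrow> complex" assume h: "\<forall>l\<le>n. mult_ge n d c (am n A (uvec l)) (mm l)" and x': "\<forall>i\<le>n. i \<notin> I \<longrightarrow> x' i = 0"
    obtain c' where c': "\<forall>x. ev n d c' x = ev n d c (am n A x)" using rep_comp[of n d c A] unfolding rep_def by metis
    have caps: "\<forall>l\<in>I. \<forall>\<alpha>\<in>hmonos n d. c' \<alpha> \<noteq> 0 \<longrightarrow> \<alpha> l + mm l \<le> d" using caps_of[OF h c'] I by blast
    have "mult_ge n d c' x' (d - (\<Sum>l\<in>I. d - mm l))" by (rule lower_bound[OF caps I(1) x']) simp
    then show "mult_ge n d c (am n A x') (d - (\<Sum>l\<in>I. d - mm l))" by (rule mg_transfer_rev[OF c' surj])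
  qed
  obtain c0 where c0: "\<forall>l\<le>n. mult_ge n d c0 (am n A (uvec l)) (mm l)" "mult_ge n d c0 (am n A w) \<mu>" "hs_nonzero n d c0"
    using ne by blast
  obtain c0' where c0': "\<forall>x. ev n d c0' x = ev n d c0 (am n A x)" using rep_comp[of n d c0 A] unfolding rep_def by metis
  have caps0: "\<forall>l\<le>n. \<forall>\<alpha>\<in>hmonos n d. c0' \<alpha> \<noteq> 0 \<longrightarrow> \<alpha> l + mm l \<le> d" by (rule caps_of[OF c0(1) c0'])
  obtain x0 where x0: "ev n d c0 x0 \<noteq> 0" using hs_nonzero_imp[OF c0(3)] by blast
  have "ev n d c0' (am n B x0) = ev n d c0 x0"
    using c0' ev_cong[of n "am n A (am n B x0)" x0 d c0] am_inv[OF AB] by simp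
  then have z0: "ev n d c0' (am n B x0) \<noteq> 0" using x0 by simp
  then have "hs_nonzero n d c0'" by (rule hs_nonzero_if)
  then obtain \<alpha>0 where a0: "\<alpha>0 \<in> hmonos n d" "c0' \<alpha>0 \<noteq> 0" unfolding hs_nonzero_def by blast
  have mmd: "\<forall>l\<le>n. mm l \<le> d" using caps0 a0 by fastforce
  have mgw: "mult_ge n d c0' w \<mu>" using mg_transfer[OF c0'] c0(2) by blast
  have mud: "\<mu> \<le> d"
  proof (rule ccontr)
    assume "\<not> \<mu> \<le> d"
    then have "ev n d c0' (am n B x0) = 0" using mult_big[OF mgw] by simp
    then show False using z0 by simp
  qed
  have sumc: "(\<Sum>l\<le>n. mm l) + \<mu> \<le> n * d" by (rule rnc[OF caps0 lam mgw z0])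
  obtain tags where tg: "length tags = d" "\<forall>t\<in>set tags. validt n t" "\<forall>j\<le>n. mm j \<le> length (filter (vanish j) tags)"
     "\<mu> \<le> length (filter (\<lambda>t. \<not> isl t) tags)"
     "int (length (filter (vanI I) tags)) = max 0 (int d - int (\<Sum>l\<in>I. d - mm l))"
    using comb[OF mmd mud sumc I(1)] by blast
  have cntI: "length (filter (vanI I) tags) = k" using tg(5) unfolding k_def by linarith
  define ls where "ls = map (tv w) tags"
  have lenls: "length ls = d" unfolding ls_def using tg(1) by simp
  obtain cH where cH: "\<forall>x. plin n ls x = ev n d cH x" using rep_plin[of n ls] lenls unfolding rep_def by metis
  obtain c1 where c1: "\<forall>x. ev n d c1 x = ev n d cH (am n B x)" using rep_comp[of n d cH B] unfolding rep_def by metis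
  have c1A: "\<forall>x. ev n d c1 (am n A x) = plin n ls x"
  proof
    fix x
    have "ev n d c1 (am n A x) = plin n ls (am n B (am n A x))" using c1 cH by simp
    also have "\<dots> = plin n ls x" by (rule plin_cong) (use BAx in auto)
    finally show "ev n d c1 (am n A x) = plin n ls x" .
  qed
  have c1A': "\<forall>x. ev n d cH x = ev n d c1 (am n A x)" using c1A cH by simp
  have cnt_filter: "\<And>P Q. (\<forall>t\<in>set tags. P (tv w t) \<longleftrightarrow> Q t) \<Longrightarrow> length (filter P ls) = length (filter Q tags)"
    unfolding ls_def by (simp add: filter_map comp_def cong: filter_cong)
  have mg1: "\<forall>l\<le>n. mult_ge n d c1 (am n A (uvec l)) (mm l)"
  proof (intro allI impI)
    fix j assume j: "j \<le> n"
    have "length (filter (\<lambda>a. lin n a (uvec j) = 0) ls) = length (filter (vanish j) tags)"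
      by (rule cnt_filter) (use tg(2) lin_tv_uvec[OF _ j lam] in auto)
    then have "mm j \<le> length (filter (\<lambda>a. lin n a (uvec j) = 0) ls)" using tg(3) j by simp
    then have "MG (plin n ls) (uvec j) (mm j)" by (rule mg_le[OF mg_plin[of n ls "uvec j"]])
    then have "mult_ge n d cH (uvec j) (mm j)" using cH mg_iff by (metis ext)
    then show "mult_ge n d c1 (am n A (uvec j)) (mm j)" by (rule mg_transfer_rev[OF c1A' surj])
  qed
  have mg2: "mult_ge n d c1 (am n A w) \<mu>"
  proof -
    have "length (filter (\<lambda>a. lin n a w = 0) ls) \<ge> length (filter (\<lambda>t. \<not> isl t) tags)"
    proof -
      have "length (filter (\<lambda>a. lin n a w = 0) ls) = length (filter (\<lambda>t. \<not> isl t \<or> w (projl t) = 0) tags)"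
        by (rule cnt_filter) (use tg(2) lin_tv_w in auto)
      moreover have "length (filter (\<lambda>t. \<not> isl t) tags) \<le> length (filter (\<lambda>t. \<not> isl t \<or> w (projl t) = 0) tags)"
        by (rule len_filter_mono) auto
      ultimately show ?thesis by simp
    qed
    then have "\<mu> \<le> length (filter (\<lambda>a. lin n a w = 0) ls)" using tg(4) by linarith
    then have "MG (plin n ls) w \<mu>" by (rule mg_le[OF mg_plin[of n ls w]])
    then have "mult_ge n d cH w \<mu>" using cH mg_iff by (metis ext)
    then show ?thesis by (rule mg_transfer_rev[OF c1A' surj])
  qed
  define wf where "wf = (\<lambda>i. of_nat (Suc i) * w i)"
  have hs1: "hs_nonzero n d c1"
  proof -
    have "\<forall>a\<in>set ls. lin n a wf \<noteq> 0"
    proof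
      fix a assume "a \<in> set ls"
      then obtain t where t: "t \<in> set tags" "a = tv w t" unfolding ls_def by auto
      have "lin n (tv w t) wf \<noteq> 0"
        unfolding wf_def by (rule lin_tv_wf[OF tg(2)[rule_format, OF t(1)] lam])
      then show "lin n a wf \<noteq> 0" using t by simp
    qed
    then have "plin n ls wf \<noteq> 0" unfolding plin_def by (auto simp: prod_list_zero_iff)
    then have "ev n d c1 (am n A wf) \<noteq> 0" using c1A by simp
    then show ?thesis by (rule hs_nonzero_if)
  qed
  define q where "q = (\<lambda>i. if i \<in> I then of_nat (Suc i) * w i else 0)"
  define y where "y = (\<lambda>i. if i \<notin> I then of_nat (Suc i) * w i else 0)"
  have facts: "\<forall>t\<in>set tags. (lin n (tv w t) q = 0 \<longleftrightarrow> vanI I t) \<and> (lin n (tv w t) q \<noteq> 0 \<or> lin n (tv w t) y \<noteq> 0)"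
    using lin_tv_q[OF _ lam q_def y_def] tg(2) by blast
  have "\<forall>a\<in>set ls. lin n a q \<noteq> 0 \<or> lin n a y \<noteq> 0" using facts unfolding ls_def by auto
  from exact_plin[OF this] obtain R where R: "poly R 0 \<noteq> 0"
    "\<forall>t. plin n ls (\<lambda>i. q i + t * y i) = t ^ length (filter (\<lambda>a. lin n a q = 0) ls) * poly R t" by blast
  have "length (filter (\<lambda>a. lin n a q = 0) ls) = length (filter (vanI I) tags)"
    by (rule cnt_filter) (use facts in auto)
  then have R2: "\<forall>t. plin n ls (\<lambda>i. q i + t * y i) = t ^ k * poly R t" using R(2) cntI by simp
  have nmg: "\<not> MG (plin n ls) q (Suc k)" by (rule not_mg[OF R(1) R2])
  have "\<not> mult_ge n d c1 (am n A q) (Suc k)"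
  proof
    assume "mult_ge n d c1 (am n A q) (Suc k)"
    then have "MG (\<lambda>x. ev n d c1 (am n A x)) q (Suc k)" using mg_iff mg_comp by blast
    moreover have "(\<lambda>x. ev n d c1 (am n A x)) = plin n ls" using c1A by auto
    ultimately show False using nmg by simp
  qed
  moreover have "\<forall>i\<le>n. i \<notin> I \<longrightarrow> q i = 0" unfolding q_def by simp
  moreover have "\<exists>i\<in>I. q i \<noteq> 0"
  proof -
    obtain i where i: "i \<in> I" using I(2) by blast
    then have "i \<le> n" using I(1) by auto
    then show ?thesis using i lam suc_nz2[of i] unfolding q_def by auto
  qed
  ultimately show "\<exists>c. (\<forall>l\<le>n. mult_ge n d c (am n A (uvec l)) (mm l)) \<and> mult_ge n d c (am n A w) \<mu> \<and> hs_nonzero n d c \<and>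
            (\<exists>x'. (\<forall>i\<le>n. i \<notin> I \<longrightarrow> x' i = 0) \<and> (\<exists>i\<in>I. x' i \<noteq> 0) \<and>
               \<not> mult_ge n d c (am n A x') (Suc (d - (\<Sum>l\<in>I. d - mm l))))"
    using mg1 mg2 hs1 unfolding k_def by blast
qed

definition prep :: "'v set \<Rightarrow> (('v \<Rightarrow> complex) \<Rightarrow> complex) \<Rightarrow> bool" where
  "prep V F \<longleftrightarrow> (\<exists>D g. (\<forall>\<alpha>. g \<alpha> \<noteq> 0 \<longrightarrow> \<alpha> \<in> pmonos V D) \<and> (\<forall>y. F y = peval V D g y))"

lemma finite_pmonos: "finite V \<Longrightarrow> finite (pmonos V D)"
proof -
  assume fV: "finite V"
  have "pmonos V D \<subseteq> {f. \<forall>x. (x\<in>V \<longrightarrow> f x \<in> {..D}) \<and> (x\<notin>V \<longrightarrow> f x = 0)}"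
  proof
    fix \<alpha> assume a: "\<alpha> \<in> pmonos V D"
    have "\<forall>x\<in>V. \<alpha> x \<le> D"
    proof
      fix x assume "x \<in> V"
      then have "\<alpha> x \<le> (\<Sum>v\<in>V. \<alpha> v)" using fV by (intro member_le_sum) auto
      then show "\<alpha> x \<le> D" using a unfolding pmonos_def by simp
    qed
    then show "\<alpha> \<in> {f. \<forall>x. (x\<in>V \<longrightarrow> f x \<in> {..D}) \<and> (x\<notin>V \<longrightarrow> f x = 0)}"
      using a unfolding pmonos_def by auto
  qed
  then show ?thesis using finite_set_of_finite_funs[OF fV, of "{..D}" 0] finite_subset by blast
qed

lemma pmonos_mono: "D \<le> D' \<Longrightarrow> pmonos V D \<subseteq> pmonos V D'"
  unfolding pmonos_def by auto

lemma peval_mono: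
  assumes "finite V" "\<forall>\<alpha>. g \<alpha> \<noteq> 0 \<longrightarrow> \<alpha> \<in> pmonos V D" "D \<le> D'"
  shows "peval V D' g y = peval V D g y"
  unfolding peval_def
proof (rule sum.mono_neutral_right)
  show "finite (pmonos V D')" by (rule finite_pmonos[OF assms(1)])
  show "pmonos V D \<subseteq> pmonos V D'" by (rule pmonos_mono[OF assms(3)])
  show "\<forall>i\<in>pmonos V D' - pmonos V D. g i * (\<Prod>v\<in>V. y v ^ i v) = 0" using assms(2) by auto
qed

lemma prep_const: assumes "finite V" shows "prep V (\<lambda>y. k)"
proof -
  have pm0: "pmonos V 0 = {\<lambda>_. 0}"
  proof
    show "pmonos V 0 \<subseteq> {\<lambda>_. 0}"
    proof
      fix \<alpha> assume a: "\<alpha> \<in> pmonos V 0"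
      then have "\<forall>v\<in>V. \<alpha> v = 0" using assms unfolding pmonos_def by auto
      then show "\<alpha> \<in> {\<lambda>_. 0}" using a unfolding pmonos_def by (auto simp: fun_eq_iff)
    qed
    show "{\<lambda>_. 0} \<subseteq> pmonos V 0" unfolding pmonos_def by auto
  qed
  define g where "g = (\<lambda>\<alpha>::'a \<Rightarrow> nat. if \<alpha> = (\<lambda>_. 0) then k else 0)"
  have "\<forall>\<alpha>. g \<alpha> \<noteq> 0 \<longrightarrow> \<alpha> \<in> pmonos V 0" unfolding g_def pm0 by auto
  moreover have "\<forall>y. k = peval V 0 g y" unfolding peval_def pm0 g_def by simp
  ultimately show ?thesis unfolding prep_def by blast
qed

lemma prep_var: assumes "finite V" "v \<in> V" shows "prep V (\<lambda>y. y v)"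
proof -
  define e where "e = (\<lambda>u. if u = v then 1 else (0::nat))"
  have eV: "e \<in> pmonos V 1" unfolding pmonos_def e_def using assms by (auto simp: sum.delta)
  define g where "g = (\<lambda>\<alpha>. if \<alpha> = e then (1::complex) else 0)"
  have "\<forall>\<alpha>. g \<alpha> \<noteq> 0 \<longrightarrow> \<alpha> \<in> pmonos V 1" unfolding g_def using eV by auto
  moreover have "\<forall>y. y v = peval V 1 g y"
  proof
    fix y :: "'a \<Rightarrow> complex"
    have "peval V 1 g y = (\<Sum>\<alpha>\<in>pmonos V 1. if \<alpha> = e then (\<Prod>u\<in>V. y u ^ \<alpha> u) else 0)"
      unfolding peval_def g_def by (intro sum.cong) auto
    also have "\<dots> = (\<Prod>u\<in>V. y u ^ e u)"
      using eV finite_pmonos[OF assms(1)] by (simp add: sum.delta)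
    also have "\<dots> = (\<Prod>u\<in>V. if u = v then y v else 1)" unfolding e_def by (intro prod.cong) auto
    also have "\<dots> = y v" using assms by simp
    finally show "y v = peval V 1 g y" by simp
  qed
  ultimately show ?thesis unfolding prep_def by blast
qed

lemma prep_add:
  assumes fV: "finite V" and "prep V F1" "prep V F2"
  shows "prep V (\<lambda>y. F1 y + F2 y)"
proof -
  obtain D1 g1 where g1: "\<forall>\<alpha>. g1 \<alpha> \<noteq> 0 \<longrightarrow> \<alpha> \<in> pmonos V D1" "\<forall>y. F1 y = peval V D1 g1 y"
    using assms(2) unfolding prep_def by blast
  obtain D2 g2 where g2: "\<forall>\<alpha>. g2 \<alpha> \<noteq> 0 \<longrightarrow> \<alpha> \<in> pmonos V D2" "\<forall>y. F2 y = peval V D2 g2 y"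
    using assms(3) unfolding prep_def by blast
  define D where "D = max D1 D2"
  have s1: "\<forall>\<alpha>. g1 \<alpha> \<noteq> 0 \<longrightarrow> \<alpha> \<in> pmonos V D" using g1(1) pmonos_mono[of D1 D V] unfolding D_def by auto
  have s2: "\<forall>\<alpha>. g2 \<alpha> \<noteq> 0 \<longrightarrow> \<alpha> \<in> pmonos V D" using g2(1) pmonos_mono[of D2 D V] unfolding D_def by auto
  define g where "g = (\<lambda>\<alpha>. g1 \<alpha> + g2 \<alpha>)"
  have "\<forall>\<alpha>. g \<alpha> \<noteq> 0 \<longrightarrow> \<alpha> \<in> pmonos V D"
  proof (intro allI impI)
    fix \<alpha> assume h: "g \<alpha> \<noteq> 0"
    show "\<alpha> \<in> pmonos V D"
    proof (cases "g1 \<alpha> = 0")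
      case True then have "g2 \<alpha> \<noteq> 0" using h unfolding g_def by simp
      then show ?thesis using s2 by blast
    next
      case False then show ?thesis using s1 by blast
    qed
  qed
  moreover have "\<forall>y. F1 y + F2 y = peval V D g y"
  proof
    fix y
    have "F1 y = peval V D g1 y" using g1(2) peval_mono[OF fV g1(1), of D y] unfolding D_def by simp
    moreover have "F2 y = peval V D g2 y" using g2(2) peval_mono[OF fV g2(1), of D y] unfolding D_def by simp
    ultimately show "F1 y + F2 y = peval V D g y"
      unfolding peval_def g_def by (simp add: sum.distrib distrib_right)
  qed
  ultimately show ?thesis unfolding prep_def by blast
qed

lemma prep_mult:
  assumes fV: "finite V" and "prep V F1" "prep V F2"
  shows "prep V (\<lambda>y. F1 y * F2 y)"
proof -
  obtain D1 g1 where g1: "\<forall>\<alpha>. g1 \<alpha> \<noteq> 0 \<longrightarrow> \<alpha> \<in> pmonos V D1" "\<forall>y. F1 y = peval V D1 g1 y"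
    using assms(2) unfolding prep_def by blast
  obtain D2 g2 where g2: "\<forall>\<alpha>. g2 \<alpha> \<noteq> 0 \<longrightarrow> \<alpha> \<in> pmonos V D2" "\<forall>y. F2 y = peval V D2 g2 y"
    using assms(3) unfolding prep_def by blast
  let ?P = "pmonos V D1 \<times> pmonos V D2"
  have fP: "finite ?P" using finite_pmonos[OF fV] by simp
  let ?pl = "\<lambda>x::('a \<Rightarrow> nat) \<times> ('a \<Rightarrow> nat). (\<lambda>v. fst x v + snd x v)"
  define g where "g = (\<lambda>\<alpha>. \<Sum>x\<in>{x\<in>?P. ?pl x = \<alpha>}. g1 (fst x) * g2 (snd x))"
  have plP: "\<forall>x\<in>?P. ?pl x \<in> pmonos V (D1 + D2)"
  proof
    fix x assume "x \<in> ?P"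
    then show "?pl x \<in> pmonos V (D1 + D2)" unfolding pmonos_def by (auto simp: sum.distrib)
  qed
  have supp: "\<forall>\<alpha>. g \<alpha> \<noteq> 0 \<longrightarrow> \<alpha> \<in> pmonos V (D1 + D2)"
  proof (intro allI impI)
    fix \<alpha> assume "g \<alpha> \<noteq> 0"
    then have "{x\<in>?P. ?pl x = \<alpha>} \<noteq> {}" unfolding g_def by (metis (no_types, lifting) sum.empty)
    then show "\<alpha> \<in> pmonos V (D1 + D2)" using plP by auto
  qed
  have mon_add: "\<And>x y. (\<Prod>v\<in>V. y v ^ ?pl x v) = (\<Prod>v\<in>V. y v ^ fst x v) * (\<Prod>v\<in>V. y v ^ snd x v)"
    by (simp add: power_add prod.distrib)
  have "\<forall>y. F1 y * F2 y = peval V (D1 + D2) g y"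
  proof
    fix y
    have "F1 y * F2 y = (\<Sum>\<beta>\<in>pmonos V D1. g1 \<beta> * (\<Prod>v\<in>V. y v ^ \<beta> v)) * (\<Sum>\<gamma>\<in>pmonos V D2. g2 \<gamma> * (\<Prod>v\<in>V. y v ^ \<gamma> v))"
      using g1(2) g2(2) unfolding peval_def by simp
    also have "\<dots> = (\<Sum>x\<in>?P. g1 (fst x) * (\<Prod>v\<in>V. y v ^ fst x v) * (g2 (snd x) * (\<Prod>v\<in>V. y v ^ snd x v)))"
      unfolding sum_product sum.cartesian_product by (simp add: case_prod_beta)
    also have "\<dots> = (\<Sum>x\<in>?P. g1 (fst x) * g2 (snd x) * (\<Prod>v\<in>V. y v ^ ?pl x v))"
      unfolding mon_add by (rule sum.cong[OF refl]) (simp add: mult_ac)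
    also have "\<dots> = (\<Sum>\<alpha>\<in>?pl ` ?P. \<Sum>x\<in>{x\<in>?P. ?pl x = \<alpha>}. g1 (fst x) * g2 (snd x) * (\<Prod>v\<in>V. y v ^ ?pl x v))"
      by (rule sum.image_gen[OF fP])
    also have "\<dots> = (\<Sum>\<alpha>\<in>?pl ` ?P. g \<alpha> * (\<Prod>v\<in>V. y v ^ \<alpha> v))"
      unfolding g_def sum_distrib_right by (intro sum.cong refl) auto
    also have "\<dots> = peval V (D1 + D2) g y"
      unfolding peval_def
    proof (rule sum.mono_neutral_left)
      show "finite (pmonos V (D1 + D2))" by (rule finite_pmonos[OF fV])
      show "?pl ` ?P \<subseteq> pmonos V (D1 + D2)" using plP by auto
      show "\<forall>i\<in>pmonos V (D1 + D2) - ?pl ` ?P. g i * (\<Prod>v\<in>V. y v ^ i v) = 0"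
      proof
        fix i assume "i \<in> pmonos V (D1 + D2) - ?pl ` ?P"
        then have e: "{x\<in>?P. ?pl x = i} = {}" by blast
        have "g i = 0" unfolding g_def e by simp
        then show "g i * (\<Prod>v\<in>V. y v ^ i v) = 0" by simp
      qed
    qed
    finally show "F1 y * F2 y = peval V (D1 + D2) g y" .
  qed
  then show ?thesis using supp unfolding prep_def by blast
qed

lemma prep_sum:
  assumes fV: "finite V" shows "finite A \<Longrightarrow> (\<And>a. a \<in> A \<Longrightarrow> prep V (F a)) \<Longrightarrow> prep V (\<lambda>y. \<Sum>a\<in>A. F a y)"
proof (induction A rule: finite_induct)
  case empty then show ?case using prep_const[OF fV, of 0] by simp
next
  case (insert a A) then show ?case using prep_add[OF fV] by simp
qed

lemma prep_prod:
  assumes fV: "finite V" shows "finite A \<Longrightarrow> (\<And>a. a \<in> A \<Longrightarrow> prep V (F a)) \<Longrightarrow> prep V (\<lambda>y. \<Prod>a\<in>A. F a y)"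
proof (induction A rule: finite_induct)
  case empty then show ?case using prep_const[OF fV, of 1] by simp
next
  case (insert a A) then show ?case using prep_mult[OF fV] by simp
qed

lemma prep_det:
  assumes fV: "finite V" and E: "\<forall>i<N. \<forall>l<N. prep V (\<lambda>y. E y i l)"
  shows "prep V (\<lambda>y. det (mat N N (\<lambda>(i,l). E y i l)))"
proof -
  have "prep V (\<lambda>y. \<Sum>\<pi>\<in>{\<pi>. \<pi> permutes {0..<N}}. signof \<pi> * (\<Prod>i = 0..<N. E y i (\<pi> i)))"
  proof (rule prep_sum[OF fV])
    show "finite {\<pi>. \<pi> permutes {0..<N}}" by (rule finite_permutations) simp
    fix \<pi> assume p: "\<pi> \<in> {\<pi>. \<pi> permutes {0..<N}}"
    show "prep V (\<lambda>y. signof \<pi> * (\<Prod>i = 0..<N. E y i (\<pi> i)))"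
    proof (rule prep_mult[OF fV prep_const[OF fV]], rule prep_prod[OF fV])
      fix i assume i: "i \<in> {0..<N}"
      then have "\<pi> i \<in> {0..<N}" using p permutes_in_image by fastforce
      then show "prep V (\<lambda>y. E y i (\<pi> i))" using E i by auto
    qed simp
  qed
  moreover have "\<And>y. det (mat N N (\<lambda>(i,l). E y i l)) = (\<Sum>\<pi>\<in>{\<pi>. \<pi> permutes {0..<N}}. signof \<pi> * (\<Prod>i = 0..<N. E y i (\<pi> i)))"
  proof -
    fix y
    have "det (mat N N (\<lambda>(i,l). E y i l)) = (\<Sum>\<pi>\<in>{\<pi>. \<pi> permutes {0..<N}}. signof \<pi> * (\<Prod>i = 0..<N. mat N N (\<lambda>(i,l). E y i l) $$ (i, \<pi> i)))"
      by (rule det_def') simp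
    also have "\<dots> = (\<Sum>\<pi>\<in>{\<pi>. \<pi> permutes {0..<N}}. signof \<pi> * (\<Prod>i = 0..<N. E y i (\<pi> i)))"
    proof (rule sum.cong[OF refl], rule arg_cong2[where f="(*)", OF refl])
      fix \<pi> assume p: "\<pi> \<in> {\<pi>. \<pi> permutes {0..<N}}"
      show "(\<Prod>i = 0..<N. mat N N (\<lambda>(i,l). E y i l) $$ (i, \<pi> i)) = (\<Prod>i = 0..<N. E y i (\<pi> i))"
      proof (rule prod.cong[OF refl])
        fix i assume i: "i \<in> {0..<N}"
        then have "\<pi> i \<in> {0..<N}" using p permutes_in_image by fastforce
        then show "mat N N (\<lambda>(i,l). E y i l) $$ (i, \<pi> i) = E y i (\<pi> i)" using i by simp
      qed
    qed
    finally show "det (mat N N (\<lambda>(i,l). E y i l)) = (\<Sum>\<pi>\<in>{\<pi>. \<pi> permutes {0..<N}}. signof \<pi> * (\<Prod>i = 0..<N. E y i (\<pi> i)))" .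
  qed
  ultimately show ?thesis by simp
qed

lemma dpeval_cong: "(\<And>i. i \<le> n \<Longrightarrow> x i = x' i) \<Longrightarrow> dpeval n d c \<beta> x = dpeval n d c \<beta> x'"
  unfolding dpeval_def by (intro sum.cong refl arg_cong2[where f="(*)"] prod.cong) auto

lemma mult_ge_cong: "(\<And>i. i \<le> n \<Longrightarrow> x i = x' i) \<Longrightarrow> mult_ge n d c x k \<longleftrightarrow> mult_ge n d c x' k"
  unfolding mult_ge_def using dpeval_cong by metis

lemma glue:
  fixes A B :: "nat \<Rightarrow> nat \<Rightarrow> complex" and w :: "nat \<Rightarrow> complex" and mm :: "nat \<Rightarrow> nat"
    and p :: "nat \<Rightarrow> nat \<Rightarrow> complex" and \<pi> :: "nat \<Rightarrow> nat"
  assumes AB: "\<forall>i\<le>n. \<forall>j\<le>n. (\<Sum>l\<le>n. A i l * B l j) = (if i = j then 1 else 0)"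
    and BA: "\<forall>i\<le>n. \<forall>j\<le>n. (\<Sum>l\<le>n. B i l * A l j) = (if i = j then 1 else 0)"
    and lam: "\<forall>l\<le>n. w l \<noteq> 0"
    and I': "I' \<subseteq> {..n}" "I' \<noteq> {}"
    and bij: "bij_betw \<pi> I' I"
    and col: "\<forall>l\<in>I'. \<forall>j\<le>n. A j l = p (\<pi> l) j"
    and sys: "\<forall>c. c \<in> linsys n d s m p \<longleftrightarrow> (\<forall>l\<le>n. mult_ge n d c (am n A (uvec l)) (mm l)) \<and> mult_ge n d c (am n A w) \<mu>"
    and ne: "\<exists>c\<in>linsys n d s m p. hs_nonzero n d c"
  shows "base_mult_exact n d s m p I (d - (\<Sum>l\<in>I'. d - mm l))"
proof -
  let ?k = "d - (\<Sum>l\<in>I'. d - mm l)"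
  have ne': "\<exists>c. (\<forall>l\<le>n. mult_ge n d c (am n A (uvec l)) (mm l)) \<and> mult_ge n d c (am n A w) \<mu> \<and> hs_nonzero n d c"
    using ne sys by blast
  note cr = core[OF AB BA lam I' ne']
  have fI': "finite I'" using I' finite_subset by blast
  have part1: "\<forall>c\<in>linsys n d s m p. mult_along n d c (span_pts n p I) ?k"
  proof (intro ballI)
    fix c assume c: "c \<in> linsys n d s m p"
    show "mult_along n d c (span_pts n p I) ?k"
      unfolding mult_along_def
    proof
      fix q assume q: "q \<in> span_pts n p I"
      then obtain a where a: "\<forall>j\<le>n. q j = (\<Sum>i\<in>I. a i * p i j)" unfolding span_pts_def by blast
      define x' where "x' = (\<lambda>l. if l \<in> I' then a (\<pi> l) else 0)"
      have x'0: "\<forall>i\<le>n. i \<notin> I' \<longrightarrow> x' i = 0" unfolding x'_def by simp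
      have "\<forall>j\<le>n. am n A x' j = q j"
      proof (intro allI impI)
        fix j assume j: "j \<le> n"
        have "am n A x' j = (\<Sum>l\<le>n. A j l * x' l)" unfolding am_def lin_def by simp
        also have "\<dots> = (\<Sum>l\<in>I'. A j l * x' l)"
          by (rule sum.mono_neutral_right) (use I' in \<open>auto simp: x'_def\<close>)
        also have "\<dots> = (\<Sum>l\<in>I'. a (\<pi> l) * p (\<pi> l) j)"
          using col j unfolding x'_def by (intro sum.cong) auto
        also have "\<dots> = (\<Sum>i\<in>I. a i * p i j)"
          using sum.reindex_bij_betw[OF bij, of "\<lambda>i. a i * p i j"] by simp
        finally show "am n A x' j = q j" using a j by simp
      qed
      moreover have "mult_ge n d c (am n A x') ?k" using cr(1) c sys x'0 by blast
      ultimately show "mult_ge n d c q ?k" using mult_ge_cong by metis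
    qed
  qed
  obtain c x' where cx: "\<forall>l\<le>n. mult_ge n d c (am n A (uvec l)) (mm l)" "mult_ge n d c (am n A w) \<mu>" "hs_nonzero n d c"
     "\<forall>i\<le>n. i \<notin> I' \<longrightarrow> x' i = 0" "\<exists>i\<in>I'. x' i \<noteq> 0" "\<not> mult_ge n d c (am n A x') (Suc ?k)"
    using cr(2) by blast
  have cl: "c \<in> linsys n d s m p" using sys cx(1,2) by blast
  have qin: "am n A x' \<in> span_pts n p I"
  proof -
    define a where "a = (\<lambda>i. x' (inv_into I' \<pi> i))"
    have "\<forall>j\<le>n. am n A x' j = (\<Sum>i\<in>I. a i * p i j)"
    proof (intro allI impI)
      fix j assume j: "j \<le> n"
      have "(\<Sum>i\<in>I. a i * p i j) = (\<Sum>l\<in>I'. a (\<pi> l) * p (\<pi> l) j)"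
        using sum.reindex_bij_betw[OF bij, of "\<lambda>i. a i * p i j"] by simp
      also have "\<dots> = (\<Sum>l\<in>I'. A j l * x' l)"
        using col j bij unfolding a_def by (intro sum.cong) (auto simp: bij_betw_def)
      also have "\<dots> = (\<Sum>l\<le>n. A j l * x' l)"
        by (rule sum.mono_neutral_left) (use I' cx(4) in auto)
      finally show "am n A x' j = (\<Sum>i\<in>I. a i * p i j)" unfolding am_def lin_def by simp
    qed
    moreover have "\<exists>j\<le>n. am n A x' j \<noteq> 0"
    proof (rule ccontr)
      assume "\<not> (\<exists>j\<le>n. am n A x' j \<noteq> 0)"
      then have z: "\<forall>j\<le>n. am n A x' j = 0" by simp
      obtain i where i: "i \<in> I'" "x' i \<noteq> 0" using cx(5) by blast
      have "am n B (am n A x') i = x' i" using am_inv[OF BA] i I' by auto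
      moreover have "am n B (am n A x') i = 0"
      proof -
        have "am n B (am n A x') i = (\<Sum>j\<le>n. B i j * am n A x' j)" unfolding am_def lin_def by simp
        also have "\<dots> = 0" using z by simp
        finally show ?thesis .
      qed
      ultimately show False using i by simp
    qed
    ultimately show ?thesis unfolding span_pts_def by blast
  qed
  have "\<not> mult_along n d c (span_pts n p I) (Suc ?k)"
    unfolding mult_along_def using qin cx(6) by blast
  then show ?thesis unfolding base_mult_exact_def using part1 cl cx(3) by blast
qed

lemma mat_inv_fun:
  fixes M :: "complex mat"
  assumes M: "M \<in> carrier_mat (Suc n) (Suc n)" and dM: "det M \<noteq> 0"
  shows "\<exists>B. (\<forall>i\<le>n. \<forall>j\<le>n. (\<Sum>l\<le>n. M $$ (i,l) * B l j) = (if i = j then 1 else 0)) \<and>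
             (\<forall>i\<le>n. \<forall>j\<le>n. (\<Sum>l\<le>n. B i l * M $$ (l,j)) = (if i = j then 1 else 0))"
proof -
  define Ad where "Ad = adj_mat M"
  have Ad: "Ad \<in> carrier_mat (Suc n) (Suc n)" "M * Ad = det M \<cdot>\<^sub>m 1\<^sub>m (Suc n)" "Ad * M = det M \<cdot>\<^sub>m 1\<^sub>m (Suc n)"
    using adj_mat[OF M] unfolding Ad_def by auto
  define B where "B = (\<lambda>l j. Ad $$ (l,j) / det M)"
  have s1: "\<forall>i\<le>n. \<forall>j\<le>n. (\<Sum>l\<le>n. M $$ (i,l) * Ad $$ (l,j)) = (if i = j then det M else 0)"
  proof (intro allI impI)
    fix i j assume ij: "i \<le> n" "j \<le> n"
    have "(M * Ad) $$ (i,j) = (\<Sum>l\<in>{0..<Suc n}. M $$ (i,l) * Ad $$ (l,j))"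
      using M Ad(1) ij by (simp add: scalar_prod_def)
    moreover have "(M * Ad) $$ (i,j) = (if i = j then det M else 0)" using Ad(2) ij by simp
    ultimately show "(\<Sum>l\<le>n. M $$ (i,l) * Ad $$ (l,j)) = (if i = j then det M else 0)"
      by (simp add: atLeast0LessThan lessThan_Suc_atMost)
  qed
  have s2: "\<forall>i\<le>n. \<forall>j\<le>n. (\<Sum>l\<le>n. Ad $$ (i,l) * M $$ (l,j)) = (if i = j then det M else 0)"
  proof (intro allI impI)
    fix i j assume ij: "i \<le> n" "j \<le> n"
    have "(Ad * M) $$ (i,j) = (\<Sum>l\<in>{0..<Suc n}. Ad $$ (i,l) * M $$ (l,j))"
      using M Ad(1) ij by (simp add: scalar_prod_def)
    moreover have "(Ad * M) $$ (i,j) = (if i = j then det M else 0)" using Ad(3) ij by simp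
    ultimately show "(\<Sum>l\<le>n. Ad $$ (i,l) * M $$ (l,j)) = (if i = j then det M else 0)"
      by (simp add: atLeast0LessThan lessThan_Suc_atMost)
  qed
  have "\<forall>i\<le>n. \<forall>j\<le>n. (\<Sum>l\<le>n. M $$ (i,l) * B l j) = (if i = j then 1 else 0)"
  proof (intro allI impI)
    fix i j assume ij: "i \<le> n" "j \<le> n"
    have "(\<Sum>l\<le>n. M $$ (i,l) * B l j) = (\<Sum>l\<le>n. M $$ (i,l) * Ad $$ (l,j)) / det M"
      unfolding B_def by (simp add: sum_divide_distrib)
    then show "(\<Sum>l\<le>n. M $$ (i,l) * B l j) = (if i = j then 1 else 0)" using s1 ij dM by simp
  qed
  moreover have "\<forall>i\<le>n. \<forall>j\<le>n. (\<Sum>l\<le>n. B i l * M $$ (l,j)) = (if i = j then 1 else 0)"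
  proof (intro allI impI)
    fix i j assume ij: "i \<le> n" "j \<le> n"
    have "(\<Sum>l\<le>n. B i l * M $$ (l,j)) = (\<Sum>l\<le>n. Ad $$ (i,l) * M $$ (l,j)) / det M"
      unfolding B_def by (simp add: sum_divide_distrib)
    then show "(\<Sum>l\<le>n. B i l * M $$ (l,j)) = (if i = j then 1 else 0)" using s2 ij dM by simp
  qed
  ultimately show ?thesis by blast
qed

lemma am_uvec: "l \<le> n \<Longrightarrow> am n A (uvec l) j = A j l"
  unfolding am_def by (simp add: lin_def uvec_def if_distrib cong: if_cong)

lemma mult_ge_0: "mult_ge n d c x 0"
  unfolding mult_ge_def by simp

lemma sys_generic:
  fixes A :: "nat \<Rightarrow> nat \<Rightarrow> complex" and \<pi> :: "nat \<Rightarrow> nat" and rl :: "nat \<Rightarrow> bool"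
  assumes R: "\<forall>l\<le>n. (rl l \<and> \<pi> l \<in> {1..s} \<and> (\<forall>j\<le>n. A j l = p (\<pi> l) j) \<and> mm l = m (\<pi> l)) \<or> (\<not> rl l \<and> mm l = 0)"
    and E: "(ex \<and> ox \<in> {1..s} \<and> (\<forall>j\<le>n. am n A w j = p ox j) \<and> \<mu> = m ox) \<or> (\<not> ex \<and> \<mu> = 0)"
    and C: "\<forall>i\<in>{1..s}. (\<exists>l\<le>n. rl l \<and> \<pi> l = i) \<or> (ex \<and> i = ox)"
  shows "\<forall>c. c \<in> linsys n d s m p \<longleftrightarrow> (\<forall>l\<le>n. mult_ge n d c (am n A (uvec l)) (mm l)) \<and> mult_ge n d c (am n A w) \<mu>"
proof (intro allI iffI)
  fix c assume c: "c \<in> linsys n d s m p"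
  then have pts: "\<forall>i\<in>{1..s}. mult_ge n d c (p i) (m i)" unfolding linsys_def by blast
  have "\<forall>l\<le>n. mult_ge n d c (am n A (uvec l)) (mm l)"
  proof (intro allI impI)
    fix l assume l: "l \<le> n"
    show "mult_ge n d c (am n A (uvec l)) (mm l)"
    proof (cases "rl l")
      case True
      then have h: "\<pi> l \<in> {1..s}" "\<forall>j\<le>n. A j l = p (\<pi> l) j" "mm l = m (\<pi> l)" using R l by auto
      have "\<And>j. j \<le> n \<Longrightarrow> am n A (uvec l) j = p (\<pi> l) j" using am_uvec[OF l] h(2) by simp
      then show ?thesis using pts h mult_ge_cong by metis
    next
      case False then have "mm l = 0" using R l by auto
      then show ?thesis by (simp add: mult_ge_0)
    qed
  qed
  moreover have "mult_ge n d c (am n A w) \<mu>"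
  proof (cases ex)
    case True
    then have h: "ox \<in> {1..s}" "\<forall>j\<le>n. am n A w j = p ox j" "\<mu> = m ox" using E by auto
    then show ?thesis using pts mult_ge_cong by metis
  next
    case False then have "\<mu> = 0" using E by auto
    then show ?thesis by (simp add: mult_ge_0)
  qed
  ultimately show "(\<forall>l\<le>n. mult_ge n d c (am n A (uvec l)) (mm l)) \<and> mult_ge n d c (am n A w) \<mu>" by blast
next
  fix c assume h: "(\<forall>l\<le>n. mult_ge n d c (am n A (uvec l)) (mm l)) \<and> mult_ge n d c (am n A w) \<mu>"
  have "\<forall>i\<in>{1..s}. mult_ge n d c (p i) (m i)"
  proof
    fix i assume i: "i \<in> {1..s}"
    show "mult_ge n d c (p i) (m i)"
    proof (cases "\<exists>l\<le>n. rl l \<and> \<pi> l = i")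
      case True
      then obtain l where l: "l \<le> n" "rl l" "\<pi> l = i" by blast
      then have hh: "\<forall>j\<le>n. A j l = p i j" "mm l = m i" using R by auto
      have "\<And>j. j \<le> n \<Longrightarrow> am n A (uvec l) j = p i j" using am_uvec[OF l(1)] hh by simp
      then show ?thesis using h l(1) hh(2) mult_ge_cong by metis
    next
      case False
      then have "ex" "i = ox" using C i by auto
      then have "\<forall>j\<le>n. am n A w j = p i j" "\<mu> = m i" using E by auto
      then show ?thesis using h mult_ge_cong by metis
    qed
  qed
  then show "c \<in> linsys n d s m p" unfolding linsys_def by blast
qed

lemma kI_eq:
  assumes "finite I" "card I = r + 1" "\<forall>i\<in>I. m i \<le> d"
  shows "kI d m r I = d - (\<Sum>i\<in>I. d - m i)"
proof -
  have "int (\<Sum>i\<in>I. d - m i) = (\<Sum>i\<in>I. int d - int (m i))"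
    using assms(3) by (simp add: of_nat_diff)
  also have "\<dots> = int (card I) * int d - int (\<Sum>i\<in>I. m i)" by (simp add: sum_subtractf)
  finally have e: "int (\<Sum>i\<in>I. d - m i) = (int r + 1) * int d - int (\<Sum>i\<in>I. m i)" using assms(2) by simp
  define X where "X = (\<Sum>i\<in>I. d - m i)"
  define S where "S = (\<Sum>i\<in>I. m i)"
  have e2: "int X = (int r + 1) * int d - int S" using e unfolding X_def S_def .
  have "nat (int S - int r * int d) = d - X"
  proof (cases "X \<le> d")
    case True
    then have "int S - int r * int d = int (d - X)" using e2 by (simp add: of_nat_diff algebra_simps)
    then show ?thesis by simp
  next
    case False then show ?thesis using e2 by (simp add: algebra_simps)
  qed
  then show ?thesis unfolding kI_def X_def S_def .
qed

lemma m_le_d: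
  assumes "c \<in> linsys n d s m p" "hs_nonzero n d c" "i \<in> {1..s}"
  shows "m i \<le> d"
proof (rule ccontr)
  assume "\<not> m i \<le> d"
  moreover have "mult_ge n d c (p i) (m i)" using assms unfolding linsys_def by blast
  ultimately have "\<forall>z. ev n d c z = 0" using mult_big by (metis not_le)
  then show False using hs_nonzero_imp[OF assms(2)] by blast
qed

lemma sum_reindex_I:
  assumes "bij_betw \<pi> I' I" "\<forall>l\<in>I'. mm l = m (\<pi> l)"
  shows "(\<Sum>l\<in>I'. d - mm l) = (\<Sum>i\<in>I. d - m i)"
  using sum.reindex_bij_betw[OF assms(1), of "\<lambda>i. d - m i"] assms(2) by simp

lemma finish:
  fixes A B :: "nat \<Rightarrow> nat \<Rightarrow> complex" and w :: "nat \<Rightarrow> complex" and mm :: "nat \<Rightarrow> nat"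
    and p :: "nat \<Rightarrow> nat \<Rightarrow> complex" and \<pi> :: "nat \<Rightarrow> nat"
  assumes AB: "\<forall>i\<le>n. \<forall>j\<le>n. (\<Sum>l\<le>n. A i l * B l j) = (if i = j then 1 else 0)"
    and BA: "\<forall>i\<le>n. \<forall>j\<le>n. (\<Sum>l\<le>n. B i l * A l j) = (if i = j then 1 else 0)"
    and lam: "\<forall>l\<le>n. w l \<noteq> 0"
    and I': "I' \<subseteq> {..n}" "I' \<noteq> {}"
    and bij: "bij_betw \<pi> I' I"
    and col: "\<forall>l\<in>I'. \<forall>j\<le>n. A j l = p (\<pi> l) j"
    and mmI: "\<forall>l\<in>I'. mm l = m (\<pi> l)"
    and sys: "\<forall>c. c \<in> linsys n d s m p \<longleftrightarrow> (\<forall>l\<le>n. mult_ge n d c (am n A (uvec l)) (mm l)) \<and> mult_ge n d c (am n A w) \<mu>"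
    and ne: "\<exists>c\<in>linsys n d s m p. hs_nonzero n d c"
    and Is: "I \<subseteq> {1..s}" "card I = r + 1"
  shows "base_mult_exact n d s m p I (kI d m r I)"
proof -
  have b: "base_mult_exact n d s m p I (d - (\<Sum>l\<in>I'. d - mm l))"
    by (rule glue[OF AB BA lam I' bij col sys ne])
  have fI: "finite I" using Is(1) finite_subset by blast
  have mle: "\<forall>i\<in>I. m i \<le> d" using ne m_le_d Is(1) by blast
  have "kI d m r I = d - (\<Sum>i\<in>I. d - m i)" by (rule kI_eq[OF fI Is(2) mle])
  also have "\<dots> = d - (\<Sum>l\<in>I'. d - mm l)" using sum_reindex_I[OF bij mmI] by simp
  finally show ?thesis using b by simp
qed

lemma prep_ite_const:
  assumes "finite V" "b \<Longrightarrow> prep V F"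
  shows "prep V (\<lambda>y. if b then F y else k)"
  using assms prep_const[OF assms(1), of k] by (cases b) auto

lemma case_small:
  fixes n d s :: nat and m :: "nat \<Rightarrow> nat"
  assumes "s \<le> n + 1"
  shows "\<exists>D g. (\<forall>\<alpha>. g \<alpha> \<noteq> 0 \<longrightarrow> \<alpha> \<in> pmonos ({1..s} \<times> {..n}) D) \<and> (\<exists>\<alpha>. g \<alpha> \<noteq> 0) \<and>
     (\<forall>p :: nat \<Rightarrow> nat \<Rightarrow> complex.
        peval ({1..s} \<times> {..n}) D g (\<lambda>(i, j). p i j) \<noteq> 0 \<longrightarrow>
        (\<exists>c\<in>linsys n d s m p. hs_nonzero n d c) \<longrightarrow>
        (\<forall>r I. r + 1 \<le> min n s \<longrightarrow> I \<subseteq> {1..s} \<longrightarrow> card I = r + 1 \<longrightarrow>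
           base_mult_exact n d s m p I (kI d m r I)))"
proof -
  define V where "V = {1..s} \<times> {..n}"
  have fV: "finite V" unfolding V_def by simp
  define N where "N = Suc n"
  define E where "E = (\<lambda>(y::nat \<times> nat \<Rightarrow> complex) i l. if l < s then y (Suc l, i) else if i = l then 1 else (0::complex))"
  define G where "G = (\<lambda>y. det (mat N N (\<lambda>(i,l). E y i l)))"
  have "prep V G" unfolding G_def
  proof (rule prep_det[OF fV], intro allI impI)
    fix i l assume il: "i < N" "l < N"
    show "prep V (\<lambda>y. E y i l)"
    proof (cases "l < s")
      case True
      have "(Suc l, i) \<in> V" using True il unfolding V_def N_def by auto
      then show ?thesis using True prep_var[OF fV] unfolding E_def by simp
    next
      case False
      then show ?thesis using prep_const[OF fV] unfolding E_def by simp
    qed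
  qed
  then obtain D g where g: "\<forall>\<alpha>. g \<alpha> \<noteq> 0 \<longrightarrow> \<alpha> \<in> pmonos V D" "\<forall>y. G y = peval V D g y"
    unfolding prep_def by blast
  define ys :: "nat \<times> nat \<Rightarrow> complex" where "ys = (\<lambda>(a, b). if b + 1 = a then 1 else (0::complex))"
  have "mat N N (\<lambda>(i,l). E ys i l) = 1\<^sub>m N"
    by (rule eq_matI) (auto simp: E_def ys_def)
  then have "G ys = 1" unfolding G_def by simp
  then have gnz: "\<exists>\<alpha>. g \<alpha> \<noteq> 0" using g(2) unfolding peval_def by (metis (no_types, lifting) mult_eq_0_iff sum.neutral zero_neq_one)
  have main: "\<forall>p :: nat \<Rightarrow> nat \<Rightarrow> complex.
        peval V D g (\<lambda>(i, j). p i j) \<noteq> 0 \<longrightarrow>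
        (\<exists>c\<in>linsys n d s m p. hs_nonzero n d c) \<longrightarrow>
        (\<forall>r I. r + 1 \<le> min n s \<longrightarrow> I \<subseteq> {1..s} \<longrightarrow> card I = r + 1 \<longrightarrow>
           base_mult_exact n d s m p I (kI d m r I))"
  proof (intro allI impI)
    fix p :: "nat \<Rightarrow> nat \<Rightarrow> complex" and r I
    assume pnz: "peval V D g (\<lambda>(i, j). p i j) \<noteq> 0" and ne: "\<exists>c\<in>linsys n d s m p. hs_nonzero n d c"
      and r: "r + 1 \<le> min n s" and Is: "I \<subseteq> {1..s}" "card I = r + 1"
    define M where "M = mat N N (\<lambda>(i,l). E (\<lambda>(i, j). p i j) i l)"
    have dM: "det M \<noteq> 0" using pnz g(2) unfolding G_def M_def by metis
    have Mc: "M \<in> carrier_mat (Suc n) (Suc n)" unfolding M_def N_def by simp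
    obtain B where B: "\<forall>i\<le>n. \<forall>j\<le>n. (\<Sum>l\<le>n. M $$ (i,l) * B l j) = (if i = j then 1 else 0)"
       "\<forall>i\<le>n. \<forall>j\<le>n. (\<Sum>l\<le>n. B i l * M $$ (l,j)) = (if i = j then 1 else 0)"
      using mat_inv_fun[OF Mc dM] by blast
    define A where "A = (\<lambda>j l. M $$ (j,l))"
    have Ael: "\<forall>j\<le>n. \<forall>l\<le>n. A j l = (if l < s then p (Suc l) j else if j = l then 1 else 0)"
      unfolding A_def M_def E_def N_def by auto
    define w :: "nat \<Rightarrow> complex" where "w = (\<lambda>_. 1)"
    define mm where "mm = (\<lambda>l. if l < s then m (Suc l) else 0)"
    define I' where "I' = (\<lambda>i. i - 1) ` I"
    have fI: "finite I" using Is(1) finite_subset by blast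
    have Ine: "I \<noteq> {}" using Is(2) by auto
    have I'sub: "I' \<subseteq> {..n}"
    proof
      fix l assume "l \<in> I'"
      then obtain i where "i \<in> I" "l = i - 1" unfolding I'_def by blast
      then show "l \<in> {..n}" using Is(1) assms by force
    qed
    have I'ne: "I' \<noteq> {}" unfolding I'_def using Ine by simp
    have bij: "bij_betw Suc I' I"
    proof (rule bij_betw_imageI)
      show "inj_on Suc I'" by simp
      show "Suc ` I' = I" unfolding I'_def using Is(1) by (force simp: image_iff)
    qed
    have I's: "\<forall>l\<in>I'. l < s"
    proof
      fix l assume "l \<in> I'"
      then obtain i where "i \<in> I" "l = i - 1" unfolding I'_def by blast
      then show "l < s" using Is(1) by force
    qed
    have col: "\<forall>l\<in>I'. \<forall>j\<le>n. A j l = p (Suc l) j" using Ael I's I'sub by auto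
    have mmI: "\<forall>l\<in>I'. mm l = m (Suc l)" using I's unfolding mm_def by auto
    have sys: "\<forall>c. c \<in> linsys n d s m p \<longleftrightarrow> (\<forall>l\<le>n. mult_ge n d c (am n A (uvec l)) (mm l)) \<and> mult_ge n d c (am n A w) 0"
    proof (rule sys_generic[where rl = "\<lambda>l. l < s" and \<pi> = Suc and ex = False and ox = 0])
      show "\<forall>l\<le>n. (l < s \<and> Suc l \<in> {1..s} \<and> (\<forall>j\<le>n. A j l = p (Suc l) j) \<and> mm l = m (Suc l)) \<or> (\<not> l < s \<and> mm l = 0)"
        using Ael unfolding mm_def by auto
      show "(False \<and> 0 \<in> {1..s} \<and> (\<forall>j\<le>n. am n A w j = p 0 j) \<and> (0::nat) = m 0) \<or> (\<not> False \<and> (0::nat) = 0)" by simp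
      show "\<forall>i\<in>{1..s}. (\<exists>l\<le>n. l < s \<and> Suc l = i) \<or> (False \<and> i = 0)"
      proof
        fix i assume "i \<in> {1..s}"
        then have "i - 1 \<le> n" "i - 1 < s" "Suc (i - 1) = i" using assms by auto
        then show "(\<exists>l\<le>n. l < s \<and> Suc l = i) \<or> (False \<and> i = 0)" by blast
      qed
    qed
    have AB: "\<forall>i\<le>n. \<forall>j\<le>n. (\<Sum>l\<le>n. A i l * B l j) = (if i = j then 1 else 0)" using B(1) unfolding A_def .
    have BA: "\<forall>i\<le>n. \<forall>j\<le>n. (\<Sum>l\<le>n. B i l * A l j) = (if i = j then 1 else 0)" using B(2) unfolding A_def .
    have lam: "\<forall>l\<le>n. w l \<noteq> 0" unfolding w_def by simp
    show "base_mult_exact n d s m p I (kI d m r I)"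
      by (rule finish[OF AB BA lam I'sub I'ne bij col mmI sys ne Is])
  qed
  show ?thesis using g(1) gnz main unfolding V_def by blast
qed

lemma case_big:
  fixes n d s :: nat and m :: "nat \<Rightarrow> nat"
  assumes s: "s = n + 2"
  shows "\<exists>D g. (\<forall>\<alpha>. g \<alpha> \<noteq> 0 \<longrightarrow> \<alpha> \<in> pmonos ({1..s} \<times> {..n}) D) \<and> (\<exists>\<alpha>. g \<alpha> \<noteq> 0) \<and>
     (\<forall>p :: nat \<Rightarrow> nat \<Rightarrow> complex.
        peval ({1..s} \<times> {..n}) D g (\<lambda>(i, j). p i j) \<noteq> 0 \<longrightarrow>
        (\<exists>c\<in>linsys n d s m p. hs_nonzero n d c) \<longrightarrow>
        (\<forall>r I. r + 1 \<le> min n s \<longrightarrow> I \<subseteq> {1..s} \<longrightarrow> card I = r + 1 \<longrightarrow>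
           base_mult_exact n d s m p I (kI d m r I)))"
proof -
  define V where "V = {1..s} \<times> {..n}"
  have fV: "finite V" unfolding V_def by simp
  define N where "N = Suc n"
  define E0 where "E0 = (\<lambda>(y::nat \<times> nat \<Rightarrow> complex) i l. y (Suc l, i))"
  define Eo where "Eo = (\<lambda>ox (y::nat \<times> nat \<Rightarrow> complex) i l. if l = ox then y (n + 2, i) else y (Suc l, i))"
  define G where "G = (\<lambda>y. det (mat N N (\<lambda>(i,l). E0 y i l)) * (\<Prod>ox\<in>{..n}. det (mat N N (\<lambda>(i,l). Eo ox y i l))))"
  have "prep V G" unfolding G_def
  proof (rule prep_mult[OF fV])
    show "prep V (\<lambda>y. det (mat N N (\<lambda>(i,l). E0 y i l)))"
    proof (rule prep_det[OF fV], intro allI impI)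
      fix i l assume il: "i < N" "l < N"
      have "(Suc l, i) \<in> V" using il s unfolding V_def N_def by auto
      then show "prep V (\<lambda>y. E0 y i l)" using prep_var[OF fV] unfolding E0_def by simp
    qed
    show "prep V (\<lambda>y. \<Prod>ox\<in>{..n}. det (mat N N (\<lambda>(i,l). Eo ox y i l)))"
    proof (rule prep_prod[OF fV], simp)
      fix ox assume "ox \<in> {..n}"
      show "prep V (\<lambda>y. det (mat N N (\<lambda>(i,l). Eo ox y i l)))"
      proof (rule prep_det[OF fV], intro allI impI)
        fix i l assume il: "i < N" "l < N"
        have "(Suc l, i) \<in> V" "(n + 2, i) \<in> V" using il s unfolding V_def N_def by auto
        then show "prep V (\<lambda>y. Eo ox y i l)"
          using prep_var[OF fV] unfolding Eo_def by (cases "l = ox") auto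
      qed
    qed
  qed
  then obtain D g where g: "\<forall>\<alpha>. g \<alpha> \<noteq> 0 \<longrightarrow> \<alpha> \<in> pmonos V D" "\<forall>y. G y = peval V D g y"
    unfolding prep_def by blast
  define ys :: "nat \<times> nat \<Rightarrow> complex" where "ys = (\<lambda>(a, b). if a = n + 2 then 1 else if b + 1 = a then 1 else 0)"
  have "mat N N (\<lambda>(i,l). E0 ys i l) = 1\<^sub>m N"
    by (rule eq_matI) (auto simp: E0_def ys_def N_def)
  then have d0: "det (mat N N (\<lambda>(i,l). E0 ys i l)) = 1" by simp
  have do: "\<forall>ox\<in>{..n}. det (mat N N (\<lambda>(i,l). Eo ox ys i l)) = 1"
  proof
    fix ox assume ox: "ox \<in> {..n}"
    define v :: "complex vec" where "v = vec N (\<lambda>_. 1)"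
    have "mat N N (\<lambda>(i,l). Eo ox ys i l) = replace_col (1\<^sub>m N) (1\<^sub>m N *\<^sub>v v) ox"
      by (rule eq_matI) (auto simp: Eo_def ys_def N_def replace_col_def v_def)
    moreover have "det (replace_col (1\<^sub>m N) (1\<^sub>m N *\<^sub>v v) ox) = v $ ox * det (1\<^sub>m N)"
      by (rule cramer_lemma_mat) (use ox in \<open>auto simp: v_def N_def\<close>)
    ultimately show "det (mat N N (\<lambda>(i,l). Eo ox ys i l)) = 1" using ox by (simp add: v_def N_def)
  qed
  have "G ys = 1" unfolding G_def using d0 do by simp
  then have gnz: "\<exists>\<alpha>. g \<alpha> \<noteq> 0" using g(2) unfolding peval_def by (metis (no_types, lifting) mult_eq_0_iff sum.neutral zero_neq_one)
  have main: "\<forall>p :: nat \<Rightarrow> nat \<Rightarrow> complex.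
        peval V D g (\<lambda>(i, j). p i j) \<noteq> 0 \<longrightarrow>
        (\<exists>c\<in>linsys n d s m p. hs_nonzero n d c) \<longrightarrow>
        (\<forall>r I. r + 1 \<le> min n s \<longrightarrow> I \<subseteq> {1..s} \<longrightarrow> card I = r + 1 \<longrightarrow>
           base_mult_exact n d s m p I (kI d m r I))"
  proof (intro allI impI)
    fix p :: "nat \<Rightarrow> nat \<Rightarrow> complex" and r I
    assume pnz: "peval V D g (\<lambda>(i, j). p i j) \<noteq> 0" and ne: "\<exists>c\<in>linsys n d s m p. hs_nonzero n d c"
      and r: "r + 1 \<le> min n s" and Is: "I \<subseteq> {1..s}" "card I = r + 1"
    let ?y = "\<lambda>(i, j). p i j"
    define M where "M = mat N N (\<lambda>(i,l). E0 ?y i l)"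
    define Mo where "Mo = (\<lambda>ox. mat N N (\<lambda>(i,l). Eo ox ?y i l))"
    have Gp: "G ?y \<noteq> 0" using pnz g(2) by metis
    have dM: "det M \<noteq> 0" using Gp unfolding G_def M_def by auto
    have dMo: "\<forall>ox\<le>n. det (Mo ox) \<noteq> 0" using Gp unfolding G_def Mo_def by (auto simp: prod_zero_iff)
    have Mc: "M \<in> carrier_mat (Suc n) (Suc n)" unfolding M_def N_def by simp
    have Moc: "\<forall>ox. Mo ox \<in> carrier_mat (Suc n) (Suc n)" unfolding Mo_def N_def by simp
    obtain B where B: "\<forall>i\<le>n. \<forall>j\<le>n. (\<Sum>l\<le>n. M $$ (i,l) * B l j) = (if i = j then 1 else 0)"
       "\<forall>i\<le>n. \<forall>j\<le>n. (\<Sum>l\<le>n. B i l * M $$ (l,j)) = (if i = j then 1 else 0)"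
      using mat_inv_fun[OF Mc dM] by blast
    define A where "A = (\<lambda>j l. M $$ (j,l))"
    have Ael: "\<forall>j\<le>n. \<forall>l\<le>n. A j l = p (Suc l) j" unfolding A_def M_def E0_def N_def by auto
    have AB: "\<forall>i\<le>n. \<forall>j\<le>n. (\<Sum>l\<le>n. A i l * B l j) = (if i = j then 1 else 0)" using B(1) unfolding A_def .
    have BA: "\<forall>i\<le>n. \<forall>j\<le>n. (\<Sum>l\<le>n. B i l * A l j) = (if i = j then 1 else 0)" using B(2) unfolding A_def .
    define w where "w = am n B (p (n + 2))"
    have Aw: "\<forall>j\<le>n. am n A w j = p (n + 2) j" unfolding w_def using am_inv[OF AB] by blast
    have wnz: "\<forall>l\<le>n. w l \<noteq> 0"
    proof (intro allI impI)
      fix ox assume ox: "ox \<le> n"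
      define wv where "wv = vec N w"
      have "Mo ox = replace_col M (M *\<^sub>v wv) ox"
      proof (rule eq_matI)
        fix i j assume ij: "i < dim_row (replace_col M (M *\<^sub>v wv) ox)" "j < dim_col (replace_col M (M *\<^sub>v wv) ox)"
        then have ij': "i < N" "j < N" unfolding replace_col_def M_def by auto
        have "(M *\<^sub>v wv) $ i = (\<Sum>k\<in>{0..<N}. M $$ (i,k) * w k)"
          using ij' unfolding M_def wv_def by (simp add: scalar_prod_def)
        also have "\<dots> = am n A w i" unfolding am_def lin_def A_def N_def by (simp add: atLeast0LessThan lessThan_Suc_atMost)
        also have "\<dots> = p (n + 2) i" using Aw ij' unfolding N_def by simp
        finally have "(M *\<^sub>v wv) $ i = p (n + 2) i" .
        then show "Mo ox $$ (i, j) = replace_col M (M *\<^sub>v wv) ox $$ (i, j)"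
          using ij' unfolding Mo_def replace_col_def M_def Eo_def E0_def by auto
      qed (auto simp: Mo_def replace_col_def M_def)
      moreover have "det (replace_col M (M *\<^sub>v wv) ox) = wv $ ox * det M"
        by (rule cramer_lemma_mat[OF Mc]) (use ox in \<open>auto simp: wv_def N_def\<close>)
      ultimately have "det (Mo ox) = w ox * det M" using ox unfolding wv_def N_def by simp
      then show "w ox \<noteq> 0" using dMo ox by auto
    qed
    have fI: "finite I" using Is(1) finite_subset by blast
    have Ine: "I \<noteq> {}" using Is(2) by auto
    show "base_mult_exact n d s m p I (kI d m r I)"
    proof (cases "n + 2 \<in> I")
      case False
      define mm where "mm = (\<lambda>l. m (Suc l))"
      define I' where "I' = (\<lambda>i. i - 1) ` I"
      have Is1: "\<forall>i\<in>I. 1 \<le> i \<and> i \<le> n + 1"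
      proof
        fix i assume i: "i \<in> I"
        then have "i \<in> {1..s}" "i \<noteq> n + 2" using Is(1) False by auto
        then show "1 \<le> i \<and> i \<le> n + 1" using s by auto
      qed
      have I'sub: "I' \<subseteq> {..n}"
      proof
        fix l assume "l \<in> I'"
        then obtain i where "i \<in> I" "l = i - 1" unfolding I'_def by blast
        then show "l \<in> {..n}" using Is1 by force
      qed
      have I'ne: "I' \<noteq> {}" unfolding I'_def using Ine by simp
      have bij: "bij_betw Suc I' I"
      proof (rule bij_betw_imageI)
        show "inj_on Suc I'" by simp
        show "Suc ` I' = I" unfolding I'_def using Is1 by (force simp: image_iff)
      qed
      have col: "\<forall>l\<in>I'. \<forall>j\<le>n. A j l = p (Suc l) j" using Ael I'sub by auto
      have mmI: "\<forall>l\<in>I'. mm l = m (Suc l)" unfolding mm_def by simp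
      have sys: "\<forall>c. c \<in> linsys n d s m p \<longleftrightarrow> (\<forall>l\<le>n. mult_ge n d c (am n A (uvec l)) (mm l)) \<and> mult_ge n d c (am n A w) (m (n + 2))"
      proof (rule sys_generic[where rl = "\<lambda>l. True" and \<pi> = Suc and ex = True and ox = "n + 2"])
        show "\<forall>l\<le>n. (True \<and> Suc l \<in> {1..s} \<and> (\<forall>j\<le>n. A j l = p (Suc l) j) \<and> mm l = m (Suc l)) \<or> (\<not> True \<and> mm l = 0)"
          using Ael s unfolding mm_def by auto
        show "(True \<and> n + 2 \<in> {1..s} \<and> (\<forall>j\<le>n. am n A w j = p (n + 2) j) \<and> m (n + 2) = m (n + 2)) \<or> (\<not> True \<and> m (n + 2) = 0)"
          using Aw s by simp
        show "\<forall>i\<in>{1..s}. (\<exists>l\<le>n. True \<and> Suc l = i) \<or> (True \<and> i = n + 2)"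
        proof
          fix i assume i: "i \<in> {1..s}"
          show "(\<exists>l\<le>n. True \<and> Suc l = i) \<or> (True \<and> i = n + 2)"
          proof (cases "i = n + 2")
            case False
            then have "i - 1 \<le> n" "Suc (i - 1) = i" using i s by auto
            then show ?thesis by blast
          qed simp
        qed
      qed
      show ?thesis by (rule finish[OF AB BA wnz I'sub I'ne bij col mmI sys ne Is])
    next
      case True
      have "\<exists>ox\<in>{1..n+1}. ox \<notin> I"
      proof (rule ccontr)
        assume "\<not> (\<exists>ox\<in>{1..n+1}. ox \<notin> I)"
        then have "insert (n + 2) {1..n+1} \<subseteq> I" using True by auto
        then have "card (insert (n + 2) {1..n+1}) \<le> card I" using fI by (rule card_mono[rotated])
        then show False using Is(2) r by simp
      qed
      then obtain ox where ox: "ox \<in> {1..n+1}" "ox \<notin> I" by blast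
      define o0 where "o0 = ox - 1"
      have o0: "o0 \<le> n" "Suc o0 = ox" using ox unfolding o0_def by auto
      obtain B' where B': "\<forall>i\<le>n. \<forall>j\<le>n. (\<Sum>l\<le>n. Mo o0 $$ (i,l) * B' l j) = (if i = j then 1 else 0)"
         "\<forall>i\<le>n. \<forall>j\<le>n. (\<Sum>l\<le>n. B' i l * Mo o0 $$ (l,j)) = (if i = j then 1 else 0)"
        using mat_inv_fun[OF Moc[rule_format] dMo[rule_format, OF o0(1)]] by blast
      define A' where "A' = (\<lambda>j l. Mo o0 $$ (j,l))"
      define \<pi> where "\<pi> = (\<lambda>l. if l = o0 then n + 2 else Suc l)"
      have A'el: "\<forall>j\<le>n. \<forall>l\<le>n. A' j l = p (\<pi> l) j" unfolding A'_def Mo_def Eo_def N_def \<pi>_def by auto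
      have AB': "\<forall>i\<le>n. \<forall>j\<le>n. (\<Sum>l\<le>n. A' i l * B' l j) = (if i = j then 1 else 0)" using B'(1) unfolding A'_def .
      have BA': "\<forall>i\<le>n. \<forall>j\<le>n. (\<Sum>l\<le>n. B' i l * A' l j) = (if i = j then 1 else 0)" using B'(2) unfolding A'_def .
      define w' where "w' = (\<lambda>l. if l = o0 then 1 / w o0 else - w l / w o0)"
      have w'nz: "\<forall>l\<le>n. w' l \<noteq> 0" unfolding w'_def using wnz o0 by auto
      have Aw': "\<forall>j\<le>n. am n A' w' j = p ox j"
      proof (intro allI impI)
        fix j assume j: "j \<le> n"
        let ?R = "\<Sum>l\<in>{..n}-{o0}. p (Suc l) j * w l"
        have "p (n + 2) j = am n A w j" using Aw j by simp
        also have "\<dots> = (\<Sum>l\<le>n. p (Suc l) j * w l)" unfolding am_def lin_def using Ael j by simp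
        also have "\<dots> = p (Suc o0) j * w o0 + ?R" using sum.remove[of "{..n}" o0 "\<lambda>l. p (Suc l) j * w l"] o0(1) by simp
        finally have e1: "p (n + 2) j = p (Suc o0) j * w o0 + ?R" .
        have "am n A' w' j = (\<Sum>l\<le>n. A' j l * w' l)" unfolding am_def lin_def by simp
        also have "\<dots> = A' j o0 * w' o0 + (\<Sum>l\<in>{..n}-{o0}. A' j l * w' l)" using sum.remove[of "{..n}" o0 "\<lambda>l. A' j l * w' l"] o0(1) by simp
        also have "(\<Sum>l\<in>{..n}-{o0}. A' j l * w' l) = - ?R / w o0"
          unfolding sum_negf[symmetric] sum_divide_distrib
          by (rule sum.cong[OF refl]) (use A'el j in \<open>auto simp: w'_def \<pi>_def\<close>)
        also have "A' j o0 * w' o0 = p (n + 2) j / w o0" using A'el j o0 unfolding w'_def \<pi>_def by auto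
        finally have "am n A' w' j = p (n + 2) j / w o0 - ?R / w o0" by simp
        also have "\<dots> = p (Suc o0) j" unfolding e1 using wnz o0 by (simp add: field_simps)
        finally show "am n A' w' j = p ox j" using o0 by simp
      qed
      define mm where "mm = (\<lambda>l. m (\<pi> l))"
      define I' where "I' = {l\<in>{..n}. \<pi> l \<in> I}"
      have I'sub: "I' \<subseteq> {..n}" unfolding I'_def by auto
      have injp: "inj_on \<pi> {..n}"
      proof (rule inj_onI)
        fix a b assume ab: "a \<in> {..n}" "b \<in> {..n}" "\<pi> a = \<pi> b"
        then show "a = b" unfolding \<pi>_def by (auto split: if_splits)
      qed
      have bij: "bij_betw \<pi> I' I"
      proof (rule bij_betw_imageI)
        show "inj_on \<pi> I'" using injp I'sub inj_on_subset by blast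
        show "\<pi> ` I' = I"
        proof
          show "\<pi> ` I' \<subseteq> I" unfolding I'_def by auto
          show "I \<subseteq> \<pi> ` I'"
          proof
            fix i assume i: "i \<in> I"
            show "i \<in> \<pi> ` I'"
            proof (cases "i = n + 2")
              case True
              then have "\<pi> o0 = i" unfolding \<pi>_def by simp
              then show ?thesis using i o0 unfolding I'_def by force
            next
              case False
              then have ii: "1 \<le> i" "i \<le> n + 1" using i Is(1) s by auto
              have "i \<noteq> ox" using i ox by auto
              then have "i - 1 \<noteq> o0" using ii o0 by auto
              then have pi: "\<pi> (i - 1) = i" unfolding \<pi>_def using ii by auto
              have "i - 1 \<in> I'" unfolding I'_def using pi i ii by auto
              then show ?thesis using pi by (metis image_eqI)
            qed
          qed
        qed
      qed
      have I'ne: "I' \<noteq> {}" using bij Ine unfolding bij_betw_def by auto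
      have col: "\<forall>l\<in>I'. \<forall>j\<le>n. A' j l = p (\<pi> l) j" using A'el I'sub by auto
      have mmI: "\<forall>l\<in>I'. mm l = m (\<pi> l)" unfolding mm_def by simp
      have sys: "\<forall>c. c \<in> linsys n d s m p \<longleftrightarrow> (\<forall>l\<le>n. mult_ge n d c (am n A' (uvec l)) (mm l)) \<and> mult_ge n d c (am n A' w') (m ox)"
      proof (rule sys_generic[where rl = "\<lambda>l. True" and \<pi> = \<pi> and ex = True and ox = ox])
        show "\<forall>l\<le>n. (True \<and> \<pi> l \<in> {1..s} \<and> (\<forall>j\<le>n. A' j l = p (\<pi> l) j) \<and> mm l = m (\<pi> l)) \<or> (\<not> True \<and> mm l = 0)"
          using A'el s unfolding mm_def \<pi>_def by auto
        show "(True \<and> ox \<in> {1..s} \<and> (\<forall>j\<le>n. am n A' w' j = p ox j) \<and> m ox = m ox) \<or> (\<not> True \<and> m ox = 0)"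
          using Aw' s ox by simp
        show "\<forall>i\<in>{1..s}. (\<exists>l\<le>n. True \<and> \<pi> l = i) \<or> (True \<and> i = ox)"
        proof
          fix i assume i: "i \<in> {1..s}"
          show "(\<exists>l\<le>n. True \<and> \<pi> l = i) \<or> (True \<and> i = ox)"
          proof (cases "i = ox")
            case False
            show ?thesis
            proof (cases "i = n + 2")
              case True
              then have "\<pi> o0 = i" unfolding \<pi>_def by simp
              then show ?thesis using o0 by blast
            next
              case F2: False
              then have ii: "1 \<le> i" "i \<le> n + 1" using i s by auto
              then have "i - 1 \<noteq> o0" using False o0 by auto
              then have "\<pi> (i - 1) = i" unfolding \<pi>_def using ii by auto
              moreover have "i - 1 \<le> n" using ii by auto
              ultimately show ?thesis by blast
            qed
          qed simp
        qed
      qed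
      show ?thesis by (rule finish[OF AB' BA' w'nz I'sub I'ne bij col mmI sys ne Is])
    qed
  qed
  show ?thesis using g(1) gnz main unfolding V_def by blast
qed

theorem proposition2p5:
  fixes n d s :: nat and m :: "nat \<Rightarrow> nat"
  assumes "s \<le> n + 2"
  shows "\<exists>D g. (\<forall>\<alpha>. g \<alpha> \<noteq> 0 \<longrightarrow> \<alpha> \<in> pmonos ({1..s} \<times> {..n}) D) \<and> (\<exists>\<alpha>. g \<alpha> \<noteq> 0) \<and>
     (\<forall>p :: nat \<Rightarrow> nat \<Rightarrow> complex.
        peval ({1..s} \<times> {..n}) D g (\<lambda>(i, j). p i j) \<noteq> 0 \<longrightarrow>
        (\<exists>c\<in>linsys n d s m p. hs_nonzero n d c) \<longrightarrow>
        (\<forall>r I. r + 1 \<le> min n s \<longrightarrow> I \<subseteq> {1..s} \<longrightarrow> card I = r + 1 \<longrightarrow>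
           base_mult_exact n d s m p I (kI d m r I)))"
proof (cases "s \<le> n + 1")
  case True
  then show ?thesis by (rule case_small)
next
  case False
  then have "s = n + 2" using assms by simp
  then show ?thesis by (rule case_big)
qed

end
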